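(* Assume the setting below, on the A-mesh $S_{1/\varepsilon}$ (i.e. $\lambda=\varepsilon^{-1}$) with mesh parameter $a>3$. There exist $N_0$ and $C$, both independent of $\varepsilon$, such that for all $N\ge N_0$, \[ |\tau_i[y]|\le C\begin{cases} (\ln\varepsilon)^2N^{-2}, & 1\le i\le J-1,\\ \min\{\varepsilon,N^{-1}\}N^{-1}+\varepsilon^2N^{-1}, & i=J,\\ \min\{\varepsilon,N^{-1}\}N^{-1}, & J+1\le i\le N-1.\end{cases} \]
   Context: Let $0<\varepsilon<1$. Let $b,c,f\in C^4[0,1]$, and let $\beta$ be a constant with $b(x)>\beta>0$ and $c(x)\ge0$ on $[0,1]$. Let $u$ be the solution of $-\varepsilon u''-bu'+cu=f$ on $(0,1)$ with $u(0)=u(1)=0$. Let $u_0$ be the solution of $-bu_0'+cu_0=f$ on $(0,1)$ with $u_0(1)=0$. Set $w=u-u_0$, $v(x)=-\frac{\varepsilon u'(0)}{b(0)}e^{-b(0)x/\varepsilon}$ and $y=w-v$. Mesh $S_\lambda$, $\lambda\in\{N,\varepsilon^{-1}\}$. $N$ is a positive integer. $Q\in(0,1)$ is a fixed rational with $J=QN$ an integer, and $a>0$. Set $\xi=(a\varepsilon/\beta)\ln\lambda$, assumed $\le Q$, and $h=\xi/J$, $H=(1-\xi)/(N-J)$. The mesh points are $x_i=ih$ ($0\le i\le J$) and $x_i=\xi+(i-J)H$ ($J\le i\le N$). Write $h_i=x_i-x_{i-1}$ and $\hbar_i=(h_i+h_{i+1})/2$. Define $D^+g(x_i)=(g(x_{i+1})-g(x_i))/h_{i+1}$,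 $D^-g(x_i)=(g(x_i)-g(x_{i-1}))/h_i$, $D''g(x_i)=(D^+g(x_i)-D^-g(x_i))/\hbar_i$. Let $\sigma(\rho)=2\rho/(e^{2\rho}-1)$ for $\rho>0$, $\sigma(0)=1$, and $\rho_i=b(x_i)h_{i+1}/(2\varepsilon)$. The truncation error of the ASI scheme is $\tau_i[g]=-\varepsilon\sigma(\rho_i)D''g(x_i)-b(x_i)D^+g(x_i)+\varepsilon g''(x_i)+b(x_i)g'(x_i)$ for $1\le i\le N-1$. *)

theory Defs
  imports "HOL-Analysis.Analysis"
begin

definition Ck_on :: "nat \<Rightarrow> real set \<Rightarrow> (real \<Rightarrow> real) \<Rightarrow> bool" where
  "Ck_on k S g \<longleftrightarrow> (\<exists>D :: nat \<Rightarrow> real \<Rightarrow> real.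
      (\<forall>x\<in>S. D 0 x = g x) \<and>
      (\<forall>j<k. \<forall>x\<in>S. (D j has_real_derivative D (Suc j) x) (at x within S)) \<and>
      (\<forall>j\<le>k. continuous_on S (D j)))"

definition mesh_xi :: "real \<Rightarrow> real \<Rightarrow> real \<Rightarrow> real \<Rightarrow> real" where
  "mesh_xi a eps beta lam = (a * eps / beta) * ln lam"

definition mesh_pt :: "real \<Rightarrow> real \<Rightarrow> real \<Rightarrow> real \<Rightarrow> nat \<Rightarrow> nat \<Rightarrow> nat \<Rightarrow> real" where
  "mesh_pt a eps beta lam N J i =
     (let xi = mesh_xi a eps beta lam in
      if i \<le> J then real i * (xi / real J)
      else xi + real (i - J) * ((1 - xi) / real (N - J)))"

definition hstep :: "(nat \<Rightarrow> real) \<Rightarrow> nat \<Rightarrow> real" where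
  "hstep x i = x i - x (i - 1)"

definition hbar :: "(nat \<Rightarrow> real) \<Rightarrow> nat \<Rightarrow> real" where
  "hbar x i = (hstep x i + hstep x (i + 1)) / 2"

definition Dplus :: "(nat \<Rightarrow> real) \<Rightarrow> (real \<Rightarrow> real) \<Rightarrow> nat \<Rightarrow> real" where
  "Dplus x g i = (g (x (i + 1)) - g (x i)) / hstep x (i + 1)"

definition Dminus :: "(nat \<Rightarrow> real) \<Rightarrow> (real \<Rightarrow> real) \<Rightarrow> nat \<Rightarrow> real" where
  "Dminus x g i = (g (x i) - g (x (i - 1))) / hstep x i"

definition D2 :: "(nat \<Rightarrow> real) \<Rightarrow> (real \<Rightarrow> real) \<Rightarrow> nat \<Rightarrow> real" where
  "D2 x g i = (Dplus x g i - Dminus x g i) / hbar x i"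

definition sigma :: "real \<Rightarrow> real" where
  "sigma r = (if r = 0 then 1 else 2 * r / (exp (2 * r) - 1))"

definition rho :: "real \<Rightarrow> (real \<Rightarrow> real) \<Rightarrow> (nat \<Rightarrow> real) \<Rightarrow> nat \<Rightarrow> real" where
  "rho eps b x i = b (x i) * hstep x (i + 1) / (2 * eps)"

text \<open>Truncation error of the ASI scheme applied to g, whose first and second
  derivatives are g1 and g2.\<close>
definition tau :: "real \<Rightarrow> (real \<Rightarrow> real) \<Rightarrow> (nat \<Rightarrow> real) \<Rightarrow>
    (real \<Rightarrow> real) \<Rightarrow> (real \<Rightarrow> real) \<Rightarrow> (real \<Rightarrow> real) \<Rightarrow> nat \<Rightarrow> real" where
  "tau eps b x g g1 g2 i =
     - eps * sigma (rho eps b x i) * D2 x g i - b (x i) * Dplus x g i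
     + eps * g2 (x i) + b (x i) * g1 (x i)"

end

theory Submission
  imports Defs
begin

definition d01 :: "(real \<Rightarrow> real) \<Rightarrow> (real \<Rightarrow> real) \<Rightarrow> bool" where
  "d01 f f' \<longleftrightarrow> (\<forall>x\<in>{0..1}. (f has_real_derivative f' x) (at x within {0..1}))"

lemma d01_cont: "d01 f f' \<Longrightarrow> continuous_on {0..1} f"
  unfolding d01_def by (rule DERIV_continuous_on) auto

lemma d01_at: "d01 f f' \<Longrightarrow> 0 < x \<Longrightarrow> x < 1 \<Longrightarrow> (f has_real_derivative f' x) (at x)"
  unfolding d01_def
  by (metis at_within_interior atLeastAtMost_iff greaterThanLessThan_iff interior_atLeastAtMost_real less_eq_real_def)

lemma mvt01:
  assumes "d01 f f'" "0 \<le> a" "a < b" "b \<le> 1"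
  shows "\<exists>z. a < z \<and> z < b \<and> f b - f a = (b - a) * f' z"
proof -
  have c: "continuous_on {a..b} f"
    using continuous_on_subset[OF d01_cont[OF assms(1)]] assms by auto
  have "\<And>x. a < x \<Longrightarrow> x < b \<Longrightarrow> f differentiable (at x)"
    using d01_at[OF assms(1)] assms real_differentiable_def by (metis le_less_trans less_le_trans)
  from MVT[OF assms(3) c this] obtain l z where z: "a < z" "z < b" "DERIV f z :> l" "f b - f a = (b - a) * l"
    by blast
  have "DERIV f z :> f' z" using d01_at[OF assms(1)] z assms by auto
  with z show ?thesis using DERIV_unique by blast
qed

lemma min_deriv:
  assumes "d01 f f'" "x \<in> {0..1}" "\<forall>y\<in>{0..1}. f x \<le> f y"
  shows "(x < 1 \<longrightarrow> f' x \<ge> 0) \<and> (0 < x \<longrightarrow> f' x \<le> 0)"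
proof safe
  assume x1: "x < 1"
  have d: "(f has_real_derivative f' x) (at x within {x..1})"
    using assms(1,2) unfolding d01_def
    by (meson atLeastAtMost_iff atLeastatMost_subset_iff has_field_derivative_subset order_refl)
  hence "((\<lambda>y. (f y - f x) / (y - x)) \<longlongrightarrow> f' x) (at_right x)"
    using has_field_derivative_iff at_within_Icc_at_right[OF x1] by metis
  moreover have "eventually (\<lambda>y. 0 \<le> (f y - f x) / (y - x)) (at_right x)"
    unfolding eventually_at_right_field
    using x1 assms(2,3) by (intro exI[of _ 1]) auto
  ultimately show "f' x \<ge> 0"
    by (intro tendsto_lowerbound) auto
next
  assume x0: "0 < x"
  have d: "(f has_real_derivative f' x) (at x within {0..x})"
    using assms(1,2) unfolding d01_def
    by (meson atLeastAtMost_iff atLeastatMost_subset_iff has_field_derivative_subset order_refl)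
  hence "((\<lambda>y. (f y - f x) / (y - x)) \<longlongrightarrow> f' x) (at_left x)"
    using has_field_derivative_iff at_within_Icc_at_left[OF x0] by metis
  moreover have "eventually (\<lambda>y. (f y - f x) / (y - x) \<le> 0) (at_left x)"
    unfolding eventually_at_left_field
    using x0 assms(2,3) by (intro exI[of _ 0]) (auto simp: divide_nonneg_neg)
  ultimately show "f' x \<le> 0"
    by (intro tendsto_upperbound) auto
qed

lemma min_deriv2:
  assumes "d01 f f'" "d01 f' f''" "0 < x" "x < 1" "\<forall>y\<in>{0..1}. f x \<le> f y"
  shows "f' x = 0" "f'' x \<ge> 0"
proof -
  show f0: "f' x = 0" using min_deriv[OF assms(1) _ assms(5)] assms(3,4) by force
  show "f'' x \<ge> 0"
  proof (rule ccontr)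
    assume "\<not> f'' x \<ge> 0"
    hence neg: "f'' x < 0" by simp
    from DERIV_neg_dec_right[OF d01_at[OF assms(2,3,4)] neg]
    obtain d where d: "d > 0" "\<forall>h>0. h < d \<longrightarrow> f' x > f' (x + h)" by blast
    define h where "h = min d (1 - x) / 2"
    have h: "0 < h" "h < d" "x + h \<le> 1"
      using d assms(3,4) unfolding h_def by (auto simp: min_def field_simps)
    obtain z where z: "x < z" "z < x + h" "f (x + h) - f x = h * f' z"
      using mvt01[OF assms(1), of x "x+h"] h assms(3) by auto
    have "f' z < 0" using d(2)[rule_format, of "z - x"] z h f0 by auto
    hence "f (x + h) < f x" using z h(1) mult_pos_neg[of h "f' z"] by linarith
    moreover have "f x \<le> f (x + h)" using assms(5) h assms(3) by auto
    ultimately show False by simp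
  qed
qed

lemma eq_on_closed:
  fixes p q :: "real \<Rightarrow> real"
  assumes "continuous_on {0..1} p" "continuous_on {0..1} q" "\<forall>x\<in>{0<..<1::real}. p x = q x"
  shows "\<forall>x\<in>{0..1}. p x = q x"
proof -
  have "closed {x \<in> {0..1}. p x - q x = 0}"
    by (intro continuous_closed_preimage_constant continuous_intros assms)
  moreover have "{0<..<1} \<subseteq> {x \<in> {0..1}. p x - q x = 0}" using assms(3) by auto
  ultimately have "closure {0<..<1::real} \<subseteq> {x \<in> {0..1}. p x - q x = 0}"
    using closure_minimal by blast
  thus ?thesis by auto
qed

lemma bounded01:
  assumes "continuous_on {0..1} (f :: real \<Rightarrow> real)"
  shows "\<exists>M>0. \<forall>x\<in>{0..1}. \<bar>f x\<bar> \<le> M"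
proof -
  have "continuous_on {0..1} (\<lambda>x. \<bar>f x\<bar>)" by (intro continuous_intros assms)
  from continuous_attains_sup[OF _ _ this] obtain x0 where "\<forall>y\<in>{0..1::real}. \<bar>f y\<bar> \<le> \<bar>f x0\<bar>"
    by auto
  thus ?thesis by (intro exI[of _ "\<bar>f x0\<bar> + 1"]) force
qed

lemma max_principle:
  fixes z z' z'' b c :: "real \<Rightarrow> real" and eps :: real
  assumes "eps \<ge> 0" "d01 z z'" "d01 z' z''"
    and L: "\<forall>x\<in>{0<..<1}. - eps * z'' x - b x * z' x + c x * z x > 0"
    and c: "\<forall>x\<in>{0..1}. c x \<ge> 0" and z1: "z 1 \<ge> 0" and z0: "z 0 < 0 \<longrightarrow> z' 0 < 0"
  shows "\<forall>x\<in>{0..1}. z x \<ge> 0"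
proof (rule ccontr)
  assume "\<not> ?thesis"
  then obtain x1 where x1: "x1 \<in> {0..1}" "z x1 < 0" by auto
  obtain m where m: "m \<in> {0..1}" "\<forall>y\<in>{0..1}. z m \<le> z y"
    using continuous_attains_inf[OF _ _ d01_cont[OF assms(2)]] by auto
  have zm: "z m < 0" using m x1 by force
  have "m \<noteq> 1" using zm z1 by auto
  moreover have "m \<noteq> 0"
  proof
    assume "m = 0"
    hence "z' 0 \<ge> 0" using min_deriv[OF assms(2) m(1) m(2)] by simp
    thus False using z0 zm \<open>m = 0\<close> by simp
  qed
  ultimately have mi: "0 < m" "m < 1" using m(1) by auto
  from min_deriv2[OF assms(2,3) mi m(2)] have "z' m = 0" "z'' m \<ge> 0" by auto
  moreover have "c m * z m \<le> 0" using c mi zm by (simp add: mult_nonneg_nonpos)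
  moreover have "eps * z'' m \<ge> 0" using assms(1) \<open>z'' m \<ge> 0\<close> by simp
  ultimately have "- eps * z'' m - b m * z' m + c m * z m \<le> 0" by simp
  with L mi show False by force
qed

lemma first_order_comp:
  fixes s s' b rho :: "real \<Rightarrow> real" and eps beta beta1 P R S0 :: real
  assumes eps: "eps > 0" and beta: "beta > 0" "beta1 > beta"
    and b: "\<forall>x\<in>{0..1}. b x \<ge> beta1"
    and d: "d01 s s'"
    and eq: "\<forall>x\<in>{0..1}. eps * s' x + b x * s x = rho x"
    and rb: "\<forall>x\<in>{0..1}. \<bar>rho x\<bar> \<le> P + R * exp (- beta * x / eps)"
    and s0: "\<bar>s 0\<bar> \<le> S0" and P: "P \<ge> 0" and R: "R \<ge> 0"
  shows "\<forall>x\<in>{0..1}. \<bar>s x\<bar> \<le> P / beta + (S0 + R / (beta1 - beta)) * exp (- beta * x / eps)"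
proof -
  define M where "M = S0 + R / (beta1 - beta)"
  have S0: "S0 \<ge> 0" using s0 by linarith
  have "M * (beta1 - beta) = S0 * (beta1 - beta) + R" using beta unfolding M_def by (simp add: field_simps)
  hence M: "M * (beta1 - beta) \<ge> R" using beta S0 by simp
  have Mnn: "M \<ge> 0" using S0 R beta unfolding M_def by simp
  have main: "\<forall>x\<in>{0..1}. sg * s x \<le> P / beta + M * exp (- beta * x / eps)" if sg: "sg = 1 \<or> sg = -1" for sg
  proof -
    define z where "z = (\<lambda>x. P / beta + M * exp (- beta * x / eps) - sg * s x)"
    define z' where "z' = (\<lambda>x. M * (exp (- beta * x / eps) * (- beta / eps)) - sg * s' x)"
    have dz: "d01 z z'"
      unfolding d01_def z_def z'_def
    proof
      fix x :: real assume x: "x \<in> {0..1}"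
      have "(s has_real_derivative s' x) (at x within {0..1})" using d x unfolding d01_def by auto
      thus "((\<lambda>x. P / beta + M * exp (- beta * x / eps) - sg * s x) has_real_derivative
          M * (exp (- beta * x / eps) * (- beta / eps)) - sg * s' x) (at x within {0..1})"
        using eps by (auto intro!: derivative_eq_intros)
    qed
    show ?thesis
    proof (rule ccontr)
      assume "\<not> ?thesis"
      then obtain x1 where x1: "x1 \<in> {0..1}" "z x1 < 0" unfolding z_def by force
      obtain m where m: "m \<in> {0..1}" "\<forall>y\<in>{0..1}. z m \<le> z y"
        using continuous_attains_inf[OF _ _ d01_cont[OF dz]] by auto
      have zm: "z m < 0" using m x1 by force
      have "M \<ge> S0" unfolding M_def using R beta by simp
      moreover have "sg * s 0 \<le> S0" using sg s0 by (auto simp: abs_le_iff)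
      moreover have "P / beta \<ge> 0" using P beta by simp
      ultimately have "z 0 \<ge> 0" unfolding z_def by simp
      hence "m \<noteq> 0" using zm by auto
      hence "0 < m" using m by auto
      hence z'm: "z' m \<le> 0" using min_deriv[OF dz m] by auto
      define E where "E = exp (- beta * m / eps)"
      have E: "E > 0" unfolding E_def by simp
      have bm: "b m \<ge> beta1" using b m by auto
      have r: "sg * rho m \<le> P + R * E" using rb m sg unfolding E_def by (auto simp: abs_le_iff)
      have "eps * z' m = - beta * M * E - sg * (eps * s' m)"
        unfolding z'_def E_def using eps by (simp add: field_simps)
      also have "sg * (eps * s' m) = sg * rho m - b m * (sg * s m)"
      proof -
        have e: "eps * s' m + b m * s m = rho m" using eq m(1) by blast
        show ?thesis by (simp add: e[symmetric] algebra_simps)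
      qed
      also have "sg * s m = P / beta + M * E - z m" unfolding z_def E_def by simp
      finally have "eps * z' m = (b m - beta) * M * E + (b m / beta) * P - sg * rho m - b m * z m"
        by (simp add: algebra_simps)
      moreover have "(b m - beta) * M * E \<ge> R * E"
      proof -
        have "(b m - beta) * M \<ge> (beta1 - beta) * M" using bm Mnn by (intro mult_right_mono) auto
        hence "(b m - beta) * M \<ge> R" using M by (simp add: mult.commute)
        thus ?thesis using E by (intro mult_right_mono) auto
      qed
      moreover have "(b m / beta) * P \<ge> P"
      proof -
        have "b m / beta \<ge> 1" using bm beta by (simp add: field_simps)
        thus ?thesis using P by (metis mult_le_cancel_right1 not_le order_less_le_trans)
      qed
      moreover have "b m * z m < 0" using bm beta zm by (simp add: mult_pos_neg)
      ultimately have "eps * z' m > 0" using r by linarith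
      hence "z' m > 0" using eps by (simp add: zero_less_mult_iff)
      thus False using z'm by simp
    qed
  qed
  show ?thesis
  proof
    fix x :: real assume x: "x \<in> {0..1}"
    have "s x \<le> P / beta + M * exp (- beta * x / eps)" using main[of 1] x by auto
    moreover have "- s x \<le> P / beta + M * exp (- beta * x / eps)" using main[of "-1"] x by auto
    ultimately show "\<bar>s x\<bar> \<le> P / beta + (S0 + R / (beta1 - beta)) * exp (- beta * x / eps)"
      unfolding M_def by linarith
  qed
qed

lemma taylor_bound:
  fixes d :: "nat \<Rightarrow> real \<Rightarrow> real"
  assumes "\<forall>m<n. d01 (d m) (d (Suc m))" "x \<in> {0..1}" "x' \<in> {0..1}"
    "\<forall>t. min x x' \<le> t \<and> t \<le> max x x' \<longrightarrow> \<bar>d n t\<bar> \<le> M"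
  shows "\<bar>d 0 x' - (\<Sum>k<n. d k x * (x' - x) ^ k / fact k)\<bar> \<le> M * \<bar>x' - x\<bar> ^ n"
  using assms
proof (induction n arbitrary: d x')
  case 0
  thus ?case by force
next
  case (Suc n)
  define phi where "phi = (\<lambda>t. d 0 t - (\<Sum>k<Suc n. d k x * (t - x) ^ k / fact k))"
  define phi' where "phi' = (\<lambda>t. d (Suc 0) t - (\<Sum>k<n. d (Suc k) x * (t - x) ^ k / fact k))"
  have dphi: "d01 phi phi'"
    unfolding d01_def
  proof
    fix t :: real assume t: "t \<in> {0..1}"
    have d0: "(d 0 has_real_derivative d (Suc 0) t) (at t within {0..1})"
      using Suc.prems(1)[rule_format, of 0] t unfolding d01_def
      by simp
    have dk: "((\<lambda>t. d (Suc k) x * (t - x) ^ Suc k / fact (Suc k)) has_real_derivative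
               d (Suc k) x * (t - x) ^ k / fact k) (at t within {0..1})" for k
    proof -
      have "((\<lambda>t. d (Suc k) x * (t - x) ^ Suc k / fact (Suc k)) has_real_derivative
               d (Suc k) x * (real (Suc k) * (t - x) ^ k * 1) / fact (Suc k)) (at t within {0..1})"
        by (intro derivative_eq_intros) auto
      moreover have "d (Suc k) x * (real (Suc k) * (t - x) ^ k * 1) / fact (Suc k) =
          d (Suc k) x * (t - x) ^ k / fact k"
        by (simp add: fact_Suc field_simps del: of_nat_Suc)
      ultimately show ?thesis by simp
    qed
    have eq: "phi = (\<lambda>t. d 0 t - d 0 x - (\<Sum>k<n. d (Suc k) x * (t - x) ^ Suc k / fact (Suc k)))"
      unfolding phi_def sum.lessThan_Suc_shift by (simp add: algebra_simps)
    show "(phi has_real_derivative phi' t) (at t within {0..1})"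
    proof -
      have A: "((\<lambda>t. d 0 t - d 0 x) has_real_derivative d (Suc 0) t) (at t within {0..1})"
        using DERIV_diff[OF d0 DERIV_const[of "d 0 x"]] by simp
      show ?thesis unfolding eq phi'_def
        by (intro DERIV_diff A DERIV_sum dk)
    qed
  qed
  have bd: "\<bar>phi' t\<bar> \<le> M * \<bar>x' - x\<bar> ^ n" if t: "min x x' \<le> t" "t \<le> max x x'" for t
  proof -
    have tI: "t \<in> {0..1}" using t Suc.prems(2,3) by auto
    have "\<forall>ta. min x t \<le> ta \<and> ta \<le> max x t \<longrightarrow> \<bar>d (Suc n) ta\<bar> \<le> M"
      using Suc.prems(4) t by (auto simp: min_def max_def split: if_splits)
    hence "\<bar>d (Suc 0) t - (\<Sum>k<n. d (Suc k) x * (t - x) ^ k / fact k)\<bar> \<le> M * \<bar>t - x\<bar> ^ n"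
      using Suc.IH[of "\<lambda>k. d (Suc k)" t] Suc.prems t tI by auto
    moreover have "\<bar>t - x\<bar> \<le> \<bar>x' - x\<bar>" using t by auto
    hence "\<bar>t - x\<bar> ^ n \<le> \<bar>x' - x\<bar> ^ n" by (intro power_mono) auto
    moreover have "M \<ge> 0" using Suc.prems(4)[rule_format, of x] by auto
    ultimately show ?thesis unfolding phi'_def
      by (metis (no_types, lifting) mult_left_mono order_trans One_nat_def)
  qed
  have phix: "phi x = 0" unfolding phi_def sum.lessThan_Suc_shift by simp
  have "\<bar>phi x'\<bar> \<le> M * \<bar>x' - x\<bar> ^ Suc n"
  proof (cases "x < x'")
    case True
    obtain z where z: "x < z" "z < x'" "phi x' - phi x = (x' - x) * phi' z"
      using mvt01[OF dphi, of x x'] True Suc.prems(2,3) by auto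
    have "\<bar>phi x'\<bar> = \<bar>x' - x\<bar> * \<bar>phi' z\<bar>" using z phix by (simp add: abs_mult)
    also have "\<dots> \<le> \<bar>x' - x\<bar> * (M * \<bar>x' - x\<bar> ^ n)" using bd[of z] z by (intro mult_left_mono) auto
    finally show ?thesis by (simp add: algebra_simps)
  next
    case False
    show ?thesis
    proof (cases "x = x'")
      case True thus ?thesis using phix by simp
    next
      case False
      hence lt: "x' < x" using \<open>\<not> x < x'\<close> by simp
      obtain z where z: "x' < z" "z < x" "phi x - phi x' = (x - x') * phi' z"
        using mvt01[OF dphi, of x' x] lt Suc.prems(2,3) by auto
      have "phi x' = - ((x - x') * phi' z)" using z phix by simp
      hence "\<bar>phi x'\<bar> = \<bar>x' - x\<bar> * \<bar>phi' z\<bar>" by (simp add: abs_mult abs_minus_commute)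
      also have "\<dots> \<le> \<bar>x' - x\<bar> * (M * \<bar>x' - x\<bar> ^ n)" using bd[of z] z by (intro mult_left_mono) auto
      finally show ?thesis by (simp add: algebra_simps)
    qed
  qed
  thus ?case unfolding phi_def by simp
qed

lemma sigma_bounds:
  assumes "r > 0"
  shows "0 < sigma r" "sigma r \<le> 1"
proof -
  have e: "exp (2 * r) - 1 \<ge> 2 * r" using exp_ge_add_one_self[of "2 * r"] by linarith
  have s: "sigma r = 2 * r / (exp (2 * r) - 1)" using assms by (simp add: sigma_def)
  show "0 < sigma r" unfolding s using e assms by simp
  show "sigma r \<le> 1" unfolding s using e assms by (simp add: divide_le_eq)
qed

lemma sigma_err:
  assumes "r > 0"
  shows "\<bar>1 - sigma r - r\<bar> \<le> 8 * r\<^sup>2"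
proof (cases "r \<ge> 1")
  case True
  have "\<bar>1 - sigma r - r\<bar> \<le> r" using sigma_bounds[OF assms] True by linarith
  also have "r \<le> 8 * r\<^sup>2" using True by (simp add: power2_eq_square)
  finally show ?thesis .
next
  case False
  define s where "s = 2 * r"
  have s: "0 < s" "s < 2" using assms False by (auto simp: s_def)
  obtain t where t: "\<bar>t\<bar> \<le> \<bar>s\<bar>" "exp s = (\<Sum>m<3. s ^ m / fact m) + exp t / fact 3 * s ^ 3"
    using Maclaurin_exp_le[of s 3] by blast
  define R where "R = exp t / 6 * s ^ 3"
  have ex: "exp s = 1 + s + s\<^sup>2 / 2 + R" using t(2)
    by (simp add: R_def eval_nat_numeral fact_numeral power2_eq_square)
  have et: "exp t \<le> 9"
  proof -
    have "exp t \<le> exp 2" using t s by simp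
    also have "exp (2::real) = exp 1 * exp 1" by (simp flip: exp_add)
    also have "\<dots> \<le> 3 * 3" using exp_le by (intro mult_mono) auto
    finally show ?thesis by simp
  qed
  have R: "0 \<le> R" "R \<le> 3 / 2 * s ^ 3"
    using et s unfolding R_def by (auto intro!: mult_right_mono)
  define Nn where "Nn = (1 - s / 2) * (exp s - 1) - s"
  have Nn: "Nn = R * (1 - s / 2) - (s ^ 3) / 4" unfolding Nn_def ex
    by (simp add: field_simps power2_eq_square power3_eq_cube)
  have "\<bar>R * (1 - s / 2)\<bar> \<le> 3 / 2 * s ^ 3"
  proof -
    have "\<bar>1 - s / 2\<bar> \<le> 1" using s by auto
    hence "R * \<bar>1 - s / 2\<bar> \<le> R * 1" using R by (intro mult_left_mono) auto
    hence "\<bar>R * (1 - s / 2)\<bar> \<le> R * 1" using R by (simp add: abs_mult)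
    thus ?thesis using R by simp
  qed
  hence a1: "R * (1 - s / 2) \<le> 3 / 2 * s ^ 3" "- (R * (1 - s / 2)) \<le> 3 / 2 * s ^ 3" by linarith+
  have "s ^ 3 > 0" using s by simp
  hence NnB: "\<bar>Nn\<bar> \<le> 2 * s ^ 3" unfolding Nn using a1 by linarith
  have e: "exp s - 1 \<ge> s" using exp_ge_add_one_self[of s] by linarith
  have sig: "sigma r = s / (exp s - 1)" using assms by (simp add: sigma_def s_def)
  have "1 - sigma r - r = Nn / (exp s - 1)"
    unfolding sig Nn_def using e s by (simp add: field_simps s_def)
  hence "\<bar>1 - sigma r - r\<bar> = \<bar>Nn\<bar> / (exp s - 1)" using e s by simp
  also have "\<dots> \<le> \<bar>Nn\<bar> / s" using e s by (intro divide_left_mono) auto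
  also have "\<dots> \<le> 2 * s ^ 3 / s" using NnB s by (intro divide_right_mono) auto
  also have "\<dots> = 8 * r\<^sup>2" using s by (simp add: s_def power2_eq_square power3_eq_cube)
  finally show ?thesis .
qed

fun Cr :: "nat \<Rightarrow> (real \<Rightarrow> real) \<Rightarrow> bool" where
  "Cr 0 g = continuous_on {0..1} g"
| "Cr (Suc k) g = (\<exists>g'. d01 g g' \<and> Cr k g')"

lemma Cr_cont: "Cr k g \<Longrightarrow> continuous_on {0..1} g"
  by (cases k) (auto intro: d01_cont)

lemma d01_cong:
  assumes "d01 g g'" "\<forall>x\<in>{0..1}. g x = h x" "\<forall>x\<in>{0..1}. g' x = h' x"
  shows "d01 h h'"
  unfolding d01_def
proof
  fix x :: real assume x: "x \<in> {0..1}"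
  have "(g has_real_derivative g' x) (at x within {0..1})" using assms(1) x by (auto simp: d01_def)
  hence "(h has_real_derivative g' x) (at x within {0..1})"
    by (rule has_field_derivative_transform_within[where d=1]) (use assms(2) x in auto)
  thus "(h has_real_derivative h' x) (at x within {0..1})" using assms(3) x by simp
qed

lemma Cr_cong: "Cr k g \<Longrightarrow> \<forall>x\<in>{0..1}. g x = h x \<Longrightarrow> Cr k h"
proof (induction k arbitrary: g h)
  case 0 thus ?case using continuous_on_cong by (metis Cr.simps(1))
next
  case (Suc k)
  then obtain g' where "d01 g g'" "Cr k g'" by auto
  thus ?case using d01_cong[of g g' h g'] Suc.prems by auto
qed

lemma Cr_mono: "Cr (Suc k) g \<Longrightarrow> Cr k g"
proof (induction k arbitrary: g)
  case 0 thus ?case by (auto intro: d01_cont)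
next
  case (Suc k)
  then obtain g' where "d01 g g'" "Cr (Suc k) g'" by auto
  thus ?case using Suc.IH by auto
qed

lemma Cr_le: "Cr k g \<Longrightarrow> j \<le> k \<Longrightarrow> Cr j g"
proof (induction k)
  case 0 thus ?case by simp
next
  case (Suc k) thus ?case using Cr_mono by (cases "j = Suc k") auto
qed

lemma Cr_const: "Cr k (\<lambda>x. c)"
proof (induction k arbitrary: c)
  case 0 thus ?case by simp
next
  case (Suc k)
  have "d01 (\<lambda>x. c) (\<lambda>x. 0)" unfolding d01_def by (auto intro!: derivative_eq_intros)
  thus ?case using Suc.IH by auto
qed

lemma Cr_id: "Cr k (\<lambda>x. x)"
proof (cases k)
  case 0 thus ?thesis by (simp add: continuous_on_id)
next
  case (Suc j)
  have "d01 (\<lambda>x. x) (\<lambda>x. 1)" unfolding d01_def by (auto intro!: derivative_eq_intros)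
  thus ?thesis using Suc Cr_const by auto
qed

lemma Cr_add: "Cr k f \<Longrightarrow> Cr k g \<Longrightarrow> Cr k (\<lambda>x. f x + g x)"
proof (induction k arbitrary: f g)
  case 0 thus ?case by (auto intro: continuous_intros)
next
  case (Suc k)
  obtain f' g' where "d01 f f'" "Cr k f'" "d01 g g'" "Cr k g'" using Suc.prems by auto
  moreover have "d01 (\<lambda>x. f x + g x) (\<lambda>x. f' x + g' x)"
    using \<open>d01 f f'\<close> \<open>d01 g g'\<close> unfolding d01_def by (auto intro!: derivative_eq_intros)
  ultimately show ?case using Suc.IH by auto
qed

lemma Cr_mult: "Cr k f \<Longrightarrow> Cr k g \<Longrightarrow> Cr k (\<lambda>x. f x * g x)"
proof (induction k arbitrary: f g)
  case 0 thus ?case by (auto intro: continuous_intros)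
next
  case (Suc k)
  obtain f' g' where fg: "d01 f f'" "Cr k f'" "d01 g g'" "Cr k g'" using Suc.prems by auto
  have "Cr k f" "Cr k g" using Suc.prems Cr_mono by auto
  hence "Cr k (\<lambda>x. f' x * g x + f x * g' x)" using Suc.IH Cr_add fg by auto
  moreover have "d01 (\<lambda>x. f x * g x) (\<lambda>x. f' x * g x + f x * g' x)"
    using fg unfolding d01_def by (auto intro!: derivative_eq_intros)
  ultimately show ?case by auto
qed

lemma Cr_cmult: "Cr k f \<Longrightarrow> Cr k (\<lambda>x. c * f x)"
  using Cr_mult[OF Cr_const] by blast

lemma Cr_diff: "Cr k f \<Longrightarrow> Cr k g \<Longrightarrow> Cr k (\<lambda>x. f x - g x)"
  using Cr_add[of k f "\<lambda>x. (-1) * g x"] Cr_cmult[of k g "-1"] by simp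

lemma Cr_inv: "Cr k f \<Longrightarrow> \<forall>x\<in>{0..1}. f x > 0 \<Longrightarrow> Cr k (\<lambda>x. 1 / f x)"
proof (induction k arbitrary: f)
  case 0 thus ?case by (auto intro!: continuous_intros)
next
  case (Suc k)
  obtain f' where f: "d01 f f'" "Cr k f'" using Suc.prems by auto
  have inv: "Cr k (\<lambda>x. 1 / f x)" using Suc Cr_mono by blast
  have "Cr k (\<lambda>x. (-1) * f' x * ((1 / f x) * (1 / f x)))"
    using Cr_mult[OF Cr_cmult[OF f(2), of "-1"] Cr_mult[OF inv inv]] by simp
  moreover have "d01 (\<lambda>x. 1 / f x) (\<lambda>x. (-1) * f' x * ((1 / f x) * (1 / f x)))"
    unfolding d01_def
  proof
    fix x :: real assume x: "x \<in> {0..1}"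
    have "(f has_real_derivative f' x) (at x within {0..1})" using f x by (auto simp: d01_def)
    moreover have "f x \<noteq> 0" using Suc.prems x by force
    ultimately show "((\<lambda>x. 1 / f x) has_real_derivative (-1) * f' x * ((1 / f x) * (1 / f x))) (at x within {0..1})"
      by (auto intro!: derivative_eq_intros simp: power2_eq_square field_simps)
  qed
  ultimately show ?case by auto
qed

lemma Cr_divide: "Cr k f \<Longrightarrow> Cr k g \<Longrightarrow> \<forall>x\<in>{0..1}. g x > 0 \<Longrightarrow> Cr k (\<lambda>x. f x / g x)"
  using Cr_mult[OF _ Cr_inv, of k f g] by (simp add: divide_inverse)

lemma Ck_Cr:
  assumes "Ck_on k {0..1} g"
  shows "Cr k g"
proof -
  obtain D where D: "\<forall>x\<in>{0..1}. D 0 x = g x"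
    "\<forall>j<k. \<forall>x\<in>{0..1}. (D j has_real_derivative D (Suc j) x) (at x within {0..1})"
    "\<forall>j\<le>k. continuous_on {0..1} (D j)"
    using assms unfolding Ck_on_def by blast
  have "\<forall>m. m \<le> k \<longrightarrow> Cr m (D (k - m))"
  proof
    fix m show "m \<le> k \<longrightarrow> Cr m (D (k - m))"
    proof (induction m)
      case 0 thus ?case using D(3) by simp
    next
      case (Suc m)
      show ?case
      proof
        assume m: "Suc m \<le> k"
        have "d01 (D (k - Suc m)) (D (k - m))"
          using D(2)[rule_format, of "k - Suc m"] m unfolding d01_def
          by (simp add: Suc_diff_Suc)
        thus "Cr (Suc m) (D (k - Suc m))" using Suc m by auto
      qed
    qed
  qed
  hence "Cr k (D 0)" by auto
  thus ?thesis using Cr_cong D(1) by blast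
qed

lemma Cr_family:
  "Cr k g \<Longrightarrow> \<exists>D. D 0 = g \<and> (\<forall>j<k. d01 (D j) (D (Suc j))) \<and> (\<forall>j\<le>k. continuous_on {0..1} (D j))"
proof (induction k arbitrary: g)
  case 0 thus ?case by (intro exI[of _ "\<lambda>j. g"]) auto
next
  case (Suc k)
  obtain g' where g: "d01 g g'" "Cr k g'" using Suc.prems by auto
  obtain D where D: "D 0 = g'" "\<forall>j<k. d01 (D j) (D (Suc j))" "\<forall>j\<le>k. continuous_on {0..1} (D j)"
    using Suc.IH[OF g(2)] by blast
  define E where "E = (\<lambda>j. if j = 0 then g else D (j - 1))"
  have "E 0 = g" by (simp add: E_def)
  moreover have "\<forall>j<Suc k. d01 (E j) (E (Suc j))"
  proof (intro allI impI)
    fix j assume "j < Suc k"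
    thus "d01 (E j) (E (Suc j))" using g D by (cases j) (auto simp: E_def)
  qed
  moreover have "\<forall>j\<le>Suc k. continuous_on {0..1} (E j)"
  proof (intro allI impI)
    fix j assume "j \<le> Suc k"
    thus "continuous_on {0..1} (E j)" using g D d01_cont by (cases j) (auto simp: E_def)
  qed
  ultimately show ?case by blast
qed

lemma u0_formula:
  fixes b c f u0 du0 ddu0 :: "real \<Rightarrow> real"
  assumes "continuous_on {0..1} b" "continuous_on {0..1} c" "continuous_on {0..1} f"
    "\<forall>x\<in>{0..1}. b x > 0" "d01 u0 du0" "d01 du0 ddu0"
    "\<forall>x\<in>{0<..<1}. - b x * du0 x + c x * u0 x = f x"
  shows "\<forall>x\<in>{0..1}. du0 x = (c x * u0 x - f x) / b x"
proof -
  have "\<forall>x\<in>{0..1}. du0 x = (c x * u0 x - f x) / b x"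
  proof (rule eq_on_closed)
    show "continuous_on {0..1} du0" using d01_cont[OF assms(6)] .
    show "continuous_on {0..1} (\<lambda>x. (c x * u0 x - f x) / b x)"
      using assms(1-5) d01_cont[OF assms(5)] by (intro continuous_intros) auto
    show "\<forall>x\<in>{0<..<1}. du0 x = (c x * u0 x - f x) / b x"
    proof
      fix x :: real assume x: "x \<in> {0<..<1}"
      have "b x * du0 x = c x * u0 x - f x" using assms(7) x by (auto simp: algebra_simps)
      moreover have "b x > 0" using assms(4) x by auto
      ultimately show "du0 x = (c x * u0 x - f x) / b x" by (simp add: field_simps)
    qed
  qed
  thus ?thesis .
qed

lemma u0_reg:
  fixes b c f u0 du0 ddu0 :: "real \<Rightarrow> real"
  assumes "Cr 4 b" "Cr 4 c" "Cr 4 f"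
    "\<forall>x\<in>{0..1}. b x > 0" "d01 u0 du0" "d01 du0 ddu0"
    "\<forall>x\<in>{0<..<1}. - b x * du0 x + c x * u0 x = f x"
  shows "Cr 5 u0"
proof -
  have fo: "\<forall>x\<in>{0..1}. du0 x = (c x * u0 x - f x) / b x"
    using u0_formula[OF Cr_cont[OF assms(1)] Cr_cont[OF assms(2)] Cr_cont[OF assms(3)] assms(4-7)] .
  have "k \<le> 5 \<Longrightarrow> Cr k u0" for k
  proof (induction k)
    case 0 thus ?case using d01_cont[OF assms(5)] by simp
  next
    case (Suc k)
    hence k: "k \<le> 4" "Cr k u0" by auto
    have "Cr k (\<lambda>x. (c x * u0 x - f x) / b x)"
      using Cr_le[OF assms(1) k(1)] Cr_le[OF assms(2) k(1)] Cr_le[OF assms(3) k(1)] k(2) assms(4)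
      by (intro Cr_divide Cr_diff Cr_mult) auto
    hence "Cr k du0" using fo Cr_cong by (metis (no_types, lifting))
    thus ?case using assms(5) by auto
  qed
  thus ?thesis by simp
qed

lemma u0_unique:
  fixes b c f u0 du0 ddu0 w0 dw0 ddw0 :: "real \<Rightarrow> real"
  assumes "continuous_on {0..1} b" "continuous_on {0..1} c" "continuous_on {0..1} f"
    "\<forall>x\<in>{0..1}. b x > 0" "\<forall>x\<in>{0..1}. c x \<ge> 0"
    "d01 u0 du0" "d01 du0 ddu0" "\<forall>x\<in>{0<..<1}. - b x * du0 x + c x * u0 x = f x" "u0 1 = 0"
    "d01 w0 dw0" "d01 dw0 ddw0" "\<forall>x\<in>{0<..<1}. - b x * dw0 x + c x * w0 x = f x" "w0 1 = 0"
  shows "\<forall>x\<in>{0..1}. u0 x = w0 x"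
proof -
  have fu: "\<forall>x\<in>{0..1}. du0 x = (c x * u0 x - f x) / b x"
    using u0_formula[OF assms(1-4,6-8)] .
  have fw: "\<forall>x\<in>{0..1}. dw0 x = (c x * w0 x - f x) / b x"
    using u0_formula[OF assms(1-4,10-12)] .
  have L0: "- b x * (du0 x - dw0 x) + c x * (u0 x - w0 x) = 0" if "x \<in> {0..1}" for x
  proof -
    have "b x > 0" using that assms(4) by auto
    hence "b x * du0 x = c x * u0 x - f x" "b x * dw0 x = c x * w0 x - f x"
      using fu fw that by auto
    thus ?thesis by (simp add: algebra_simps)
  qed
  have main: "sg * (u0 x - w0 x) \<le> 2 * dl" if sg: "sg = 1 \<or> sg = -1" and dl: "dl > 0"
    and x: "x \<in> {0..1}" for sg dl x
  proof -
    define z where "z = (\<lambda>x. dl * (2 - x) - sg * (u0 x - w0 x))"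
    define z' where "z' = (\<lambda>x. - dl - sg * (du0 x - dw0 x))"
    define z'' where "z'' = (\<lambda>x. - sg * (ddu0 x - ddw0 x))"
    have dz: "d01 z z'" using assms(6,10) unfolding d01_def z_def z'_def
      by (auto intro!: derivative_eq_intros)
    have dz': "d01 z' z''" using assms(7,11) unfolding d01_def z'_def z''_def
      by (auto intro!: derivative_eq_intros)
    have Lz: "- b x * z' x + c x * z x = dl * (b x + c x * (2 - x))" if "x \<in> {0..1}" for x
    proof -
      have "- b x * z' x + c x * z x = dl * (b x + c x * (2 - x)) - sg * (- b x * (du0 x - dw0 x) + c x * (u0 x - w0 x))"
        unfolding z_def z'_def by (simp add: algebra_simps)
      thus ?thesis using L0[OF that] by simp
    qed
    have pos: "dl * (b x + c x * (2 - x)) > 0" if "x \<in> {0..1}" for x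
    proof -
      have "b x > 0" "c x * (2 - x) \<ge> 0" using that assms(4,5) by auto
      thus ?thesis using dl by simp
    qed
    have "\<forall>x\<in>{0..1}. z x \<ge> 0"
    proof (rule max_principle[of 0 z z' z'' b c])
      show "\<forall>x\<in>{0<..<1}. - 0 * z'' x - b x * z' x + c x * z x > 0"
        using Lz pos by auto
      show "z 1 \<ge> 0" unfolding z_def using assms(9,13) dl by simp
      show "z 0 < 0 \<longrightarrow> z' 0 < 0"
      proof
        assume "z 0 < 0"
        hence "c 0 * z 0 \<le> 0" using assms(5) by (simp add: mult_nonneg_nonpos)
        hence "- b 0 * z' 0 > 0" using Lz[of 0] pos[of 0] by simp
        moreover have "b 0 > 0" using assms(4) by auto
        ultimately show "z' 0 < 0" by (simp add: mult_less_0_iff)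
      qed
    qed (use dz dz' assms(5) in auto)
    hence "z x \<ge> 0" using x by auto
    moreover have "dl * (2 - x) \<le> dl * 2" using x dl by (intro mult_left_mono) auto
    ultimately show ?thesis unfolding z_def by (simp add: algebra_simps)
  qed
  show ?thesis
  proof
    fix x :: real assume x: "x \<in> {0..1}"
    have a: "t \<le> 0" if "\<forall>dl>0. t \<le> 2 * dl" for t :: real
      using that[rule_format, of "t / 4"] by (cases "t > 0") auto
    have "\<forall>dl>0. u0 x - w0 x \<le> 2 * dl" using main[of 1 _ x] x by auto
    hence "u0 x - w0 x \<le> 0" by (rule a)
    moreover have "\<forall>dl>0. - (u0 x - w0 x) \<le> 2 * dl" using main[of "-1" _ x] x by auto
    hence "- (u0 x - w0 x) \<le> 0" by (rule a)
    ultimately show "u0 x = w0 x" by simp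
  qed
qed

lemma ode_closed:
  fixes b c f u du ddu :: "real \<Rightarrow> real"
  assumes "continuous_on {0..1} b" "continuous_on {0..1} c" "continuous_on {0..1} f"
    "d01 u du" "d01 du ddu" "continuous_on {0..1} ddu"
    "\<forall>x\<in>{0<..<1}. - eps * ddu x - b x * du x + c x * u x = f x"
  shows "\<forall>x\<in>{0..1}. - eps * ddu x - b x * du x + c x * u x = f x"
  using assms d01_cont[OF assms(4)] d01_cont[OF assms(5)]
  by (intro eq_on_closed) (auto intro!: continuous_intros)

lemma u_bound:
  fixes b c f u du ddu :: "real \<Rightarrow> real"
  assumes eps: "eps > 0" and beta: "beta > 0"
    and b: "\<forall>x\<in>{0..1}. b x \<ge> beta" and c: "\<forall>x\<in>{0..1}. c x \<ge> 0"
    and f: "\<forall>x\<in>{0..1}. \<bar>f x\<bar> \<le> Fm"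
    and d: "d01 u du" "d01 du ddu"
    and ode: "\<forall>x\<in>{0<..<1}. - eps * ddu x - b x * du x + c x * u x = f x"
    and bc: "u 0 = 0" "u 1 = 0"
  shows "\<forall>x\<in>{0..1}. \<bar>u x\<bar> \<le> 2 * ((Fm + 1) / beta)"
proof -
  define A where "A = (Fm + 1) / beta"
  have Fm: "Fm \<ge> 0" using f by force
  have A: "A > 0" "A * beta = Fm + 1" using beta Fm by (auto simp: A_def)
  have main: "sg * u x \<le> 2 * A" if sg: "sg = 1 \<or> sg = -1" and x: "x \<in> {0..1}" for sg x
  proof -
    define z where "z = (\<lambda>x. A * (2 - x) - sg * u x)"
    define z' where "z' = (\<lambda>x. - A - sg * du x)"
    define z'' where "z'' = (\<lambda>x. - sg * ddu x)"
    have dz: "d01 z z'" using d unfolding d01_def z_def z'_def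
      by (auto intro!: derivative_eq_intros)
    have dz': "d01 z' z''" using d unfolding d01_def z'_def z''_def
      by (auto intro!: derivative_eq_intros)
    have "\<forall>x\<in>{0..1}. z x \<ge> 0"
    proof (rule max_principle[of eps z z' z'' b c])
      show "\<forall>x\<in>{0<..<1}. - eps * z'' x - b x * z' x + c x * z x > 0"
      proof
        fix x :: real assume x: "x \<in> {0<..<1}"
        have "- eps * z'' x - b x * z' x + c x * z x
            = A * b x + A * (c x * (2 - x)) - sg * (- eps * ddu x - b x * du x + c x * u x)"
          unfolding z_def z'_def z''_def by (simp add: algebra_simps)
        also have "- eps * ddu x - b x * du x + c x * u x = f x" using ode x by auto
        finally have e: "- eps * z'' x - b x * z' x + c x * z x = A * b x + A * (c x * (2 - x)) - sg * f x" .
        have "A * b x \<ge> A * beta" using A b x by (intro mult_left_mono) auto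
        moreover have "A * (c x * (2 - x)) \<ge> 0" using A c x by auto
        moreover have "sg * f x \<le> Fm" using f x sg by (auto simp: abs_le_iff)
        ultimately show "- eps * z'' x - b x * z' x + c x * z x > 0" unfolding e using A by linarith
      qed
      show "z 1 \<ge> 0" unfolding z_def using bc A by simp
      show "z 0 < 0 \<longrightarrow> z' 0 < 0" unfolding z_def using bc A by simp
    qed (use dz dz' eps c in auto)
    hence "z x \<ge> 0" using x by auto
    moreover have "A * (2 - x) \<le> A * 2" using x A by (intro mult_left_mono) auto
    ultimately show ?thesis unfolding z_def by (simp add: algebra_simps)
  qed
  show ?thesis
  proof
    fix x :: real assume x: "x \<in> {0..1}"
    show "\<bar>u x\<bar> \<le> 2 * ((Fm + 1) / beta)" using main[of 1 x] main[of "-1" x] x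
      unfolding A_def by auto
  qed
qed

lemma du0_bound:
  fixes b b1 c f u du ddu :: "real \<Rightarrow> real"
  assumes eps: "eps > 0"
    and b: "\<forall>x\<in>{0..1}. \<bar>b x\<bar> \<le> Bm \<and> \<bar>b1 x\<bar> \<le> Bm" and db: "d01 b b1"
    and c: "\<forall>x\<in>{0..1}. \<bar>c x\<bar> \<le> Cm"
    and f: "\<forall>x\<in>{0..1}. \<bar>f x\<bar> \<le> Fm"
    and ub: "\<forall>x\<in>{0..1}. \<bar>u x\<bar> \<le> U"
    and d: "d01 u du" "d01 du ddu"
    and ode: "\<forall>x\<in>{0..1}. - eps * ddu x - b x * du x + c x * u x = f x"
    and bc: "u 0 = 0" "u 1 = 0"
  shows "\<bar>eps * du 0\<bar> \<le> Bm * U + Cm * U + Fm + Bm * U"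
proof -
  define P where "P = Bm * U + Cm * U + Fm"
  define phi where "phi = (\<lambda>x. eps * du x + b x * u x)"
  define phi' where "phi' = (\<lambda>x. eps * ddu x + (b1 x * u x + b x * du x))"
  have dphi: "d01 phi phi'" using d db unfolding d01_def phi_def phi'_def
    by (auto intro!: derivative_eq_intros)
  have pb: "\<bar>phi' x\<bar> \<le> P" if x: "x \<in> {0..1}" for x
  proof -
    have "phi' x = b1 x * u x + c x * u x - f x" using ode x unfolding phi'_def
      by (auto simp: algebra_simps)
    moreover have "\<bar>b1 x * u x\<bar> \<le> Bm * U" using b ub x by (auto simp: abs_mult intro!: mult_mono)
    moreover have "\<bar>c x * u x\<bar> \<le> Cm * U" using c ub x by (auto simp: abs_mult intro!: mult_mono)
    moreover have "\<bar>f x\<bar> \<le> Fm" using f x by auto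
    ultimately show ?thesis unfolding P_def by linarith
  qed
  have close: "\<bar>eps * du x - eps * du 0\<bar> \<le> P + Bm * U" if x: "x \<in> {0..1}" for x
  proof (cases "x = 0")
    case True
    have "0 \<le> Bm" "0 \<le> U" "0 \<le> Cm" "0 \<le> Fm" using b c f ub by force+
    thus ?thesis using True unfolding P_def by simp
  next
    case False
    hence x0: "0 < x" using x by auto
    obtain z where z: "0 < z" "z < x" "phi x - phi 0 = (x - 0) * phi' z"
      using mvt01[OF dphi, of 0 x] x x0 by auto
    have "\<bar>phi x - phi 0\<bar> \<le> x * P" using z pb[of z] x by (auto simp: abs_mult intro!: mult_mono)
    also have "\<dots> \<le> P" using x pb[of 0] by (intro mult_left_le_one_le) auto
    finally have a: "\<bar>phi x - phi 0\<bar> \<le> P" .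
    have "\<bar>b x * u x\<bar> \<le> Bm * U" using b ub x by (auto simp: abs_mult intro!: mult_mono)
    moreover have "phi x - phi 0 = eps * du x - eps * du 0 + b x * u x" unfolding phi_def using bc by simp
    ultimately show ?thesis using a by linarith
  qed
  show ?thesis
  proof (rule ccontr)
    assume "\<not> ?thesis"
    hence big: "\<bar>eps * du 0\<bar> > P + Bm * U" unfolding P_def by simp
    obtain z where z: "0 < z" "z < 1" "u 1 - u 0 = (1 - 0) * du z"
      using mvt01[OF d(1), of 0 1] by auto
    have "du z = 0" using z bc by simp
    hence "\<bar>eps * du 0\<bar> \<le> P + Bm * U" using close[of z] z by auto
    thus False using big by simp
  qed
qed

lemma exp_lin_bound:
  fixes x eps b0 beta beta1 :: real
  assumes "eps > 0" "x \<ge> 0" "b0 \<ge> beta1" "beta1 > beta"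
  shows "exp (- b0 * x / eps) * (x / eps) \<le> exp (- beta * x / eps) / (beta1 - beta)"
proof -
  define t where "t = x / eps"
  have t: "t \<ge> 0" using assms by (simp add: t_def)
  define d where "d = b0 - beta"
  have d: "d \<ge> beta1 - beta" "beta1 - beta > 0" using assms by (auto simp: d_def)
  have "exp (d * t) \<ge> 1 + d * t" using exp_ge_add_one_self by simp
  hence "exp (d * t) \<ge> d * t" by linarith
  hence "exp (d * t) \<ge> (beta1 - beta) * t" using d t by (smt (verit) mult_right_mono)
  hence "t \<le> exp (d * t) / (beta1 - beta)" using d by (simp add: field_simps)
  hence "exp (- b0 * t) * t \<le> exp (- b0 * t) * (exp (d * t) / (beta1 - beta))"
    by (intro mult_left_mono) auto
  also have "\<dots> = exp (- beta * t) / (beta1 - beta)"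
    by (simp add: d_def mult_exp_exp algebra_simps)
  finally show ?thesis unfolding t_def by simp
qed

lemma exp_mono_b:
  fixes x eps b0 beta :: real
  assumes "eps > 0" "x \<ge> 0" "b0 \<ge> beta"
  shows "exp (- b0 * x / eps) \<le> exp (- beta * x / eps)"
proof -
  have "beta * x / eps \<le> b0 * x / eps" using assms by (intro divide_right_mono mult_right_mono) auto
  thus ?thesis by simp
qed

lemma abs_tri_div:
  fixes a b c eps :: real
  assumes "eps > 0"
  shows "\<bar>a * b / eps + c\<bar> \<le> \<bar>a\<bar> * \<bar>b\<bar> / eps + \<bar>c\<bar>"
proof -
  have "\<bar>a * b / eps\<bar> = \<bar>a\<bar> * \<bar>b\<bar> / eps" using assms by (simp add: abs_mult)
  thus ?thesis using abs_triangle_ineq[of "a * b / eps" c] by simp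
qed

lemma abs_lin2:
  fixes a b k :: real
  assumes "k \<ge> 0"
  shows "\<bar>a - k * b\<bar> \<le> \<bar>a\<bar> + k * \<bar>b\<bar>"
proof -
  have "\<bar>k * b\<bar> = k * \<bar>b\<bar>" using assms by (simp add: abs_mult)
  thus ?thesis using abs_triangle_ineq4[of a "k * b"] by simp
qed

lemma abs_lin3:
  fixes a b c k :: real
  assumes "k \<ge> 0"
  shows "\<bar>a - 2 * k * b + k\<^sup>2 * c\<bar> \<le> \<bar>a\<bar> + 2 * k * \<bar>b\<bar> + k\<^sup>2 * \<bar>c\<bar>"
proof -
  have "\<bar>2 * k * b\<bar> = 2 * k * \<bar>b\<bar>" using assms by (simp add: abs_mult)
  moreover have "\<bar>k\<^sup>2 * c\<bar> = k\<^sup>2 * \<bar>c\<bar>" by (simp add: abs_mult)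
  ultimately show ?thesis using abs_triangle_ineq4[of a "2 * k * b"] abs_triangle_ineq[of "a - 2 * k * b" "k\<^sup>2 * c"]
    by linarith
qed

lemma q_bounds:
  fixes b b1 b2 c c1 c2 :: "real \<Rightarrow> real"
  assumes eps: "0 < eps" "eps < 1" and beta: "beta > 0" "beta1 > beta"
    and bge: "\<forall>x\<in>{0..1}. b x \<ge> beta1"
    and db: "d01 b b1" "d01 b1 b2" and dc: "d01 c c1" "d01 c1 c2"
    and bb: "\<forall>x\<in>{0..1}. \<bar>b x\<bar> \<le> Bm \<and> \<bar>b1 x\<bar> \<le> Bm \<and> \<bar>b2 x\<bar> \<le> Bm"
    and cb: "\<forall>x\<in>{0..1}. \<bar>c x\<bar> \<le> Cm \<and> \<bar>c1 x\<bar> \<le> Cm \<and> \<bar>c2 x\<bar> \<le> Cm"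
  assumes m_def: "m = (\<lambda>x. (b x - (b 0)) * (b 0) / eps + c x)"
    and m1_def: "m1 = (\<lambda>x. b1 x * (b 0) / eps + c1 x)"
    and m2_def: "m2 = (\<lambda>x. b2 x * (b 0) / eps + c2 x)"
    and q_def: "q = (\<lambda>x. exp (- (b 0) * x / eps) * m x)"
    and q1_def: "q1 = (\<lambda>x. exp (- (b 0) * x / eps) * (m1 x - ((b 0) / eps) * m x))"
    and q2_def: "q2 = (\<lambda>x. exp (- (b 0) * x / eps) * (m2 x - 2 * ((b 0) / eps) * m1 x + ((b 0) / eps)\<^sup>2 * m x))"
    and Q0_def: "Q0 = Bm * Bm / (beta1 - beta) + Cm"
  shows "d01 q q1" "d01 q1 q2"
    "\<forall>x\<in>{0..1}. \<bar>q x\<bar> \<le> Q0 * exp (- beta * x / eps)"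
    "\<forall>x\<in>{0..1}. \<bar>q1 x\<bar> \<le> (Bm * Bm + Cm + Bm * Q0) * exp (- beta * x / eps) / eps"
    "\<forall>x\<in>{0..1}. \<bar>q2 x\<bar> \<le> ((Bm * Bm + Cm) + 2 * Bm * (Bm * Bm + Cm) + Bm * Bm * Q0) * exp (- beta * x / eps) / eps\<^sup>2"
proof -
  have dm: "d01 m m1" using db dc eps unfolding d01_def m_def m1_def
    by (auto intro!: derivative_eq_intros)
  have dm1: "d01 m1 m2" using db dc eps unfolding d01_def m1_def m2_def
    by (auto intro!: derivative_eq_intros)
  show "d01 q q1" using dm eps unfolding d01_def q_def q1_def
    by (auto intro!: derivative_eq_intros simp: algebra_simps)
  show "d01 q1 q2" using dm dm1 eps unfolding d01_def q1_def q2_def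
    by (auto intro!: derivative_eq_intros simp: field_simps power2_eq_square)
  have Bm: "Bm \<ge> 0" "Cm \<ge> 0" using bb cb by force+
  have b0fact: "(b 0) \<ge> beta1" "\<bar>(b 0)\<bar> \<le> Bm" using bge bb by auto
  have bzb: "(b 0) / eps \<le> Bm / eps" "(b 0) / eps \<ge> 0" using b0fact beta eps by (auto intro: divide_right_mono)
  have Q0: "Q0 \<ge> 0" unfolding Q0_def using Bm beta by simp
  have ie: "1 \<le> 1 / eps" using eps by simp
  have ie2: "1 / eps \<le> 1 / eps\<^sup>2" using eps by (simp add: divide_simps power2_eq_square)
  have bdiff: "\<bar>b x - (b 0)\<bar> \<le> Bm * x" if x: "x \<in> {0..1}" for x
  proof (cases "x = 0")
    case True thus ?thesis by simp
  next
    case False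
    then obtain z where z: "0 < z" "z < x" "b x - b 0 = (x - 0) * b1 z"
      using mvt01[OF db(1), of 0 x] x by auto
    hence "\<bar>b x - (b 0)\<bar> = x * \<bar>b1 z\<bar>" using x by (simp add: abs_mult)
    also have "\<dots> \<le> x * Bm" using bb z x by (intro mult_left_mono) auto
    finally show ?thesis by (simp add: mult.commute)
  qed
  have qm: "exp (- (b 0) * x / eps) * \<bar>m x\<bar> \<le> Q0 * exp (- beta * x / eps)" if x: "x \<in> {0..1}" for x
  proof -
    let ?e = "exp (- (b 0) * x / eps)" and ?E = "exp (- beta * x / eps)"
    have "\<bar>m x\<bar> \<le> \<bar>b x - (b 0)\<bar> * \<bar>(b 0)\<bar> / eps + \<bar>c x\<bar>"
      unfolding m_def using abs_tri_div eps by blast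
    also have "\<dots> \<le> (Bm * x) * Bm / eps + Cm"
    proof -
      have "\<bar>b x - (b 0)\<bar> * \<bar>(b 0)\<bar> \<le> (Bm * x) * Bm"
        by (rule mult_mono) (use bdiff[OF x] b0fact Bm x in auto)
      hence "\<bar>b x - (b 0)\<bar> * \<bar>(b 0)\<bar> / eps \<le> (Bm * x) * Bm / eps"
        using eps by (intro divide_right_mono) auto
      moreover have "\<bar>c x\<bar> \<le> Cm" using cb x by auto
      ultimately show ?thesis by linarith
    qed
    finally have "?e * \<bar>m x\<bar> \<le> ?e * ((Bm * x) * Bm / eps + Cm)" by (intro mult_left_mono) auto
    also have "\<dots> = Bm * Bm * (?e * (x / eps)) + Cm * ?e" by (simp add: algebra_simps)
    also have "\<dots> \<le> Bm * Bm * (?E / (beta1 - beta)) + Cm * ?E"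
    proof -
      have i1: "?e * (x / eps) \<le> ?E / (beta1 - beta)"
        by (rule exp_lin_bound) (use eps x b0fact beta in auto)
      have i2: "?e \<le> ?E" by (rule exp_mono_b) (use eps x b0fact beta in auto)
      show ?thesis using i1 i2 Bm by (intro add_mono mult_left_mono) auto
    qed
    also have "\<dots> = Q0 * ?E" unfolding Q0_def by (simp add: algebra_simps)
    finally show ?thesis .
  qed
  have m1b: "\<bar>m1 x\<bar> \<le> (Bm * Bm + Cm) / eps" if x: "x \<in> {0..1}" for x
  proof -
    have "\<bar>m1 x\<bar> \<le> \<bar>b1 x\<bar> * \<bar>(b 0)\<bar> / eps + \<bar>c1 x\<bar>" unfolding m1_def using abs_tri_div eps by blast
    also have "\<dots> \<le> Bm * Bm / eps + Cm / eps"
    proof -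
      have "\<bar>b1 x\<bar> * \<bar>(b 0)\<bar> \<le> Bm * Bm"
        by (rule mult_mono) (use bb b0fact Bm x in auto)
      hence "\<bar>b1 x\<bar> * \<bar>(b 0)\<bar> / eps \<le> Bm * Bm / eps"
        using eps by (intro divide_right_mono) auto
      moreover have "\<bar>c1 x\<bar> \<le> Cm" using cb x by auto
      moreover have "Cm * eps \<le> Cm * 1" using eps Bm by (intro mult_left_mono) auto
      hence "Cm \<le> Cm / eps" using eps by (simp add: le_divide_eq)
      ultimately show ?thesis by linarith
    qed
    finally show ?thesis by (simp add: add_divide_distrib)
  qed
  have m2b: "\<bar>m2 x\<bar> \<le> (Bm * Bm + Cm) / eps" if x: "x \<in> {0..1}" for x
  proof -
    have "\<bar>m2 x\<bar> \<le> \<bar>b2 x\<bar> * \<bar>(b 0)\<bar> / eps + \<bar>c2 x\<bar>" unfolding m2_def using abs_tri_div eps by blast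
    also have "\<dots> \<le> Bm * Bm / eps + Cm / eps"
    proof -
      have "\<bar>b2 x\<bar> * \<bar>(b 0)\<bar> \<le> Bm * Bm"
        by (rule mult_mono) (use bb b0fact Bm x in auto)
      hence "\<bar>b2 x\<bar> * \<bar>(b 0)\<bar> / eps \<le> Bm * Bm / eps"
        using eps by (intro divide_right_mono) auto
      moreover have "\<bar>c2 x\<bar> \<le> Cm" using cb x by auto
      moreover have "Cm * eps \<le> Cm * 1" using eps Bm by (intro mult_left_mono) auto
      hence "Cm \<le> Cm / eps" using eps by (simp add: le_divide_eq)
      ultimately show ?thesis by linarith
    qed
    finally show ?thesis by (simp add: add_divide_distrib)
  qed
  have eE: "exp (- (b 0) * x / eps) \<le> exp (- beta * x / eps)" if x: "x \<in> {0..1}" for x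
    by (rule exp_mono_b) (use eps x b0fact beta in auto)
  show "\<forall>x\<in>{0..1}. \<bar>q x\<bar> \<le> Q0 * exp (- beta * x / eps)"
    using qm unfolding q_def by (simp add: abs_mult)
  show "\<forall>x\<in>{0..1}. \<bar>q1 x\<bar> \<le> (Bm * Bm + Cm + Bm * Q0) * exp (- beta * x / eps) / eps"
  proof
    fix x :: real assume x: "x \<in> {0..1}"
    let ?e = "exp (- (b 0) * x / eps)" and ?E = "exp (- beta * x / eps)"
    have "\<bar>q1 x\<bar> \<le> ?e * \<bar>m1 x\<bar> + ((b 0) / eps) * (?e * \<bar>m x\<bar>)"
    proof -
      have "\<bar>q1 x\<bar> = ?e * \<bar>m1 x - ((b 0) / eps) * m x\<bar>" unfolding q1_def by (simp add: abs_mult)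
      also have "\<dots> \<le> ?e * (\<bar>m1 x\<bar> + ((b 0) / eps) * \<bar>m x\<bar>)"
        using abs_lin2[OF bzb(2)] by (intro mult_left_mono) auto
      finally show ?thesis by (simp add: algebra_simps)
    qed
    also have "\<dots> \<le> ?E * ((Bm * Bm + Cm) / eps) + (Bm / eps) * (Q0 * ?E)"
    proof -
      have A: "?e * \<bar>m1 x\<bar> \<le> ?E * ((Bm * Bm + Cm) / eps)"
        by (rule mult_mono[OF eE[OF x] m1b[OF x]]) auto
      have B: "((b 0) / eps) * (?e * \<bar>m x\<bar>) \<le> (Bm / eps) * (Q0 * ?E)"
        by (rule mult_mono[OF bzb(1) qm[OF x]]) (use Bm eps in auto)
      show ?thesis using A B by linarith
    qed
    also have "\<dots> = (Bm * Bm + Cm + Bm * Q0) * ?E / eps" using eps by (simp add: field_simps)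
    finally show "\<bar>q1 x\<bar> \<le> (Bm * Bm + Cm + Bm * Q0) * ?E / eps" .
  qed
  show "\<forall>x\<in>{0..1}. \<bar>q2 x\<bar> \<le> ((Bm * Bm + Cm) + 2 * Bm * (Bm * Bm + Cm) + Bm * Bm * Q0) * exp (- beta * x / eps) / eps\<^sup>2"
  proof
    fix x :: real assume x: "x \<in> {0..1}"
    let ?e = "exp (- (b 0) * x / eps)" and ?E = "exp (- beta * x / eps)"
    have "\<bar>q2 x\<bar> \<le> ?e * \<bar>m2 x\<bar> + 2 * ((b 0) / eps) * (?e * \<bar>m1 x\<bar>) + ((b 0) / eps)\<^sup>2 * (?e * \<bar>m x\<bar>)"
    proof -
      have "\<bar>q2 x\<bar> = ?e * \<bar>m2 x - 2 * ((b 0) / eps) * m1 x + ((b 0) / eps)\<^sup>2 * m x\<bar>"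
        unfolding q2_def by (simp add: abs_mult)
      also have "\<bar>m2 x - 2 * ((b 0) / eps) * m1 x + ((b 0) / eps)\<^sup>2 * m x\<bar>
          \<le> \<bar>m2 x\<bar> + 2 * ((b 0) / eps) * \<bar>m1 x\<bar> + ((b 0) / eps)\<^sup>2 * \<bar>m x\<bar>"
        using abs_lin3[OF bzb(2)] by simp
      finally show ?thesis by (simp add: algebra_simps mult_left_mono)
    qed
    also have "\<dots> \<le> ?E * ((Bm * Bm + Cm) / eps) + 2 * (Bm / eps) * (?E * ((Bm * Bm + Cm) / eps))
        + (Bm / eps)\<^sup>2 * (Q0 * ?E)"
    proof -
      have A: "?e * \<bar>m2 x\<bar> \<le> ?E * ((Bm * Bm + Cm) / eps)"
        by (rule mult_mono[OF eE[OF x] m2b[OF x]]) auto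
      have B0: "?e * \<bar>m1 x\<bar> \<le> ?E * ((Bm * Bm + Cm) / eps)"
        by (rule mult_mono[OF eE[OF x] m1b[OF x]]) auto
      have B: "2 * ((b 0) / eps) * (?e * \<bar>m1 x\<bar>) \<le> 2 * (Bm / eps) * (?E * ((Bm * Bm + Cm) / eps))"
        by (rule mult_mono[OF _ B0]) (use bzb Bm eps in auto)
      have p: "((b 0) / eps)\<^sup>2 \<le> (Bm / eps)\<^sup>2" by (rule power_mono[OF bzb(1) bzb(2)])
      have C: "((b 0) / eps)\<^sup>2 * (?e * \<bar>m x\<bar>) \<le> (Bm / eps)\<^sup>2 * (Q0 * ?E)"
        by (rule mult_mono[OF p qm[OF x]]) auto
      show ?thesis using A B C by linarith
    qed
    also have "\<dots> = (Bm * Bm + Cm) * ?E * (1 / eps) + (2 * Bm * (Bm * Bm + Cm) + Bm * Bm * Q0) * ?E / eps\<^sup>2"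
      using eps by (simp add: field_simps power2_eq_square)
    also have "\<dots> \<le> (Bm * Bm + Cm) * ?E * (1 / eps\<^sup>2) + (2 * Bm * (Bm * Bm + Cm) + Bm * Bm * Q0) * ?E / eps\<^sup>2"
      using ie2 Bm by (intro add_mono mult_left_mono) auto
    also have "\<dots> = ((Bm * Bm + Cm) + 2 * Bm * (Bm * Bm + Cm) + Bm * Bm * Q0) * ?E / eps\<^sup>2"
      using eps by (simp add: field_simps)
    finally show "\<bar>q2 x\<bar> \<le> ((Bm * Bm + Cm) + 2 * Bm * (Bm * Bm + Cm) + Bm * Bm * Q0) * ?E / eps\<^sup>2" .
  qed
qed

lemma prod_bd:
  fixes a b A B :: real
  assumes "\<bar>a\<bar> \<le> A" "\<bar>b\<bar> \<le> B"
  shows "\<bar>a * b\<bar> \<le> A * B"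
  using assms by (simp add: abs_mult mult_mono')

lemma y0_bound:
  fixes b c y y1 y2 g :: "real \<Rightarrow> real"
  assumes eps: "0 < eps" "eps < 1" and beta: "beta > 0" "beta1 > beta"
    and bge: "\<forall>x\<in>{0..1}. b x \<ge> beta1" and cge: "\<forall>x\<in>{0..1}. c x \<ge> 0"
    and dy: "d01 y y1" "d01 y1 y2"
    and ode: "\<forall>x\<in>{0..1}. - eps * y2 x - b x * y1 x + c x * y x = g x"
    and gb: "\<forall>x\<in>{0..1}. \<bar>g x\<bar> \<le> G1 * eps + G2 * exp (- beta * x / eps)"
    and y1b: "\<bar>y 1\<bar> \<le> G3 * eps" and y10: "\<bar>y1 0\<bar> \<le> G4"
    and G: "G1 \<ge> 0" "G2 \<ge> 0" "G3 \<ge> 0"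
  shows "\<forall>x\<in>{0..1}. \<bar>y x\<bar> \<le> (2 * ((G1 + 1) / beta + G3) + (G2 / (beta * (beta1 - beta)) + (G4 + 1) / beta)) * eps"
proof -
  define A where "A = (G1 + 1) / beta + G3"
  define B where "B = G2 / (beta * (beta1 - beta)) + (G4 + 1) / beta"
  have G4: "G4 \<ge> 0" using y10 by linarith
  have dl: "beta1 - beta > 0" using beta by simp
  have A: "A \<ge> 0" "A * beta \<ge> G1 + 1" "A \<ge> G3"
  proof -
    show "A \<ge> 0" using G beta by (simp add: A_def)
    have "A * beta = G1 + 1 + G3 * beta" using beta by (simp add: A_def field_simps)
    thus "A * beta \<ge> G1 + 1" using G beta by simp
    show "A \<ge> G3" using G beta by (simp add: A_def)
  qed
  have B: "B \<ge> 0" "B * beta * (beta1 - beta) \<ge> G2" "B * beta \<ge> G4 + 1"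
  proof -
    show "B \<ge> 0" using G G4 beta dl by (simp add: B_def)
    have "B * beta * (beta1 - beta) = G2 + (G4 + 1) * (beta1 - beta)" using beta dl
      by (simp add: B_def field_simps)
    thus "B * beta * (beta1 - beta) \<ge> G2" using G4 dl by simp
    have "B * beta = G2 / (beta1 - beta) + (G4 + 1)" using beta dl by (simp add: B_def field_simps)
    thus "B * beta \<ge> G4 + 1" using G dl by simp
  qed
  have main: "sg * y x \<le> (2 * A + B) * eps" if sg: "sg = 1 \<or> sg = -1" and x: "x \<in> {0..1}" for sg x
  proof -
    define E where "E = (\<lambda>x. exp (- beta * x / eps))"
    define z where "z = (\<lambda>x. A * eps * (2 - x) + B * eps * E x - sg * y x)"
    define z' where "z' = (\<lambda>x. - A * eps - B * beta * E x - sg * y1 x)"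
    define z'' where "z'' = (\<lambda>x. B * beta * beta / eps * E x - sg * y2 x)"
    have dz: "d01 z z'" using dy eps unfolding d01_def z_def z'_def E_def
      by (auto intro!: derivative_eq_intros simp: field_simps)
    have dz': "d01 z' z''" using dy eps unfolding d01_def z'_def z''_def E_def
      by (auto intro!: derivative_eq_intros simp: field_simps)
    have "\<forall>x\<in>{0..1}. z x \<ge> 0"
    proof (rule max_principle[of eps z z' z'' b c])
      show "\<forall>x\<in>{0<..<1}. - eps * z'' x - b x * z' x + c x * z x > 0"
      proof
        fix x :: real assume x: "x \<in> {0<..<1}"
        hence xI: "x \<in> {0..1}" by auto
        have Ep: "E x > 0" unfolding E_def by simp
        have bx: "b x \<ge> beta1" using bge xI by auto
        have "- eps * z'' x - b x * z' x + c x * z x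
            = A * eps * b x + B * beta * (b x - beta) * E x + c x * (A * eps * (2 - x) + B * eps * E x)
              - sg * (- eps * y2 x - b x * y1 x + c x * y x)"
          unfolding z_def z'_def z''_def using eps by (simp add: field_simps)
        also have "- eps * y2 x - b x * y1 x + c x * y x = g x" using ode xI by auto
        finally have e: "- eps * z'' x - b x * z' x + c x * z x
            = A * eps * b x + B * beta * (b x - beta) * E x + c x * (A * eps * (2 - x) + B * eps * E x) - sg * g x" .
        have "A * eps * b x \<ge> A * eps * beta" using A eps bx beta by (intro mult_left_mono) auto
        moreover have "A * eps * beta \<ge> (G1 + 1) * eps" using A eps by (simp add: mult.commute mult.left_commute mult_right_mono)
        moreover have "B * beta * (b x - beta) * E x \<ge> G2 * E x"
        proof -
          have "B * beta * (b x - beta) \<ge> B * beta * (beta1 - beta)"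
            using B beta bx by (intro mult_left_mono) auto
          hence "B * beta * (b x - beta) \<ge> G2" using B by linarith
          thus ?thesis using Ep by (intro mult_right_mono) auto
        qed
        moreover have "c x * (A * eps * (2 - x) + B * eps * E x) \<ge> 0"
          using cge xI A B eps Ep x by (intro mult_nonneg_nonneg add_nonneg_nonneg) auto
        moreover have "sg * g x \<le> G1 * eps + G2 * E x" using gb xI sg unfolding E_def by (auto simp: abs_le_iff)
        ultimately show "- eps * z'' x - b x * z' x + c x * z x > 0" unfolding e using eps
          by (simp add: algebra_simps)
      qed
      show "z 1 \<ge> 0"
      proof -
        have "sg * y 1 \<le> G3 * eps" using y1b sg by (auto simp: abs_le_iff)
        moreover have "A * eps \<ge> G3 * eps" using A eps by (intro mult_right_mono) auto
        moreover have "B * eps * E 1 \<ge> 0" using B eps unfolding E_def by simp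
        ultimately show ?thesis unfolding z_def by simp
      qed
      show "z 0 < 0 \<longrightarrow> z' 0 < 0"
      proof
        have "- sg * y1 0 \<le> G4" using y10 sg by (auto simp: abs_le_iff)
        moreover have "A * eps \<ge> 0" using A eps by simp
        moreover have "E 0 = 1" unfolding E_def by simp
        ultimately show "z' 0 < 0" unfolding z'_def using B by simp
      qed
    qed (use dz dz' eps cge in auto)
    hence "z x \<ge> 0" using x by auto
    moreover have "A * eps * (2 - x) \<le> A * eps * 2" using A eps x by (intro mult_left_mono) auto
    moreover have "B * eps * E x \<le> B * eps * 1" using B eps x beta unfolding E_def by (intro mult_left_mono) auto
    ultimately show ?thesis unfolding z_def by (simp add: algebra_simps)
  qed
  show ?thesis
  proof
    fix x :: real assume x: "x \<in> {0..1}"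
    show "\<bar>y x\<bar> \<le> (2 * ((G1 + 1) / beta + G3) + (G2 / (beta * (beta1 - beta)) + (G4 + 1) / beta)) * eps"
      using main[of 1 x] main[of "-1" x] x unfolding A_def B_def by auto
  qed
qed

lemma y_core:
  fixes b b1 b2 c c1 c2 f U0 U1 U2 U3 U4 :: "real \<Rightarrow> real"
  assumes beta: "beta > 0" "beta1 > beta"
    and bge: "\<forall>x\<in>{0..1}. b x \<ge> beta1" and cge: "\<forall>x\<in>{0..1}. c x \<ge> 0"
    and db: "d01 b b1" "d01 b1 b2" and dc: "d01 c c1" "d01 c1 c2" and cf: "continuous_on {0..1} f"
    and bb: "\<forall>x\<in>{0..1}. \<bar>b x\<bar> \<le> Bm \<and> \<bar>b1 x\<bar> \<le> Bm \<and> \<bar>b2 x\<bar> \<le> Bm"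
    and cb: "\<forall>x\<in>{0..1}. \<bar>c x\<bar> \<le> Cm \<and> \<bar>c1 x\<bar> \<le> Cm \<and> \<bar>c2 x\<bar> \<le> Cm"
    and fb: "\<forall>x\<in>{0..1}. \<bar>f x\<bar> \<le> Fm"
    and dU: "d01 U0 U1" "d01 U1 U2" "d01 U2 U3" "d01 U3 U4"
    and Ub: "\<forall>x\<in>{0..1}. \<bar>U0 x\<bar> \<le> Um \<and> \<bar>U1 x\<bar> \<le> Um \<and> \<bar>U2 x\<bar> \<le> Um \<and> \<bar>U3 x\<bar> \<le> Um \<and> \<bar>U4 x\<bar> \<le> Um"
    and U0ode: "\<forall>x\<in>{0..1}. - b x * U1 x + c x * U0 x = f x" and U01: "U0 1 = 0"
  shows "\<exists>Y>0. \<forall>eps u du ddu K y y1 y2. 0 < eps \<and> eps < 1 \<and> d01 u du \<and> d01 du ddu \<and>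
     continuous_on {0..1} ddu \<and> (\<forall>x\<in>{0<..<1}. - eps * ddu x - b x * du x + c x * u x = f x) \<and>
     u 0 = 0 \<and> u 1 = 0 \<and> K = - eps * du 0 / b 0 \<and>
     y = (\<lambda>x. u x - U0 x - K * exp (- b 0 * x / eps)) \<and>
     y1 = (\<lambda>x. du x - U1 x + K * (b 0 / eps) * exp (- b 0 * x / eps)) \<and>
     y2 = (\<lambda>x. ddu x - U2 x - K * (b 0 / eps)\<^sup>2 * exp (- b 0 * x / eps))
     \<longrightarrow> (\<exists>y3 y4. d01 y y1 \<and> d01 y1 y2 \<and> d01 y2 y3 \<and> d01 y3 y4 \<and>
          (\<forall>x\<in>{0..1}. \<bar>y1 x\<bar> \<le> Y \<and> \<bar>y2 x\<bar> \<le> Y * (eps + exp (- beta * x / eps) / eps) \<and>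
             \<bar>y3 x\<bar> \<le> Y * (eps + exp (- beta * x / eps) / eps\<^sup>2) \<and>
             \<bar>y4 x\<bar> \<le> Y * (1 + exp (- beta * x / eps) / eps ^ 3)))"
proof -
  have Bm: "Bm \<ge> 0" using bb by force
  have Cm: "Cm \<ge> 0" using cb by force
  have Fm: "Fm \<ge> 0" using fb by force
  have Um: "Um \<ge> 0" using Ub by force
  have dl: "beta1 - beta > 0" using beta by simp
  define Ubd where "Ubd = 2 * ((Fm + 1) / beta)"
  define M2 where "M2 = Bm * Ubd + Cm * Ubd + Fm + Bm * Ubd"
  define Kmax where "Kmax = M2 / beta1"
  define Q0 where "Q0 = Bm * Bm / (beta1 - beta) + Cm"
  define Q1 where "Q1 = Bm * Bm + Cm + Bm * Q0"
  define Q2 where "Q2 = (Bm * Bm + Cm) + 2 * Bm * (Bm * Bm + Cm) + Bm * Bm * Q0"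
  define G1 where "G1 = Um"
  define G2 where "G2 = Kmax * Q0"
  define G3 where "G3 = Kmax / beta"
  define Y0 where "Y0 = 2 * ((G1 + 1) / beta + G3) + (G2 / (beta * (beta1 - beta)) + (Um + 1) / beta)"
  define P1 where "P1 = Cm * Y0 + Um"
  define R1 where "R1 = Kmax * Q0"
  define Y1 where "Y1 = P1 / beta + (Um + R1 / (beta1 - beta))"
  define P2 where "P2 = Cm * Y0 + Cm * Y1 + Um + Bm * Y1"
  define R2 where "R2 = Cm * Y1 + Kmax * Q1 + Bm * Y1"
  define S2 where "S2 = P1 + R1 + Bm * Um"
  define Y2 where "Y2 = P2 / beta + (S2 + R2 / (beta1 - beta))"
  define P3 where "P3 = Cm * Y0 + 2 * Cm * Y1 + Cm * Y2 + Um + Bm * Y1 + 2 * Bm * Y2"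
  define R3 where "R3 = 2 * Cm * Y1 + Cm * Y2 + Kmax * Q2 + Bm * Y1 + 2 * Bm * Y2"
  define S3 where "S3 = P2 + R2 + Bm * S2"
  define Y3 where "Y3 = P3 / beta + (S3 + R3 / (beta1 - beta))"
  define Y4 where "Y4 = P3 + Bm * Y3 + R3 + Bm * Y3"
  define Y where "Y = 2 * Y1 + Y2 + Y3 + Y4 + 1"
  have Ubd: "Ubd \<ge> 0" using Fm beta by (simp add: Ubd_def)
  have Kmax: "Kmax \<ge> 0" using Bm Cm Fm Ubd beta by (simp add: Kmax_def M2_def)
  have Q0: "Q0 \<ge> 0" using Bm Cm dl by (simp add: Q0_def)
  have Q1: "Q1 \<ge> 0" using Bm Cm Q0 by (simp add: Q1_def)
  have Q2: "Q2 \<ge> 0" using Bm Cm Q0 by (simp add: Q2_def)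
  have Y0: "Y0 \<ge> 0" using Um Kmax Q0 beta dl by (simp add: Y0_def G1_def G2_def G3_def)
  have P1: "P1 \<ge> 0" "R1 \<ge> 0" using Cm Y0 Um Kmax Q0 by (simp_all add: P1_def R1_def)
  have Y1: "Y1 \<ge> 0" using P1 Um beta dl by (simp add: Y1_def)
  have P2: "P2 \<ge> 0" "R2 \<ge> 0" "S2 \<ge> 0" using Cm Y0 Y1 Um Bm Kmax Q1 P1
    by (simp_all add: P2_def R2_def S2_def)
  have Y2: "Y2 \<ge> 0" using P2 beta dl by (simp add: Y2_def)
  have P3: "P3 \<ge> 0" "R3 \<ge> 0" "S3 \<ge> 0" using Cm Y0 Y1 Y2 Um Bm Kmax Q2 P2
    by (simp_all add: P3_def R3_def S3_def)
  have Y3: "Y3 \<ge> 0" using P3 beta dl by (simp add: Y3_def)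
  have Y4: "Y4 \<ge> 0" using P3 Bm Y3 by (simp add: Y4_def)
  have Ypos: "Y > 0" using Y1 Y2 Y3 Y4 by (simp add: Y_def)
  show ?thesis
  proof (intro exI[of _ Y] conjI allI impI Ypos)
    fix eps u du ddu K y y1 y2
    assume H: "0 < eps \<and> eps < 1 \<and> d01 u du \<and> d01 du ddu \<and>
     continuous_on {0..1} ddu \<and> (\<forall>x\<in>{0<..<1}. - eps * ddu x - b x * du x + c x * u x = f x) \<and>
     u 0 = 0 \<and> u 1 = 0 \<and> K = - eps * du 0 / b 0 \<and>
     y = (\<lambda>x. u x - U0 x - K * exp (- b 0 * x / eps)) \<and>
     y1 = (\<lambda>x. du x - U1 x + K * (b 0 / eps) * exp (- b 0 * x / eps)) \<and>
     y2 = (\<lambda>x. ddu x - U2 x - K * (b 0 / eps)\<^sup>2 * exp (- b 0 * x / eps))"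
    hence eps: "0 < eps" "eps < 1" and du: "d01 u du" "d01 du ddu" and cddu: "continuous_on {0..1} ddu"
      and ode0: "\<forall>x\<in>{0<..<1}. - eps * ddu x - b x * du x + c x * u x = f x"
      and bc: "u 0 = 0" "u 1 = 0" and K: "K = - eps * du 0 / b 0"
      and y_def: "y = (\<lambda>x. u x - U0 x - K * exp (- b 0 * x / eps))"
      and y1_def: "y1 = (\<lambda>x. du x - U1 x + K * (b 0 / eps) * exp (- b 0 * x / eps))"
      and y2_def: "y2 = (\<lambda>x. ddu x - U2 x - K * (b 0 / eps)\<^sup>2 * exp (- b 0 * x / eps))"
      by auto
    define E where "E = (\<lambda>x. exp (- beta * x / eps))"
    have E: "E x > 0" "E x \<le> 1" "E x \<le> E x / eps" "E x / eps \<le> E x / eps\<^sup>2" "E x / eps\<^sup>2 \<le> E x / eps ^ 3"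
      if "x \<in> {0..1}" for x
    proof -
      show "E x > 0" unfolding E_def by simp
      show "E x \<le> 1" unfolding E_def using that beta eps by simp
      show "E x \<le> E x / eps" using eps \<open>E x > 0\<close> by (simp add: le_divide_eq)
      show "E x / eps \<le> E x / eps\<^sup>2" using eps \<open>E x > 0\<close> by (simp add: divide_simps power2_eq_square)
      show "E x / eps\<^sup>2 \<le> E x / eps ^ 3" using eps \<open>E x > 0\<close> by (simp add: divide_simps power2_eq_square power3_eq_cube)
    qed
    have E0: "E 0 = 1" unfolding E_def by simp
    have b0: "b 0 \<ge> beta1" "\<bar>b 0\<bar> \<le> Bm" using bge bb by auto
    hence b0: "b 0 \<ge> beta1" "b 0 > 0" "\<bar>b 0\<bar> \<le> Bm" using beta by auto
    have ode: "\<forall>x\<in>{0..1}. - eps * ddu x - b x * du x + c x * u x = f x"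
      by (rule ode_closed[OF d01_cont[OF db(1)] d01_cont[OF dc(1)] cf du cddu ode0])
    have bge': "\<forall>x\<in>{0..1}. b x \<ge> beta" using bge beta by force
    have ub: "\<forall>x\<in>{0..1}. \<bar>u x\<bar> \<le> Ubd"
      unfolding Ubd_def by (rule u_bound[OF eps(1) beta(1) bge' cge fb du ode0 bc])
    have bb1: "\<forall>x\<in>{0..1}. \<bar>b x\<bar> \<le> Bm \<and> \<bar>b1 x\<bar> \<le> Bm" using bb by auto
    have cb0: "\<forall>x\<in>{0..1}. \<bar>c x\<bar> \<le> Cm" using cb by auto
    have bat0: "\<bar>b 0\<bar> \<le> Bm" using bb by auto
    have "\<bar>eps * du 0\<bar> \<le> M2"
      unfolding M2_def by (rule du0_bound[OF eps(1) bb1 db(1) cb0 fb ub du ode bc])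
    hence Kb: "\<bar>K\<bar> \<le> Kmax"
    proof -
      assume a: "\<bar>eps * du 0\<bar> \<le> M2"
      have "\<bar>K\<bar> = \<bar>eps * du 0\<bar> / b 0" unfolding K using b0 by (simp add: abs_divide)
      also have "\<dots> \<le> M2 / b 0" using a b0 by (intro divide_right_mono) auto
      also have "\<dots> \<le> M2 / beta1" using b0 beta a by (intro divide_left_mono) auto
      finally show ?thesis unfolding Kmax_def .
    qed
    have dy: "d01 y y1" unfolding d01_def
    proof
      fix x :: real assume x: "x \<in> {0..1}"
      have a: "(u has_real_derivative du x) (at x within {0..1})" "(U0 has_real_derivative U1 x) (at x within {0..1})"
        using du dU x unfolding d01_def by auto
      show "(y has_real_derivative y1 x) (at x within {0..1})" unfolding y_def y1_def
        using a eps by (auto intro!: derivative_eq_intros simp: field_simps)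
    qed
    have dy1: "d01 y1 y2" unfolding d01_def
    proof
      fix x :: real assume x: "x \<in> {0..1}"
      have a: "(du has_real_derivative ddu x) (at x within {0..1})" "(U1 has_real_derivative U2 x) (at x within {0..1})"
        using du dU x unfolding d01_def by auto
      show "(y1 has_real_derivative y2 x) (at x within {0..1})" unfolding y1_def y2_def
        using a eps by (auto intro!: derivative_eq_intros simp: field_simps power2_eq_square)
    qed
    define m where "m = (\<lambda>x. (b x - (b 0)) * (b 0) / eps + c x)"
    define m1 where "m1 = (\<lambda>x. b1 x * (b 0) / eps + c1 x)"
    define m2 where "m2 = (\<lambda>x. b2 x * (b 0) / eps + c2 x)"
    define q where "q = (\<lambda>x. exp (- (b 0) * x / eps) * m x)"
    define q1 where "q1 = (\<lambda>x. exp (- (b 0) * x / eps) * (m1 x - ((b 0) / eps) * m x))"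
    define q2 where "q2 = (\<lambda>x. exp (- (b 0) * x / eps) * (m2 x - 2 * ((b 0) / eps) * m1 x + ((b 0) / eps)\<^sup>2 * m x))"
    note qb = q_bounds[OF eps beta bge db dc bb cb m_def m1_def m2_def q_def q1_def q2_def Q0_def]
    have qb0: "\<forall>x\<in>{0..1}. \<bar>q x\<bar> \<le> Q0 * E x" using qb(3) unfolding E_def .
    have qb1: "\<forall>x\<in>{0..1}. \<bar>q1 x\<bar> \<le> Q1 * E x / eps" using qb(4) unfolding E_def Q1_def .
    have qb2: "\<forall>x\<in>{0..1}. \<bar>q2 x\<bar> \<le> Q2 * E x / eps\<^sup>2" using qb(5) unfolding E_def Q2_def .
    define g where "g = (\<lambda>x. eps * U2 x - K * q x)"
    have yode: "\<forall>x\<in>{0..1}. - eps * y2 x - b x * y1 x + c x * y x = g x"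
    proof
      fix x :: real assume x: "x \<in> {0..1}"
      have "- eps * y2 x - b x * y1 x + c x * y x
          = (- eps * ddu x - b x * du x + c x * u x) + eps * U2 x - (- b x * U1 x + c x * U0 x) - K * q x"
        unfolding y_def y1_def y2_def q_def m_def using eps by (simp add: field_simps power2_eq_square)
      thus "- eps * y2 x - b x * y1 x + c x * y x = g x" using ode U0ode x unfolding g_def by simp
    qed
    have gb: "\<forall>x\<in>{0..1}. \<bar>g x\<bar> \<le> G1 * eps + G2 * E x"
    proof
      fix x :: real assume x: "x \<in> {0..1}"
      have "\<bar>eps * U2 x\<bar> \<le> eps * Um" using Ub x eps by (simp add: abs_mult mult_left_mono)
      moreover have "\<bar>K * q x\<bar> \<le> Kmax * (Q0 * E x)" using prod_bd[OF Kb] qb0 x by auto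
      moreover have "\<bar>g x\<bar> \<le> \<bar>eps * U2 x\<bar> + \<bar>K * q x\<bar>" unfolding g_def by (rule abs_triangle_ineq4)
      ultimately show "\<bar>g x\<bar> \<le> G1 * eps + G2 * E x" unfolding G1_def G2_def
        by (simp add: algebra_simps)
    qed
    have y1b: "\<bar>y 1\<bar> \<le> G3 * eps"
    proof -
      have ex: "exp (- b 0 / eps) \<le> eps / beta"
      proof -
        have "exp (b 0 / eps) \<ge> 1 + b 0 / eps" using exp_ge_add_one_self by simp
        hence "exp (b 0 / eps) \<ge> beta / eps" using b0 beta eps by (smt (verit) divide_right_mono)
        hence "1 / exp (b 0 / eps) \<le> 1 / (beta / eps)" using beta eps by (intro divide_left_mono) auto
        thus ?thesis by (simp add: exp_minus inverse_eq_divide)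
      qed
      have "y 1 = - K * exp (- b 0 / eps)" unfolding y_def using bc U01 by simp
      hence "\<bar>y 1\<bar> = \<bar>K\<bar> * exp (- b 0 / eps)" by (simp add: abs_mult)
      also have "\<dots> \<le> Kmax * (eps / beta)" using Kb ex Kmax by (intro mult_mono) auto
      finally show ?thesis unfolding G3_def by simp
    qed
    have y10: "\<bar>y1 0\<bar> \<le> Um"
    proof -
      have "y1 0 = - U1 0" unfolding y1_def K using eps b0 by (simp add: field_simps)
      thus ?thesis using Ub by auto
    qed
    have G: "G1 \<ge> 0" "G2 \<ge> 0" "G3 \<ge> 0" using Um Kmax Q0 beta by (auto simp: G1_def G2_def G3_def)
    have yb: "\<forall>x\<in>{0..1}. \<bar>y x\<bar> \<le> Y0 * eps"
      using y0_bound[OF eps beta bge cge dy dy1 yode _ y1b y10 G] gb unfolding Y0_def E_def by blast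
    have Uat: "\<bar>U0 x\<bar> \<le> Um" "\<bar>U1 x\<bar> \<le> Um" "\<bar>U2 x\<bar> \<le> Um" "\<bar>U3 x\<bar> \<le> Um" "\<bar>U4 x\<bar> \<le> Um"
      if "x \<in> {0..1}" for x using Ub that by auto
    have bat: "\<bar>b x\<bar> \<le> Bm" "\<bar>b1 x\<bar> \<le> Bm" "\<bar>b2 x\<bar> \<le> Bm" "b x \<ge> beta1"
      if "x \<in> {0..1}" for x using bb bge that by auto
    have cat: "\<bar>c x\<bar> \<le> Cm" "\<bar>c1 x\<bar> \<le> Cm" "\<bar>c2 x\<bar> \<le> Cm"
      if "x \<in> {0..1}" for x using cb that by auto
    define r where "r = (\<lambda>x. c x * y x - g x)"
    have req: "\<forall>x\<in>{0..1}. eps * y2 x + b x * y1 x = r x"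
      using yode unfolding r_def by (auto simp: algebra_simps)
    have rb: "\<forall>x\<in>{0..1}. \<bar>r x\<bar> \<le> P1 * eps + R1 * exp (- beta * x / eps)"
    proof
      fix x :: real assume x: "x \<in> {0..1}"
      have "\<bar>c x * y x\<bar> \<le> Cm * (Y0 * eps)" using prod_bd[OF cat(1)[OF x]] yb x by auto
      moreover have "\<bar>r x\<bar> \<le> \<bar>c x * y x\<bar> + \<bar>g x\<bar>" unfolding r_def by (rule abs_triangle_ineq4)
      moreover have "\<bar>g x\<bar> \<le> G1 * eps + G2 * E x" using gb x by auto
      ultimately show "\<bar>r x\<bar> \<le> P1 * eps + R1 * exp (- beta * x / eps)"
        unfolding P1_def R1_def G1_def G2_def E_def by (simp add: algebra_simps)
    qed
    have y1bd0: "\<forall>x\<in>{0..1}. \<bar>y1 x\<bar> \<le> P1 * eps / beta + (Um + R1 / (beta1 - beta)) * exp (- beta * x / eps)"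
      by (rule first_order_comp[OF eps(1) beta bge dy1 req rb y10]) (use P1 eps in auto)
    have y1bd: "\<bar>y1 x\<bar> \<le> Y1 * (eps + E x)" if x: "x \<in> {0..1}" for x
    proof -
      have "P1 * eps / beta \<le> (P1 / beta) * eps" by simp
      moreover have "P1 / beta \<le> Y1" using P1 Um beta dl by (simp add: Y1_def)
      hence "(P1 / beta) * eps \<le> Y1 * eps" using eps by (intro mult_right_mono) auto
      moreover have "(Um + R1 / (beta1 - beta)) * E x \<le> Y1 * E x"
        using E[OF x] P1 beta by (intro mult_right_mono) (auto simp: Y1_def)
      moreover have "\<bar>y1 x\<bar> \<le> P1 * eps / beta + (Um + R1 / (beta1 - beta)) * E x"
        using y1bd0 x unfolding E_def by blast
      ultimately show ?thesis by (simp add: algebra_simps)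
    qed
    define r1 where "r1 = (\<lambda>x. c1 x * y x + c x * y1 x - (eps * U3 x - K * q1 x))"
    define rho1 where "rho1 = (\<lambda>x. r1 x - b1 x * y1 x)"
    define y3 where "y3 = (\<lambda>x. (rho1 x - b x * y2 x) / eps)"
    have dr: "d01 r r1" unfolding d01_def
    proof
      fix x :: real assume x: "x \<in> {0..1}"
      have a: "(c has_real_derivative c1 x) (at x within {0..1})" "(y has_real_derivative y1 x) (at x within {0..1})"
        "(U2 has_real_derivative U3 x) (at x within {0..1})" "(q has_real_derivative q1 x) (at x within {0..1})"
        using dc dy dU qb(1) x unfolding d01_def by auto
      show "(r has_real_derivative r1 x) (at x within {0..1})" unfolding r_def r1_def g_def
        using a by (auto intro!: derivative_eq_intros simp: algebra_simps)
    qed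
    have dy2: "d01 y2 y3"
    proof (rule d01_cong)
      show "d01 (\<lambda>x. (r x - b x * y1 x) / eps) y3" unfolding d01_def
      proof
        fix x :: real assume x: "x \<in> {0..1}"
        have a: "(r has_real_derivative r1 x) (at x within {0..1})" "(b has_real_derivative b1 x) (at x within {0..1})"
          "(y1 has_real_derivative y2 x) (at x within {0..1})"
          using dr db dy1 x unfolding d01_def by auto
        show "((\<lambda>x. (r x - b x * y1 x) / eps) has_real_derivative y3 x) (at x within {0..1})"
          unfolding y3_def rho1_def using a eps by (auto intro!: derivative_eq_intros simp: field_simps)
      qed
      show "\<forall>x\<in>{0..1}. (r x - b x * y1 x) / eps = y2 x" using req eps by (auto simp: field_simps)
    qed auto
    have rho1b: "\<forall>x\<in>{0..1}. \<bar>rho1 x\<bar> \<le> P2 * eps + (R2 / eps) * exp (- beta * x / eps)"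
    proof
      fix x :: real assume x: "x \<in> {0..1}"
      have t1: "\<bar>c1 x * y x\<bar> \<le> Cm * (Y0 * eps)" using prod_bd[OF cat(2)[OF x]] yb x by auto
      have t2: "\<bar>c x * y1 x\<bar> \<le> Cm * (Y1 * (eps + E x))" using prod_bd[OF cat(1)[OF x] y1bd[OF x]] .
      have t3: "\<bar>eps * U3 x\<bar> \<le> eps * Um" using Uat[OF x] eps by (simp add: abs_mult mult_left_mono)
      have t4: "\<bar>K * q1 x\<bar> \<le> Kmax * (Q1 * E x / eps)" using prod_bd[OF Kb, of "q1 x" "Q1 * E x / eps"] qb1 x by auto
      have t5: "\<bar>b1 x * y1 x\<bar> \<le> Bm * (Y1 * (eps + E x))" using prod_bd[OF bat(2)[OF x] y1bd[OF x]] .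
      have "\<bar>rho1 x\<bar> \<le> \<bar>c1 x * y x\<bar> + \<bar>c x * y1 x\<bar> + \<bar>eps * U3 x\<bar> + \<bar>K * q1 x\<bar> + \<bar>b1 x * y1 x\<bar>"
        unfolding rho1_def r1_def by linarith
      also have "\<dots> \<le> Cm * (Y0 * eps) + Cm * (Y1 * (eps + E x)) + eps * Um + Kmax * (Q1 * E x / eps) + Bm * (Y1 * (eps + E x))"
        using t1 t2 t3 t4 t5 by linarith
      also have "\<dots> = P2 * eps + (Cm * Y1 + Bm * Y1) * E x + Kmax * Q1 * (E x / eps)"
        unfolding P2_def by (simp add: algebra_simps)
      also have "\<dots> \<le> P2 * eps + (Cm * Y1 + Bm * Y1) * (E x / eps) + Kmax * Q1 * (E x / eps)"
      proof -
        have "(Cm * Y1 + Bm * Y1) * E x \<le> (Cm * Y1 + Bm * Y1) * (E x / eps)"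
          using E[OF x] Cm Bm Y1 by (intro mult_left_mono) auto
        thus ?thesis by linarith
      qed
      also have "\<dots> = P2 * eps + (R2 / eps) * E x" unfolding R2_def using eps by (simp add: field_simps)
      finally show "\<bar>rho1 x\<bar> \<le> P2 * eps + (R2 / eps) * exp (- beta * x / eps)" unfolding E_def .
    qed
    have r0: "\<bar>r 0\<bar> \<le> P1 + R1"
    proof -
      have "\<bar>r 0\<bar> \<le> P1 * eps + R1" using rb[rule_format, of 0] by simp
      moreover have "P1 * eps \<le> P1" using mult_left_mono[of eps 1 P1] P1 eps by simp
      ultimately show ?thesis by linarith
    qed
    have y20: "\<bar>y2 0\<bar> \<le> S2 / eps"
    proof -
      have "y2 0 = (r 0 - b 0 * y1 0) / eps" using req eps by (auto simp: field_simps)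
      moreover have "\<bar>b 0 * y1 0\<bar> \<le> Bm * Um" using prod_bd[OF bat0 y10] by auto
      ultimately show ?thesis using r0 eps unfolding S2_def by (simp add: abs_divide divide_right_mono abs_triangle_ineq4
            order_trans[OF abs_triangle_ineq4])
    qed
    have y3eq: "\<forall>x\<in>{0..1}. eps * y3 x + b x * y2 x = rho1 x" using eps by (auto simp: y3_def field_simps)
    have y2bd0: "\<forall>x\<in>{0..1}. \<bar>y2 x\<bar> \<le> P2 * eps / beta + (S2 / eps + (R2 / eps) / (beta1 - beta)) * exp (- beta * x / eps)"
      by (rule first_order_comp[OF eps(1) beta bge dy2 y3eq rho1b y20]) (use P2 eps in auto)
    have y2bd: "\<bar>y2 x\<bar> \<le> Y2 * (eps + E x / eps)" if x: "x \<in> {0..1}" for x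
    proof -
      have "P2 / beta \<le> Y2" using P2 beta dl by (simp add: Y2_def)
      hence "(P2 / beta) * eps \<le> Y2 * eps" using eps by (intro mult_right_mono) auto
      hence "P2 * eps / beta \<le> Y2 * eps" by simp
      moreover have "(S2 / eps + (R2 / eps) / (beta1 - beta)) * E x = (S2 + R2 / (beta1 - beta)) * (E x / eps)"
        using eps dl by (simp add: field_simps)
      moreover have "(S2 + R2 / (beta1 - beta)) * (E x / eps) \<le> Y2 * (E x / eps)"
        using E[OF x] P2 beta eps by (intro mult_right_mono) (auto simp: Y2_def)
      moreover have "\<bar>y2 x\<bar> \<le> P2 * eps / beta + (S2 / eps + (R2 / eps) / (beta1 - beta)) * E x"
        using y2bd0 x unfolding E_def by blast
      ultimately show ?thesis by (simp add: algebra_simps)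
    qed
    show "\<exists>y3 y4. d01 y y1 \<and> d01 y1 y2 \<and> d01 y2 y3 \<and> d01 y3 y4 \<and>
          (\<forall>x\<in>{0..1}. \<bar>y1 x\<bar> \<le> Y \<and> \<bar>y2 x\<bar> \<le> Y * (eps + exp (- beta * x / eps) / eps) \<and>
             \<bar>y3 x\<bar> \<le> Y * (eps + exp (- beta * x / eps) / eps\<^sup>2) \<and>
             \<bar>y4 x\<bar> \<le> Y * (1 + exp (- beta * x / eps) / eps ^ 3))"
    proof (intro exI conjI)
    define r2 where "r2 = (\<lambda>x. c2 x * y x + 2 * (c1 x * y1 x) + c x * y2 x - (eps * U4 x - K * q2 x))"
    define rho2 where "rho2 = (\<lambda>x. r2 x - b2 x * y1 x - 2 * (b1 x * y2 x))"
    define y4 where "y4 = (\<lambda>x. (rho2 x - b x * y3 x) / eps)"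
    have dr1: "d01 r1 r2" unfolding d01_def
    proof
      fix x :: real assume x: "x \<in> {0..1}"
      have a: "(c has_real_derivative c1 x) (at x within {0..1})" "(y has_real_derivative y1 x) (at x within {0..1})"
        "(c1 has_real_derivative c2 x) (at x within {0..1})" "(y1 has_real_derivative y2 x) (at x within {0..1})"
        "(U3 has_real_derivative U4 x) (at x within {0..1})" "(q1 has_real_derivative q2 x) (at x within {0..1})"
        using dc dy dy1 dU qb(2) x unfolding d01_def by auto
      show "(r1 has_real_derivative r2 x) (at x within {0..1})" unfolding r1_def r2_def
        using a by (auto intro!: derivative_eq_intros simp: algebra_simps)
    qed
    show dy3: "d01 y3 y4" unfolding d01_def
    proof
      fix x :: real assume x: "x \<in> {0..1}"
      have a: "(r1 has_real_derivative r2 x) (at x within {0..1})" "(b has_real_derivative b1 x) (at x within {0..1})"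
        "(b1 has_real_derivative b2 x) (at x within {0..1})"
        "(y1 has_real_derivative y2 x) (at x within {0..1})" "(y2 has_real_derivative y3 x) (at x within {0..1})"
        using dr1 db dy1 dy2 x unfolding d01_def by auto
      have y3f: "y3 = (\<lambda>x. (r1 x - b1 x * y1 x - b x * y2 x) / eps)"
        by (simp add: y3_def rho1_def fun_eq_iff)
      have "((\<lambda>x. (r1 x - b1 x * y1 x - b x * y2 x) / eps) has_real_derivative
          (r2 x - (b2 x * y1 x + b1 x * y2 x) - (b1 x * y2 x + b x * y3 x)) / eps) (at x within {0..1})"
        using a eps by (auto intro!: derivative_eq_intros)
      moreover have "(r2 x - (b2 x * y1 x + b1 x * y2 x) - (b1 x * y2 x + b x * y3 x)) / eps = y4 x"
        unfolding y4_def rho2_def by (simp add: algebra_simps)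
      ultimately show "(y3 has_real_derivative y4 x) (at x within {0..1})" unfolding y3f by simp
    qed
    have rho2b: "\<forall>x\<in>{0..1}. \<bar>rho2 x\<bar> \<le> P3 * eps + (R3 / eps\<^sup>2) * exp (- beta * x / eps)"
    proof
      fix x :: real assume x: "x \<in> {0..1}"
      have t1: "\<bar>c2 x * y x\<bar> \<le> Cm * (Y0 * eps)" using prod_bd[OF cat(3)[OF x]] yb x by auto
      have t2: "\<bar>c1 x * y1 x\<bar> \<le> Cm * (Y1 * (eps + E x))" using prod_bd[OF cat(2)[OF x] y1bd[OF x]] .
      have t3: "\<bar>c x * y2 x\<bar> \<le> Cm * (Y2 * (eps + E x / eps))" using prod_bd[OF cat(1)[OF x] y2bd[OF x]] .
      have t4: "\<bar>eps * U4 x\<bar> \<le> eps * Um" using Uat[OF x] eps by (simp add: abs_mult mult_left_mono)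
      have t5: "\<bar>K * q2 x\<bar> \<le> Kmax * (Q2 * E x / eps\<^sup>2)" using prod_bd[OF Kb, of "q2 x" "Q2 * E x / eps\<^sup>2"] qb2 x by auto
      have t6: "\<bar>b2 x * y1 x\<bar> \<le> Bm * (Y1 * (eps + E x))" using prod_bd[OF bat(3)[OF x] y1bd[OF x]] .
      have t7: "\<bar>b1 x * y2 x\<bar> \<le> Bm * (Y2 * (eps + E x / eps))" using prod_bd[OF bat(2)[OF x] y2bd[OF x]] .
      have "\<bar>rho2 x\<bar> \<le> \<bar>c2 x * y x\<bar> + 2 * \<bar>c1 x * y1 x\<bar> + \<bar>c x * y2 x\<bar> + \<bar>eps * U4 x\<bar> + \<bar>K * q2 x\<bar>
          + \<bar>b2 x * y1 x\<bar> + 2 * \<bar>b1 x * y2 x\<bar>"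
        unfolding rho2_def r2_def by linarith
      also have "\<dots> \<le> Cm * (Y0 * eps) + 2 * (Cm * (Y1 * (eps + E x))) + Cm * (Y2 * (eps + E x / eps)) + eps * Um
          + Kmax * (Q2 * E x / eps\<^sup>2) + Bm * (Y1 * (eps + E x)) + 2 * (Bm * (Y2 * (eps + E x / eps)))"
        using t1 t2 t3 t4 t5 t6 t7 by linarith
      also have "\<dots> = P3 * eps + (2 * Cm * Y1 + Bm * Y1) * E x + (Cm * Y2 + 2 * Bm * Y2) * (E x / eps)
          + Kmax * Q2 * (E x / eps\<^sup>2)"
        unfolding P3_def by (simp add: algebra_simps)
      also have "\<dots> \<le> P3 * eps + (2 * Cm * Y1 + Bm * Y1) * (E x / eps\<^sup>2) + (Cm * Y2 + 2 * Bm * Y2) * (E x / eps\<^sup>2)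
          + Kmax * Q2 * (E x / eps\<^sup>2)"
      proof -
        have "E x \<le> E x / eps\<^sup>2" using E[OF x] by linarith
        hence "(2 * Cm * Y1 + Bm * Y1) * E x \<le> (2 * Cm * Y1 + Bm * Y1) * (E x / eps\<^sup>2)"
          using Cm Bm Y1 by (intro mult_left_mono) auto
        moreover have "(Cm * Y2 + 2 * Bm * Y2) * (E x / eps) \<le> (Cm * Y2 + 2 * Bm * Y2) * (E x / eps\<^sup>2)"
          using E[OF x] Cm Bm Y2 by (intro mult_left_mono) auto
        ultimately show ?thesis by linarith
      qed
      also have "\<dots> = P3 * eps + (R3 / eps\<^sup>2) * E x" unfolding R3_def using eps by (simp add: field_simps)
      finally show "\<bar>rho2 x\<bar> \<le> P3 * eps + (R3 / eps\<^sup>2) * exp (- beta * x / eps)" unfolding E_def .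
    qed
    have y30: "\<bar>y3 0\<bar> \<le> S3 / eps\<^sup>2"
    proof -
      have "\<bar>rho1 0\<bar> \<le> P2 * eps + R2 / eps" using rho1b[rule_format, of 0] by simp
      moreover have "P2 * eps \<le> P2 / eps"
      proof -
        have pe: "P2 * eps \<le> P2" using mult_left_mono[of eps 1 P2] P2 eps by simp
        also have "P2 \<le> P2 / eps" using pe eps by (simp add: le_divide_eq)
        finally show ?thesis .
      qed
      moreover have "\<bar>b 0 * y2 0\<bar> \<le> Bm * (S2 / eps)" using prod_bd[OF bat0 y20] .
      moreover have "\<bar>rho1 0 - b 0 * y2 0\<bar> \<le> \<bar>rho1 0\<bar> + \<bar>b 0 * y2 0\<bar>" by (rule abs_triangle_ineq4)
      moreover have "P2 / eps + R2 / eps + Bm * (S2 / eps) = S3 / eps" by (simp add: S3_def add_divide_distrib)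
      ultimately have "\<bar>rho1 0 - b 0 * y2 0\<bar> \<le> S3 / eps" by linarith
      hence "\<bar>rho1 0 - b 0 * y2 0\<bar> / eps \<le> S3 / eps / eps" using eps by (intro divide_right_mono) auto
      thus ?thesis unfolding y3_def using eps by (simp add: abs_divide power2_eq_square)
    qed
    have y4eq: "\<forall>x\<in>{0..1}. eps * y4 x + b x * y3 x = rho2 x" using eps by (auto simp: y4_def field_simps)
    have y3bd0: "\<forall>x\<in>{0..1}. \<bar>y3 x\<bar> \<le> P3 * eps / beta + (S3 / eps\<^sup>2 + (R3 / eps\<^sup>2) / (beta1 - beta)) * exp (- beta * x / eps)"
      by (rule first_order_comp[OF eps(1) beta bge dy3 y4eq rho2b y30]) (use P3 eps in auto)
    have y3bd: "\<bar>y3 x\<bar> \<le> Y3 * (eps + E x / eps\<^sup>2)" if x: "x \<in> {0..1}" for x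
    proof -
      have "P3 / beta \<le> Y3" using P3 beta dl by (simp add: Y3_def)
      hence "(P3 / beta) * eps \<le> Y3 * eps" using eps by (intro mult_right_mono) auto
      hence "P3 * eps / beta \<le> Y3 * eps" by simp
      moreover have "(S3 / eps\<^sup>2 + (R3 / eps\<^sup>2) / (beta1 - beta)) * E x = (S3 + R3 / (beta1 - beta)) * (E x / eps\<^sup>2)"
        using eps dl by (simp add: field_simps)
      moreover have "(S3 + R3 / (beta1 - beta)) * (E x / eps\<^sup>2) \<le> Y3 * (E x / eps\<^sup>2)"
        using E[OF x] P3 beta eps by (intro mult_right_mono) (auto simp: Y3_def)
      moreover have "\<bar>y3 x\<bar> \<le> P3 * eps / beta + (S3 / eps\<^sup>2 + (R3 / eps\<^sup>2) / (beta1 - beta)) * E x"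
        using y3bd0 x unfolding E_def by blast
      ultimately show ?thesis by (simp add: algebra_simps)
    qed
    have y4bd: "\<bar>y4 x\<bar> \<le> Y4 * (1 + E x / eps ^ 3)" if x: "x \<in> {0..1}" for x
    proof -
      have a: "\<bar>rho2 x\<bar> \<le> P3 * eps + (R3 / eps\<^sup>2) * E x" using rho2b x unfolding E_def by blast
      have bb3: "\<bar>b x * y3 x\<bar> \<le> Bm * (Y3 * (eps + E x / eps\<^sup>2))" using prod_bd[OF bat(1)[OF x] y3bd[OF x]] .
      have "\<bar>rho2 x - b x * y3 x\<bar> \<le> P3 * eps + (R3 / eps\<^sup>2) * E x + Bm * (Y3 * (eps + E x / eps\<^sup>2))"
        using a bb3 abs_triangle_ineq4[of "rho2 x" "b x * y3 x"] by linarith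
      hence "\<bar>rho2 x - b x * y3 x\<bar> / eps \<le> (P3 * eps + (R3 / eps\<^sup>2) * E x + Bm * (Y3 * (eps + E x / eps\<^sup>2))) / eps"
        using eps by (intro divide_right_mono) auto
      also have "\<dots> = (P3 + Bm * Y3) + (R3 + Bm * Y3) * (E x / eps ^ 3)"
        using eps by (simp add: field_simps power2_eq_square power3_eq_cube)
      also have "\<dots> \<le> Y4 + Y4 * (E x / eps ^ 3)"
      proof -
        have "P3 + Bm * Y3 \<le> Y4" "R3 + Bm * Y3 \<le> Y4" using P3 Bm Y3 by (auto simp: Y4_def)
        moreover have "E x / eps ^ 3 \<ge> 0" using E[OF x] eps by simp
        ultimately show ?thesis by (metis add_mono mult_right_mono)
      qed
      finally show ?thesis unfolding y4_def using eps by (simp add: abs_divide algebra_simps)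
    qed
    show "d01 y y1" "d01 y1 y2" "d01 y2 y3" by (rule dy, rule dy1, rule dy2)
    show "\<forall>x\<in>{0..1}. \<bar>y1 x\<bar> \<le> Y \<and> \<bar>y2 x\<bar> \<le> Y * (eps + exp (- beta * x / eps) / eps) \<and>
             \<bar>y3 x\<bar> \<le> Y * (eps + exp (- beta * x / eps) / eps\<^sup>2) \<and>
             \<bar>y4 x\<bar> \<le> Y * (1 + exp (- beta * x / eps) / eps ^ 3)"
    proof
      fix x :: real assume x: "x \<in> {0..1}"
      have Ex: "E x > 0" "E x \<le> 1" using E[OF x] by auto
      have "\<bar>y1 x\<bar> \<le> Y1 * (eps + E x)" by (rule y1bd[OF x])
      also have "\<dots> \<le> Y1 * 2" using Ex eps Y1 by (intro mult_left_mono) auto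
      also have "\<dots> \<le> Y" using Y1 Y2 Y3 Y4 by (simp add: Y_def)
      finally have 1: "\<bar>y1 x\<bar> \<le> Y" .
      have nn: "eps + E x / eps \<ge> 0" "eps + E x / eps\<^sup>2 \<ge> 0" "1 + E x / eps ^ 3 \<ge> 0" using Ex eps by auto
      have YY: "Y2 \<le> Y" "Y3 \<le> Y" "Y4 \<le> Y" using Y1 Y2 Y3 Y4 by (auto simp: Y_def)
      have 2: "\<bar>y2 x\<bar> \<le> Y * (eps + E x / eps)" using y2bd[OF x] mult_right_mono[OF YY(1) nn(1)] by linarith
      have 3: "\<bar>y3 x\<bar> \<le> Y * (eps + E x / eps\<^sup>2)" using y3bd[OF x] mult_right_mono[OF YY(2) nn(2)] by linarith
      have 4: "\<bar>y4 x\<bar> \<le> Y * (1 + E x / eps ^ 3)" using y4bd[OF x] mult_right_mono[OF YY(3) nn(3)] by linarith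
      show "\<bar>y1 x\<bar> \<le> Y \<and> \<bar>y2 x\<bar> \<le> Y * (eps + exp (- beta * x / eps) / eps) \<and>
             \<bar>y3 x\<bar> \<le> Y * (eps + exp (- beta * x / eps) / eps\<^sup>2) \<and>
             \<bar>y4 x\<bar> \<le> Y * (1 + exp (- beta * x / eps) / eps ^ 3)"
        using 1 2 3 4 unfolding E_def by blast
    qed
    qed
  qed
qed

lemma tay_fam:
  fixes y y1 y2 y3 y4 :: "real \<Rightarrow> real"
  assumes "d01 y y1" "d01 y1 y2" "d01 y2 y3" "d01 y3 y4"
  defines "d \<equiv> (\<lambda>k::nat. if k = 0 then y else if k = 1 then y1 else if k = 2 then y2 else if k = 3 then y3 else y4)"
  shows "\<forall>m<4. d01 (d m) (d (Suc m))" "d 0 = y" "d 1 = y1" "d 2 = y2" "d 3 = y3" "d 4 = y4"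
proof -
  show "\<forall>m<4. d01 (d m) (d (Suc m))"
  proof (intro allI impI)
    fix m :: nat assume "m < 4"
    hence "m = 0 \<or> m = 1 \<or> m = 2 \<or> m = 3" by auto
    thus "d01 (d m) (d (Suc m))" using assms(1-4) unfolding d_def by auto
  qed
qed (auto simp: d_def)

lemma taylor4:
  fixes y y1 y2 y3 y4 :: "real \<Rightarrow> real"
  assumes "d01 y y1" "d01 y1 y2" "d01 y2 y3" "d01 y3 y4" "x \<in> {0..1}" "x' \<in> {0..1}"
    "\<forall>t. min x x' \<le> t \<and> t \<le> max x x' \<longrightarrow> \<bar>y4 t\<bar> \<le> M"
  shows "\<bar>y x' - (y x + y1 x * (x' - x) + y2 x * (x' - x)^2 / 2 + y3 x * (x' - x)^3 / 6)\<bar> \<le> M * \<bar>x' - x\<bar> ^ 4"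
proof -
  note F = tay_fam[OF assms(1-4)]
  let ?d = "(\<lambda>k::nat. if k = 0 then y else if k = 1 then y1 else if k = 2 then y2 else if k = 3 then y3 else y4)"
  have "\<bar>?d 0 x' - (\<Sum>k<4. ?d k x * (x' - x) ^ k / fact k)\<bar> \<le> M * \<bar>x' - x\<bar> ^ 4"
    by (rule taylor_bound) (use F assms(5-7) in auto)
  thus ?thesis by (simp add: eval_nat_numeral fact_numeral algebra_simps)
qed

lemma taylor3:
  fixes y y1 y2 y3 :: "real \<Rightarrow> real"
  assumes "d01 y y1" "d01 y1 y2" "d01 y2 y3" "x \<in> {0..1}" "x' \<in> {0..1}"
    "\<forall>t. min x x' \<le> t \<and> t \<le> max x x' \<longrightarrow> \<bar>y3 t\<bar> \<le> M"
  shows "\<bar>y x' - (y x + y1 x * (x' - x) + y2 x * (x' - x)^2 / 2)\<bar> \<le> M * \<bar>x' - x\<bar> ^ 3"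
proof -
  let ?d = "(\<lambda>k::nat. if k = 0 then y else if k = 1 then y1 else if k = 2 then y2 else y3)"
  have F: "\<forall>m<3. d01 (?d m) (?d (Suc m))"
  proof (intro allI impI)
    fix m :: nat assume "m < 3"
    hence "m = 0 \<or> m = 1 \<or> m = 2" by auto
    thus "d01 (?d m) (?d (Suc m))" using assms(1-3) by auto
  qed
  have "\<bar>?d 0 x' - (\<Sum>k<3. ?d k x * (x' - x) ^ k / fact k)\<bar> \<le> M * \<bar>x' - x\<bar> ^ 3"
    by (rule taylor_bound) (use F assms(4-6) in auto)
  thus ?thesis by (simp add: eval_nat_numeral fact_numeral algebra_simps)
qed

lemma alg1:
  fixes bx h Y eps r s A B Y1 :: real
  assumes "bx * (h / 2 * Y) = eps * r * Y"
  shows "- eps * s * (Y + A) - bx * (Y1 + h / 2 * Y + B) + eps * Y + bx * Y1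
      = eps * (1 - s - r) * Y - eps * s * A - bx * B"
proof -
  have d: "(- eps * s * (Y + A) - bx * (Y1 + h / 2 * Y + B) + eps * Y + bx * Y1)
      - (eps * (1 - s - r) * Y - eps * s * A - bx * B) = eps * r * Y - bx * (h / 2 * Y)"
    by (simp add: algebra_simps)
  have "eps * r * Y - bx * (h / 2 * Y) = 0" using assms by linarith
  hence "(- eps * s * (Y + A) - bx * (Y1 + h / 2 * Y + B) + eps * Y + bx * Y1)
      - (eps * (1 - s - r) * Y - eps * s * A - bx * B) = 0" by (rule trans[OF d])
  thus ?thesis by (metis right_minus_eq)
qed

lemma tau_unif:
  fixes y y1 y2 y3 y4 :: "real \<Rightarrow> real"
  assumes d: "d01 y y1" "d01 y1 y2" "d01 y2 y3" "d01 y3 y4"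
    and x: "0 \<le> x0 - h" "x0 + h \<le> 1" "h > 0" and eps: "eps > 0" and bx: "bx > 0"
    and b2: "\<bar>y2 x0\<bar> \<le> M2"
    and b34: "\<forall>t. x0 - h \<le> t \<and> t \<le> x0 + h \<longrightarrow> \<bar>y3 t\<bar> \<le> M3 \<and> \<bar>y4 t\<bar> \<le> M4"
  shows "\<bar>- eps * sigma (bx * h / (2 * eps)) * (((y (x0 + h) - y x0) / h - (y x0 - y (x0 - h)) / h) / ((h + h) / 2))
          - bx * ((y (x0 + h) - y x0) / h) + eps * y2 x0 + bx * y1 x0\<bar>
        \<le> eps * \<bar>1 - sigma (bx * h / (2 * eps)) - bx * h / (2 * eps)\<bar> * M2
          + eps * sigma (bx * h / (2 * eps)) * (2 * M4 * h\<^sup>2) + bx * (M3 * h\<^sup>2)"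
proof -
  define r where "r = bx * h / (2 * eps)"
  have r: "r > 0" using bx x eps by (simp add: r_def)
  have sg: "0 < sigma r" "sigma r \<le> 1" using sigma_bounds[OF r] by auto
  have I: "x0 \<in> {0..1}" "x0 + h \<in> {0..1}" "x0 - h \<in> {0..1}" using x by auto
  obtain Rp where Rp: "y (x0 + h) = y x0 + y1 x0 * h + y2 x0 * h^2 / 2 + y3 x0 * h^3 / 6 + Rp" "\<bar>Rp\<bar> \<le> M4 * h ^ 4"
  proof -
    have "\<bar>y (x0 + h) - (y x0 + y1 x0 * h + y2 x0 * h^2 / 2 + y3 x0 * h^3 / 6)\<bar> \<le> M4 * \<bar>h\<bar> ^ 4"
      using taylor4[OF d I(1) I(2), of M4] b34 x by auto
    thus ?thesis using that[of "y (x0 + h) - (y x0 + y1 x0 * h + y2 x0 * h^2 / 2 + y3 x0 * h^3 / 6)"] x by auto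
  qed
  obtain Rm where Rm: "y (x0 - h) = y x0 - y1 x0 * h + y2 x0 * h^2 / 2 - y3 x0 * h^3 / 6 + Rm" "\<bar>Rm\<bar> \<le> M4 * h ^ 4"
  proof -
    have "\<bar>y (x0 - h) - (y x0 + y1 x0 * (- h) + y2 x0 * (- h)^2 / 2 + y3 x0 * (- h)^3 / 6)\<bar> \<le> M4 * \<bar>- h\<bar> ^ 4"
      using taylor4[OF d I(1) I(3), of M4] b34 x by auto
    thus ?thesis using that[of "y (x0 - h) - (y x0 - y1 x0 * h + y2 x0 * h^2 / 2 - y3 x0 * h^3 / 6)"] x
      by (auto simp: power3_eq_cube)
  qed
  obtain R3 where R3: "y (x0 + h) = y x0 + y1 x0 * h + y2 x0 * h^2 / 2 + R3" "\<bar>R3\<bar> \<le> M3 * h ^ 3"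
  proof -
    have "\<bar>y (x0 + h) - (y x0 + y1 x0 * h + y2 x0 * h^2 / 2)\<bar> \<le> M3 * \<bar>h\<bar> ^ 3"
      using taylor3[OF d(1-3) I(1) I(2), of M3] b34 x by auto
    thus ?thesis using that[of "y (x0 + h) - (y x0 + y1 x0 * h + y2 x0 * h^2 / 2)"] x by auto
  qed
  have D2: "((y (x0 + h) - y x0) / h - (y x0 - y (x0 - h)) / h) / ((h + h) / 2) = y2 x0 + (Rp + Rm) / h^2"
    unfolding Rp(1) Rm(1) using x by (simp add: field_simps power2_eq_square power3_eq_cube)
  have Dp: "(y (x0 + h) - y x0) / h = y1 x0 + h / 2 * y2 x0 + R3 / h"
    unfolding R3(1) using x by (simp add: field_simps power2_eq_square)
  have bh: "bx * (h / 2) = eps * r" using eps by (simp add: r_def field_simps)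
  have T: "- eps * sigma r * (y2 x0 + (Rp + Rm) / h^2) - bx * (y1 x0 + h / 2 * y2 x0 + R3 / h) + eps * y2 x0 + bx * y1 x0
      = eps * (1 - sigma r - r) * y2 x0 - eps * sigma r * ((Rp + Rm) / h^2) - bx * (R3 / h)"
  proof (rule alg1)
    show "bx * (h / 2 * y2 x0) = eps * r * y2 x0" using bh by (simp add: algebra_simps)
  qed
  have e1: "\<bar>eps * (1 - sigma r - r) * y2 x0\<bar> \<le> eps * \<bar>1 - sigma r - r\<bar> * M2"
    using b2 eps by (simp add: abs_mult mult_left_mono)
  have e2: "\<bar>eps * sigma r * ((Rp + Rm) / h^2)\<bar> \<le> eps * sigma r * (2 * M4 * h\<^sup>2)"
  proof -
    have "\<bar>(Rp + Rm) / h^2\<bar> \<le> (M4 * h ^ 4 + M4 * h ^ 4) / h^2"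
      using Rp(2) Rm(2) x by (simp add: abs_divide divide_right_mono abs_triangle_ineq order_trans[OF abs_triangle_ineq])
    also have "\<dots> = 2 * M4 * h\<^sup>2" using x by (simp add: field_simps power2_eq_square eval_nat_numeral)
    finally have a: "\<bar>(Rp + Rm) / h^2\<bar> \<le> 2 * M4 * h\<^sup>2" .
    have "\<bar>eps * sigma r * ((Rp + Rm) / h^2)\<bar> = (eps * sigma r) * \<bar>(Rp + Rm) / h^2\<bar>"
      using eps sg by (simp add: abs_mult)
    also have "\<dots> \<le> (eps * sigma r) * (2 * M4 * h\<^sup>2)" using a eps sg by (intro mult_left_mono) auto
    finally show ?thesis .
  qed
  have e3: "\<bar>bx * (R3 / h)\<bar> \<le> bx * (M3 * h\<^sup>2)"
  proof -
    have "\<bar>R3 / h\<bar> \<le> M3 * h ^ 3 / h" using R3(2) x by (simp add: abs_divide divide_right_mono)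
    also have "\<dots> = M3 * h\<^sup>2" using x by (simp add: field_simps power2_eq_square eval_nat_numeral)
    finally have a: "\<bar>R3 / h\<bar> \<le> M3 * h\<^sup>2" .
    have "\<bar>bx * (R3 / h)\<bar> = bx * \<bar>R3 / h\<bar>" using bx by (simp add: abs_mult)
    also have "\<dots> \<le> bx * (M3 * h\<^sup>2)" using a bx by (intro mult_left_mono) auto
    finally show ?thesis .
  qed
  have eq: "- eps * sigma r * (((y (x0 + h) - y x0) / h - (y x0 - y (x0 - h)) / h) / ((h + h) / 2))
          - bx * ((y (x0 + h) - y x0) / h) + eps * y2 x0 + bx * y1 x0
      = - eps * sigma r * (y2 x0 + (Rp + Rm) / h^2) - bx * (y1 x0 + h / 2 * y2 x0 + R3 / h) + eps * y2 x0 + bx * y1 x0"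
    by (subst D2, subst Dp, rule refl)
  show ?thesis unfolding r_def[symmetric] eq T using e1 e2 e3 by linarith
qed


lemma tau_nonunif:
  fixes y y1 y2 y3 :: "real \<Rightarrow> real"
  assumes d: "d01 y y1" "d01 y1 y2" "d01 y2 y3"
    and x: "0 \<le> x0 - h" "x0 + H \<le> 1" "h > 0" "H > 0" and eps: "eps > 0" and bx: "bx > 0"
    and b2: "\<bar>y2 x0\<bar> \<le> M2"
    and b3: "\<forall>t. x0 - h \<le> t \<and> t \<le> x0 + H \<longrightarrow> \<bar>y3 t\<bar> \<le> M3"
  shows "\<bar>- eps * sigma (bx * H / (2 * eps)) * (((y (x0 + H) - y x0) / H - (y x0 - y (x0 - h)) / h) / ((h + H) / 2))
          - bx * ((y (x0 + H) - y x0) / H) + eps * y2 x0 + bx * y1 x0\<bar>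
        \<le> eps * \<bar>1 - sigma (bx * H / (2 * eps)) - bx * H / (2 * eps)\<bar> * M2
          + eps * sigma (bx * H / (2 * eps)) * (2 * M3 * (H + h)) + bx * (M3 * H\<^sup>2)"
proof -
  define r where "r = bx * H / (2 * eps)"
  have r: "r > 0" using bx x eps by (simp add: r_def)
  have sg: "0 < sigma r" "sigma r \<le> 1" using sigma_bounds[OF r] by auto
  have I: "x0 \<in> {0..1}" "x0 + H \<in> {0..1}" "x0 - h \<in> {0..1}" using x by auto
  have M3: "M3 \<ge> 0" using b3 x by force
  obtain Rp where Rp: "y (x0 + H) = y x0 + y1 x0 * H + y2 x0 * H^2 / 2 + Rp" "\<bar>Rp\<bar> \<le> M3 * H ^ 3"
  proof -
    have "\<bar>y (x0 + H) - (y x0 + y1 x0 * H + y2 x0 * H^2 / 2)\<bar> \<le> M3 * \<bar>H\<bar> ^ 3"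
      using taylor3[OF d I(1) I(2), of M3] b3 x by auto
    thus ?thesis using that[of "y (x0 + H) - (y x0 + y1 x0 * H + y2 x0 * H^2 / 2)"] x by auto
  qed
  obtain Rm where Rm: "y (x0 - h) = y x0 - y1 x0 * h + y2 x0 * h^2 / 2 + Rm" "\<bar>Rm\<bar> \<le> M3 * h ^ 3"
  proof -
    have "\<bar>y (x0 - h) - (y x0 + y1 x0 * (- h) + y2 x0 * (- h)^2 / 2)\<bar> \<le> M3 * \<bar>- h\<bar> ^ 3"
      using taylor3[OF d I(1) I(3), of M3] b3 x by auto
    thus ?thesis using that[of "y (x0 - h) - (y x0 - y1 x0 * h + y2 x0 * h^2 / 2)"] x by auto
  qed
  define A where "A = (Rp / H + Rm / h) / ((h + H) / 2)"
  have num: "(y (x0 + H) - y x0) / H - (y x0 - y (x0 - h)) / h = (h + H) / 2 * y2 x0 + (Rp / H + Rm / h)"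
    unfolding Rp(1) Rm(1) using x by (simp add: field_simps power2_eq_square)
  have hH: "(h + H) / 2 \<noteq> 0" using x by simp
  have D2: "((y (x0 + H) - y x0) / H - (y x0 - y (x0 - h)) / h) / ((h + H) / 2) = y2 x0 + A"
    unfolding num A_def using hH by (simp add: add_divide_distrib)
  have Dp: "(y (x0 + H) - y x0) / H = y1 x0 + H / 2 * y2 x0 + Rp / H"
    unfolding Rp(1) using x by (simp add: field_simps power2_eq_square)
  have bh: "bx * (H / 2) = eps * r" using eps by (simp add: r_def field_simps)
  have T: "- eps * sigma r * (y2 x0 + A) - bx * (y1 x0 + H / 2 * y2 x0 + Rp / H) + eps * y2 x0 + bx * y1 x0
      = eps * (1 - sigma r - r) * y2 x0 - eps * sigma r * A - bx * (Rp / H)"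
  proof (rule alg1)
    show "bx * (H / 2 * y2 x0) = eps * r * y2 x0" using bh by (simp add: algebra_simps)
  qed
  have e1: "\<bar>eps * (1 - sigma r - r) * y2 x0\<bar> \<le> eps * \<bar>1 - sigma r - r\<bar> * M2"
    using b2 eps by (simp add: abs_mult mult_left_mono)
  have Ab: "\<bar>A\<bar> \<le> 2 * M3 * (H + h)"
  proof -
    have "\<bar>Rp / H\<bar> \<le> M3 * H\<^sup>2" using Rp(2) x by (simp add: abs_divide divide_le_eq power2_eq_square power3_eq_cube mult.assoc)
    moreover have "\<bar>Rm / h\<bar> \<le> M3 * h\<^sup>2" using Rm(2) x by (simp add: abs_divide divide_le_eq power2_eq_square power3_eq_cube mult.assoc)
    moreover have "\<bar>Rp / H + Rm / h\<bar> \<le> \<bar>Rp / H\<bar> + \<bar>Rm / h\<bar>" by (rule abs_triangle_ineq)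
    ultimately have "\<bar>Rp / H + Rm / h\<bar> \<le> M3 * H\<^sup>2 + M3 * h\<^sup>2" by linarith
    also have "\<dots> = M3 * (H\<^sup>2 + h\<^sup>2)" by (simp add: algebra_simps)
    also have "\<dots> \<le> M3 * ((H + h) * (H + h))"
    proof -
      have "(H + h) * (H + h) = H\<^sup>2 + h\<^sup>2 + 2 * (H * h)" by (simp add: power2_eq_square algebra_simps)
      moreover have "H * h \<ge> 0" using x by simp
      ultimately have "H\<^sup>2 + h\<^sup>2 \<le> (H + h) * (H + h)" by linarith
      thus ?thesis using M3 by (intro mult_left_mono) auto
    qed
    finally have a: "\<bar>Rp / H + Rm / h\<bar> \<le> M3 * ((H + h) * (H + h))" .
    have pos: "(h + H) / 2 > 0" using x by simp
    have "\<bar>A\<bar> = \<bar>Rp / H + Rm / h\<bar> / \<bar>(h + H) / 2\<bar>" unfolding A_def by (rule abs_divide)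
    also have "\<dots> = \<bar>Rp / H + Rm / h\<bar> / ((h + H) / 2)" using pos by (simp only: abs_of_pos)
    also have "\<dots> \<le> M3 * ((H + h) * (H + h)) / ((h + H) / 2)" using a x by (intro divide_right_mono) auto
    also have "\<dots> = 2 * M3 * (H + h)" using x by (simp add: field_simps)
    finally show ?thesis .
  qed
  have e2: "\<bar>eps * sigma r * A\<bar> \<le> eps * sigma r * (2 * M3 * (H + h))"
  proof -
    have "\<bar>eps * sigma r * A\<bar> = (eps * sigma r) * \<bar>A\<bar>" using eps sg by (simp add: abs_mult)
    also have "\<dots> \<le> (eps * sigma r) * (2 * M3 * (H + h))" using Ab eps sg by (intro mult_left_mono) auto
    finally show ?thesis .
  qed
  have e3: "\<bar>bx * (Rp / H)\<bar> \<le> bx * (M3 * H\<^sup>2)"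
  proof -
    have a: "\<bar>Rp / H\<bar> \<le> M3 * H\<^sup>2" using Rp(2) x by (simp add: abs_divide divide_le_eq power2_eq_square power3_eq_cube mult.assoc)
    have "\<bar>bx * (Rp / H)\<bar> = bx * \<bar>Rp / H\<bar>" using bx by (simp add: abs_mult)
    also have "\<dots> \<le> bx * (M3 * H\<^sup>2)" using a bx by (intro mult_left_mono) auto
    finally show ?thesis .
  qed
  have eq: "- eps * sigma r * (((y (x0 + H) - y x0) / H - (y x0 - y (x0 - h)) / h) / ((h + H) / 2))
          - bx * ((y (x0 + H) - y x0) / H) + eps * y2 x0 + bx * y1 x0
      = - eps * sigma r * (y2 x0 + A) - bx * (y1 x0 + H / 2 * y2 x0 + Rp / H) + eps * y2 x0 + bx * y1 x0"
    by (subst D2, subst Dp, rule refl)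
  show ?thesis unfolding r_def[symmetric] eq T using e1 e2 e3 by linarith
qed

lemma eps2_sig:
  fixes eps bx Bm H :: real
  assumes "0 < eps" "eps < 1" "0 < bx" "bx \<le> Bm" "0 < H" "H \<le> 1"
  shows "eps\<^sup>2 * \<bar>1 - sigma (bx * H / (2 * eps)) - bx * H / (2 * eps)\<bar> \<le> (2 * Bm\<^sup>2 + 1 + Bm) * H * min eps H"
proof -
  define r where "r = bx * H / (2 * eps)"
  have r: "r > 0" using assms by (simp add: r_def)
  have sg: "0 < sigma r" "sigma r \<le> 1" using sigma_bounds[OF r] by auto
  have Bm: "Bm > 0" using assms by simp
  show ?thesis unfolding r_def[symmetric]
  proof (cases "eps \<ge> H")
    case True
    have "eps\<^sup>2 * \<bar>1 - sigma r - r\<bar> \<le> eps\<^sup>2 * (8 * r\<^sup>2)" using sigma_err[OF r] by (intro mult_left_mono) auto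
    also have "\<dots> = 2 * bx\<^sup>2 * H\<^sup>2" using assms by (simp add: r_def field_simps power2_eq_square)
    also have "\<dots> \<le> 2 * Bm\<^sup>2 * H\<^sup>2" using assms by (intro mult_right_mono mult_left_mono power_mono) auto
    also have "\<dots> \<le> (2 * Bm\<^sup>2 + 1 + Bm) * H * min eps H"
      using True assms Bm by (simp add: min_def power2_eq_square mult_right_mono)
    finally show "eps\<^sup>2 * \<bar>1 - sigma r - r\<bar> \<le> (2 * Bm\<^sup>2 + 1 + Bm) * H * min eps H" .
  next
    case False
    have a: "\<bar>1 - sigma r - r\<bar> \<le> 1 + r" using sg r by linarith
    have "eps\<^sup>2 * \<bar>1 - sigma r - r\<bar> \<le> eps\<^sup>2 * (1 + r)" using a by (intro mult_left_mono) auto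
    also have "\<dots> = eps * eps + eps * (bx * H / 2)" using assms by (simp add: r_def field_simps power2_eq_square)
    also have "\<dots> \<le> eps * H + eps * (Bm * H)"
    proof -
      have "eps * eps \<le> eps * H" using False assms by (intro mult_left_mono) auto
      moreover have "bx * H / 2 \<le> Bm * H" using assms by (simp add: mult_right_mono)
      hence "eps * (bx * H / 2) \<le> eps * (Bm * H)" using assms by (intro mult_left_mono) auto
      ultimately show ?thesis by linarith
    qed
    also have "\<dots> = (1 + Bm) * H * eps" by (simp add: algebra_simps)
    also have "\<dots> \<le> (2 * Bm\<^sup>2 + 1 + Bm) * H * eps" using assms Bm by (intro mult_right_mono) auto
    also have "\<dots> = (2 * Bm\<^sup>2 + 1 + Bm) * H * min eps H" using False by (simp add: min_def)
    finally show "eps\<^sup>2 * \<bar>1 - sigma r - r\<bar> \<le> (2 * Bm\<^sup>2 + 1 + Bm) * H * min eps H" .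
  qed
qed

lemma hmin:
  fixes eps H Q :: real and N :: nat
  assumes "0 < eps" "0 < H" "H \<le> 1 / ((1 - Q) * real N)" "0 < Q" "Q < 1" "N > 0"
  shows "H * min eps H \<le> min eps (1 / real N) / real N / (1 - Q)\<^sup>2"
proof -
  have q: "0 < 1 - Q" "1 - Q \<le> 1" using assms by auto
  have "min eps H \<le> min eps (1 / real N) / (1 - Q)"
  proof (cases "eps \<le> 1 / real N")
    case True
    have "min eps H \<le> eps" by simp
    also have "\<dots> \<le> eps / (1 - Q)" using q assms by (simp add: le_divide_eq mult_left_le_one_le)
    finally show ?thesis using True by (simp add: min_def)
  next
    case False
    have "min eps H \<le> H" by simp
    also have "\<dots> \<le> (1 / real N) / (1 - Q)" using assms(3) by (simp add: field_simps)
    finally show ?thesis using False by (simp add: min_def)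
  qed
  hence "H * min eps H \<le> (1 / ((1 - Q) * real N)) * (min eps (1 / real N) / (1 - Q))"
    using assms by (intro mult_mono) auto
  also have "\<dots> = min eps (1 / real N) / real N / (1 - Q)\<^sup>2" by (simp add: field_simps power2_eq_square)
  finally show ?thesis .
qed

lemma exp_eps3:
  fixes eps beta a t xi h :: real and J :: nat
  assumes "0 < eps" "eps < 1" "beta > 0" "a > 3" "xi = a * eps / beta * ln (1 / eps)"
    "h = xi / real J" "real J \<ge> a / (a - 3)" "t \<ge> xi - h"
  shows "exp (- beta * t / eps) \<le> eps ^ 3"
proof -
  define L where "L = ln (1 / eps)"
  have L: "L > 0" using assms by (simp add: L_def)
  have J: "real J > 0" using assms(4,7) by (smt (verit) divide_pos_pos)
  have "a * (1 - 1 / real J) \<ge> 3"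
  proof -
    have "1 / real J \<le> (a - 3) / a" using assms(4,7) J by (simp add: field_simps)
    hence "a * (1 / real J) \<le> a * ((a - 3) / a)" using assms(4) by (intro mult_left_mono) auto
    moreover have "a * ((a - 3) / a) = a - 3" using assms(4) by simp
    moreover have "a * (1 - 1 / real J) = a - a * (1 / real J)" by (simp add: algebra_simps)
    ultimately show ?thesis by linarith
  qed
  hence "3 * L \<le> a * (1 - 1 / real J) * L" using L by (intro mult_right_mono) auto
  also have "a * (1 - 1 / real J) * L = beta * (xi - h) / eps"
    using assms J by (simp add: L_def field_simps)
  also have "\<dots> \<le> beta * t / eps" using assms by (intro divide_right_mono mult_left_mono) auto
  finally have "- beta * t / eps \<le> - (3 * L)" by simp
  hence "exp (- beta * t / eps) \<le> exp (- (3 * L))" by simp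
  also have "exp (- (3 * L)) = eps ^ 3"
  proof -
    have e: "- (3 * L) = real 3 * ln eps" using assms by (simp add: L_def ln_div)
    have "exp (real 3 * ln eps) = exp (ln eps) ^ 3" by (rule exp_of_nat_mult)
    thus ?thesis unfolding e using assms by simp
  qed
  finally show ?thesis .
qed

lemma tau_at:
  assumes "i \<ge> 1" "X (i + 1) = X i + hp" "X (i - 1) = X i - hm"
  shows "tau eps b X y y1 y2 i = - eps * sigma (b (X i) * hp / (2 * eps)) *
     (((y (X i + hp) - y (X i)) / hp - (y (X i) - y (X i - hm)) / hm) / ((hm + hp) / 2))
     - b (X i) * ((y (X i + hp) - y (X i)) / hp) + eps * y2 (X i) + b (X i) * y1 (X i)"
proof -
  have h1: "hstep X (i + 1) = hp" using assms by (simp add: hstep_def)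
  have h0: "hstep X i = hm" using assms by (simp add: hstep_def)
  show ?thesis unfolding tau_def rho_def D2_def Dplus_def Dminus_def hbar_def h1 h0
    using assms by simp
qed

lemma epsH2:
  fixes eps H :: real
  assumes "0 < eps" "eps < 1" "0 < H" "H \<le> 1"
  shows "eps * H\<^sup>2 \<le> H * min eps H"
proof -
  have "eps * H \<le> eps" using assms by (simp add: mult_left_le)
  moreover have "eps * H \<le> H" using assms by (simp add: mult_left_le_one_le)
  ultimately have "eps * H \<le> min eps H" by simp
  hence "H * (eps * H) \<le> H * min eps H" using assms by (intro mult_left_mono) auto
  thus ?thesis by (simp add: power2_eq_square algebra_simps)
qed

lemma tau_final:
  fixes a beta Q Bm Y :: real
  assumes beta: "beta > 0" and a: "a > 3" and Q: "0 < Q" "Q < 1" and Bm: "Bm > 0" and Y: "Y > 0"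
  shows "\<exists>N0::nat. \<exists>C. \<forall>eps N J b y y1 y2 y3 y4. 0 < eps \<and> eps < 1 \<and> N \<ge> N0 \<and>
    real J = Q * real N \<and> mesh_xi a eps beta (1 / eps) \<le> Q \<and> (\<forall>x\<in>{0..1}. 0 < b x \<and> b x \<le> Bm) \<and>
    d01 y y1 \<and> d01 y1 y2 \<and> d01 y2 y3 \<and> d01 y3 y4 \<and>
    (\<forall>x\<in>{0..1}. \<bar>y2 x\<bar> \<le> Y * (eps + exp (- beta * x / eps) / eps) \<and>
             \<bar>y3 x\<bar> \<le> Y * (eps + exp (- beta * x / eps) / eps\<^sup>2) \<and>
             \<bar>y4 x\<bar> \<le> Y * (1 + exp (- beta * x / eps) / eps ^ 3))
    \<longrightarrow> (\<forall>i. 1 \<le> i \<and> i \<le> J - 1 \<longrightarrow>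
              \<bar>tau eps b (mesh_pt a eps beta (1 / eps) N J) y y1 y2 i\<bar> \<le> C * ((ln eps)\<^sup>2 * real N powr (-2))) \<and>
        \<bar>tau eps b (mesh_pt a eps beta (1 / eps) N J) y y1 y2 J\<bar> \<le> C * (min eps (1 / real N) / real N + eps\<^sup>2 / real N) \<and>
        (\<forall>i. J + 1 \<le> i \<and> i \<le> N - 1 \<longrightarrow>
              \<bar>tau eps b (mesh_pt a eps beta (1 / eps) N J) y y1 y2 i\<bar> \<le> C * (min eps (1 / real N) / real N))"
proof -
  define N0 where "N0 = nat \<lceil>a / ((a - 3) * Q)\<rceil> + 1"
  define K1 where "K1 = 2 * Bm\<^sup>2 + 1 + Bm"
  define Cf where "Cf = (4 * Bm\<^sup>2 + 4 + 2 * Bm) * Y * (a / (beta * Q))\<^sup>2"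
  define CJ where "CJ = Y * (2 * K1 + 2 * Bm) / (1 - Q)\<^sup>2 + 8 * Y / (1 - Q)"
  define Cc where "Cc = Y * (2 * K1 + 4 + 2 * Bm) / (1 - Q)\<^sup>2"
  have K1: "K1 > 0" using Bm by (simp add: K1_def add_pos_nonneg)
  have q1: "1 - Q > 0" using Q by simp
  have Cf: "Cf \<ge> 0" using Bm Y by (simp add: Cf_def)
  have CJ: "CJ \<ge> 0" using Bm Y K1 q1 by (simp add: CJ_def)
  have Cc: "Cc \<ge> 0" using Bm Y K1 q1 by (simp add: Cc_def)
  show ?thesis
  proof (intro exI[of _ N0] exI[of _ "Cf + CJ + Cc"] allI impI)
    fix eps :: real and N J :: nat and b y y1 y2 y3 y4 :: "real \<Rightarrow> real"
    assume H: "0 < eps \<and> eps < 1 \<and> N \<ge> N0 \<and>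
      real J = Q * real N \<and> mesh_xi a eps beta (1 / eps) \<le> Q \<and> (\<forall>x\<in>{0..1}. 0 < b x \<and> b x \<le> Bm) \<and>
      d01 y y1 \<and> d01 y1 y2 \<and> d01 y2 y3 \<and> d01 y3 y4 \<and>
      (\<forall>x\<in>{0..1}. \<bar>y2 x\<bar> \<le> Y * (eps + exp (- beta * x / eps) / eps) \<and>
             \<bar>y3 x\<bar> \<le> Y * (eps + exp (- beta * x / eps) / eps\<^sup>2) \<and>
             \<bar>y4 x\<bar> \<le> Y * (1 + exp (- beta * x / eps) / eps ^ 3))"
    hence eps: "0 < eps" "eps < 1" and NN0: "N \<ge> N0" and JQ: "real J = Q * real N"
      and xiQ: "mesh_xi a eps beta (1 / eps) \<le> Q" and bpos: "\<forall>x\<in>{0..1}. 0 < b x \<and> b x \<le> Bm"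
      and d: "d01 y y1" "d01 y1 y2" "d01 y2 y3" "d01 y3 y4"
      and yb: "\<forall>x\<in>{0..1}. \<bar>y2 x\<bar> \<le> Y * (eps + exp (- beta * x / eps) / eps) \<and>
             \<bar>y3 x\<bar> \<le> Y * (eps + exp (- beta * x / eps) / eps\<^sup>2) \<and>
             \<bar>y4 x\<bar> \<le> Y * (1 + exp (- beta * x / eps) / eps ^ 3)"
      by auto
    define X where "X = mesh_pt a eps beta (1 / eps) N J"
    define L where "L = ln (1 / eps)"
    define xi where "xi = mesh_xi a eps beta (1 / eps)"
    have L: "L > 0" using eps by (simp add: L_def)
    have xi_eq: "xi = a * eps / beta * ln (1 / eps)" by (simp add: xi_def mesh_xi_def)
    have xi: "0 < xi" "xi \<le> Q" "xi < 1"
    proof -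
      show "0 < xi" unfolding xi_eq using a beta eps L by (simp add: L_def)
      show "xi \<le> Q" using xiQ by (simp add: xi_def)
      thus "xi < 1" using Q by simp
    qed
    have N0: "real N0 \<ge> a / ((a - 3) * Q)" unfolding N0_def by linarith
    have Npos: "real N \<ge> 1" using NN0 unfolding N0_def by simp
    have Jbig: "real J \<ge> a / (a - 3)"
    proof -
      have "real N \<ge> a / ((a - 3) * Q)" using N0 NN0 by linarith
      hence "Q * real N \<ge> Q * (a / ((a - 3) * Q))" using Q by (intro mult_left_mono) auto
      also have "Q * (a / ((a - 3) * Q)) = a / (a - 3)" using Q a by (simp add: field_simps)
      finally show ?thesis using JQ by simp
    qed
    have Jpos: "real J > 0" using Jbig a by (smt (verit) divide_pos_pos)
    hence J1: "J \<ge> 1" by simp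
    have JN: "J < N" using JQ Q Npos by (smt (verit) mult_less_cancel_right2 of_nat_less_iff)
    have NJ: "real (N - J) = (1 - Q) * real N" using JN JQ by (simp add: of_nat_diff algebra_simps)
    have NJ1: "real (N - J) \<ge> 1" using JN by simp
    define h where "h = xi / real J"
    define HH where "HH = (1 - xi) / real (N - J)"
    have h: "0 < h" "h \<le> 1 / real N" 
    proof -
      show "0 < h" using xi Jpos by (simp add: h_def)
      have "xi / real J \<le> Q / real J" using xi Jpos by (simp add: divide_right_mono)
      moreover have "Q / real J = 1 / real N" using JQ Q Npos by (simp add: field_simps)
      ultimately show "h \<le> 1 / real N" by (simp add: h_def)
    qed
    have HH: "0 < HH" "HH \<le> 1" "HH \<le> 1 / ((1 - Q) * real N)" "1 / real N \<le> HH"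
    proof -
      show "0 < HH" using xi NJ1 by (simp add: HH_def)
      show "HH \<le> 1" using xi NJ1 by (simp add: HH_def divide_le_eq)
      show "HH \<le> 1 / ((1 - Q) * real N)" unfolding HH_def NJ using xi q1 Npos by (simp add: divide_right_mono)
      have "(1 - Q) / ((1 - Q) * real N) \<le> (1 - xi) / ((1 - Q) * real N)" using xi q1 Npos by (intro divide_right_mono) auto
      thus "1 / real N \<le> HH" unfolding HH_def NJ using q1 by simp
    qed
    have hH: "h \<le> HH" using h HH by linarith
    have hxi: "h \<le> xi"
    proof -
      have "xi / real J \<le> xi / 1" using xi J1 by (intro divide_left_mono) auto
      thus ?thesis by (simp add: h_def)
    qed
    have Xlo: "X i = real i * h" if "i \<le> J" for i using that by (simp add: X_def mesh_pt_def h_def xi_def Let_def)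
    have Xhi: "X i = xi + real (i - J) * HH" if "J \<le> i" for i
    proof (cases "i = J")
      case True thus ?thesis using Jpos by (simp add: X_def mesh_pt_def xi_def Let_def)
    next
      case False thus ?thesis using that by (simp add: X_def mesh_pt_def HH_def xi_def Let_def)
    qed
    have XJ: "X J = xi" using Xhi[of J] by simp
    have XN: "X N = 1" using Xhi[of N] JN NJ1 by (simp add: HH_def)
    have Eb: "exp (- beta * t / eps) \<le> eps ^ 3" if "t \<ge> xi - h" for t
      by (rule exp_eps3[OF eps beta a xi_eq h_def Jbig that])
    have Epos: "exp (- beta * t / eps) > 0" for t by simp
    have Ele1: "exp (- beta * t / eps) \<le> 1" if "t \<ge> 0" for t using that beta eps by simp
    have e3: "eps ^ 3 \<le> eps\<^sup>2" "eps\<^sup>2 \<le> eps" "eps \<le> 1 / eps" "1 / eps \<le> 1 / eps\<^sup>2"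
      "1 / eps\<^sup>2 \<le> 1 / eps ^ 3" "1 \<le> 1 / eps ^ 3"
    proof -
      have a: "eps * eps \<le> eps * 1" using eps by (intro mult_left_mono) auto
      show "eps\<^sup>2 \<le> eps" using a by (simp add: power2_eq_square)
      have "eps\<^sup>2 * eps \<le> eps\<^sup>2 * 1" using eps by (intro mult_left_mono) auto
      thus "eps ^ 3 \<le> eps\<^sup>2" by (simp add: power2_eq_square power3_eq_cube)
      have a': "eps * eps \<le> 1" using a eps by linarith
      show "eps \<le> 1 / eps" using a' eps by (simp add: le_divide_eq)
      show "1 / eps \<le> 1 / eps\<^sup>2" by (rule divide_left_mono[OF \<open>eps\<^sup>2 \<le> eps\<close>]) (use eps in auto)
      show "1 / eps\<^sup>2 \<le> 1 / eps ^ 3" by (rule divide_left_mono[OF \<open>eps ^ 3 \<le> eps\<^sup>2\<close>]) (use eps in auto)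
      have "eps ^ 3 \<le> 1" using eps by (simp add: power_le_one)
      thus "1 \<le> 1 / eps ^ 3" using eps by (simp add: le_divide_eq)
    qed
    have locb: "\<bar>y2 t\<bar> \<le> 2 * Y * eps \<and> \<bar>y3 t\<bar> \<le> 2 * Y * eps \<and> \<bar>y4 t\<bar> \<le> 2 * Y"
      if "xi - h \<le> t" "t \<le> 1" for t
    proof -
      have t: "t \<in> {0..1}" using that hxi by auto
      define E where "E = exp (- beta * t / eps)"
      have E: "E \<le> eps ^ 3" "E \<ge> 0" using Eb[OF that(1)] by (auto simp: E_def)
      have "E / eps \<le> eps ^ 3 / eps" using E eps by (intro divide_right_mono) auto
      also have "eps ^ 3 / eps = eps\<^sup>2" using eps by (simp add: power2_eq_square power3_eq_cube)
      finally have "E / eps \<le> eps" using e3 by linarith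
      hence a2: "eps + E / eps \<le> 2 * eps" by simp
      have "E / eps\<^sup>2 \<le> eps ^ 3 / eps\<^sup>2" using E eps by (intro divide_right_mono) auto
      also have "eps ^ 3 / eps\<^sup>2 = eps" using eps by (simp add: power2_eq_square power3_eq_cube)
      finally have a3: "eps + E / eps\<^sup>2 \<le> 2 * eps" by simp
      have "E / eps ^ 3 \<le> eps ^ 3 / eps ^ 3" using E eps by (intro divide_right_mono) auto
      also have "eps ^ 3 / eps ^ 3 = 1" using eps by simp
      finally have a4: "1 + E / eps ^ 3 \<le> 2" by simp
      have yt: "\<bar>y2 t\<bar> \<le> Y * (eps + E / eps)" "\<bar>y3 t\<bar> \<le> Y * (eps + E / eps\<^sup>2)" "\<bar>y4 t\<bar> \<le> Y * (1 + E / eps ^ 3)"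
        using yb t unfolding E_def by auto
      have "Y * (eps + E / eps) \<le> Y * (2 * eps)" using a2 Y by (intro mult_left_mono) auto
      moreover have "Y * (eps + E / eps\<^sup>2) \<le> Y * (2 * eps)" using a3 Y by (intro mult_left_mono) auto
      moreover have "Y * (1 + E / eps ^ 3) \<le> Y * 2" using a4 Y by (intro mult_left_mono) auto
      ultimately show ?thesis using yt by (simp add: algebra_simps)
    qed
    have globb: "\<bar>y2 t\<bar> \<le> 2 * Y / eps \<and> \<bar>y3 t\<bar> \<le> 2 * Y / eps\<^sup>2 \<and> \<bar>y4 t\<bar> \<le> 2 * Y / eps ^ 3"
      if t: "t \<in> {0..1}" for t
    proof -
      define E where "E = exp (- beta * t / eps)"
      have E: "E \<le> 1" "E \<ge> 0" using Ele1[of t] t by (auto simp: E_def)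
      have "E / eps \<le> 1 / eps" using E eps by (intro divide_right_mono) auto
      hence a2: "eps + E / eps \<le> 2 / eps" using e3 by simp
      have "E / eps\<^sup>2 \<le> 1 / eps\<^sup>2" using E eps by (intro divide_right_mono) auto
      hence a3: "eps + E / eps\<^sup>2 \<le> 2 / eps\<^sup>2" using e3 by simp
      have "E / eps ^ 3 \<le> 1 / eps ^ 3" using E eps by (intro divide_right_mono) auto
      hence a4: "1 + E / eps ^ 3 \<le> 2 / eps ^ 3" using e3 by simp
      have yt: "\<bar>y2 t\<bar> \<le> Y * (eps + E / eps)" "\<bar>y3 t\<bar> \<le> Y * (eps + E / eps\<^sup>2)" "\<bar>y4 t\<bar> \<le> Y * (1 + E / eps ^ 3)"
        using yb t unfolding E_def by auto
      have "Y * (eps + E / eps) \<le> Y * (2 / eps)" using a2 Y by (intro mult_left_mono) auto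
      moreover have "Y * (eps + E / eps\<^sup>2) \<le> Y * (2 / eps\<^sup>2)" using a3 Y by (intro mult_left_mono) auto
      moreover have "Y * (1 + E / eps ^ 3) \<le> Y * (2 / eps ^ 3)" using a4 Y by (intro mult_left_mono) auto
      moreover have "Y * (2 / eps) = 2 * Y / eps" "Y * (2 / eps\<^sup>2) = 2 * Y / eps\<^sup>2" "Y * (2 / eps ^ 3) = 2 * Y / eps ^ 3"
        by simp_all
      ultimately show ?thesis using yt by linarith
    qed
    have bX: "0 < b t \<and> b t \<le> Bm" if "t \<in> {0..1}" for t using bpos that by auto
    show "(\<forall>i. 1 \<le> i \<and> i \<le> J - 1 \<longrightarrow>
              \<bar>tau eps b (mesh_pt a eps beta (1 / eps) N J) y y1 y2 i\<bar> \<le> (Cf + CJ + Cc) * ((ln eps)\<^sup>2 * real N powr (-2))) \<and>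
        \<bar>tau eps b (mesh_pt a eps beta (1 / eps) N J) y y1 y2 J\<bar> \<le> (Cf + CJ + Cc) * (min eps (1 / real N) / real N + eps\<^sup>2 / real N) \<and>
        (\<forall>i. J + 1 \<le> i \<and> i \<le> N - 1 \<longrightarrow>
              \<bar>tau eps b (mesh_pt a eps beta (1 / eps) N J) y y1 y2 i\<bar> \<le> (Cf + CJ + Cc) * (min eps (1 / real N) / real N))"
      unfolding X_def[symmetric]
    proof (intro conjI allI impI)
      define m where "m = min eps (1 / real N)"
      have m: "m \<ge> 0" using eps Npos by (simp add: m_def)
      define mu where "mu = min eps HH"
      have mu: "mu \<ge> 0" using eps HH by (simp add: mu_def)
      have HHmu: "HH * mu \<le> m / real N / (1 - Q)\<^sup>2"
        unfolding mu_def m_def by (rule hmin) (use eps HH Q Npos in auto)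
      have HHN: "HH \<le> 1 / real N / (1 - Q)" using HH(3) by (simp add: field_simps)
      {
        fix i assume i: "1 \<le> i \<and> i \<le> J - 1"
        hence i1: "1 \<le> i" "i + 1 \<le> J" by auto
        have Xi: "X i = real i * h" using Xlo i1 by auto
        have Xp: "X (i + 1) = X i + h" using Xlo[of "i + 1"] Xi i1 by (simp add: algebra_simps)
        have Xm: "X (i - 1) = X i - h" using Xlo[of "i - 1"] Xi i1 by (simp add: of_nat_diff algebra_simps)
        have lo: "0 \<le> X i - h" using Xm Xlo[of "i - 1"] h i1 by simp
        have "X i + h = real (i + 1) * h" using Xi by (simp add: algebra_simps)
        also have "\<dots> \<le> real J * h" using i1 h by (intro mult_right_mono) auto
        also have "real J * h = xi" using Jpos by (simp add: h_def)
        finally have hi: "X i + h \<le> 1" using xi by simp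
        have XiI: "X i \<in> {0..1}" using lo hi h by auto
        define bx where "bx = b (X i)"
        have bx: "0 < bx" "bx \<le> Bm" using bX[OF XiI] by (auto simp: bx_def)
        have b34: "\<forall>t. X i - h \<le> t \<and> t \<le> X i + h \<longrightarrow> \<bar>y3 t\<bar> \<le> 2 * Y / eps\<^sup>2 \<and> \<bar>y4 t\<bar> \<le> 2 * Y / eps ^ 3"
          using globb lo hi by auto
        have b2: "\<bar>y2 (X i)\<bar> \<le> 2 * Y / eps" using globb[OF XiI] by auto
        define r where "r = bx * h / (2 * eps)"
        have r: "r > 0" using bx h eps by (simp add: r_def)
        have sg: "0 < sigma r" "sigma r \<le> 1" using sigma_bounds[OF r] by auto
        define t where "t = h / eps"
        have tau_eq: "tau eps b X y y1 y2 i = - eps * sigma (bx * h / (2 * eps)) *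
           (((y (X i + h) - y (X i)) / h - (y (X i) - y (X i - h)) / h) / ((h + h) / 2))
           - bx * ((y (X i + h) - y (X i)) / h) + eps * y2 (X i) + bx * y1 (X i)"
          unfolding bx_def by (rule tau_at[OF i1(1) Xp Xm])
        have B: "\<bar>tau eps b X y y1 y2 i\<bar> \<le> eps * \<bar>1 - sigma r - r\<bar> * (2 * Y / eps)
            + eps * sigma r * (2 * (2 * Y / eps ^ 3) * h\<^sup>2) + bx * ((2 * Y / eps\<^sup>2) * h\<^sup>2)"
          unfolding tau_eq r_def by (rule tau_unif[OF d lo hi h(1) eps(1) bx(1) b2 b34])
        have t1: "eps * \<bar>1 - sigma r - r\<bar> * (2 * Y / eps) \<le> 4 * Bm\<^sup>2 * Y * t\<^sup>2"
        proof -
          have "eps * \<bar>1 - sigma r - r\<bar> * (2 * Y / eps) = 2 * Y * \<bar>1 - sigma r - r\<bar>" using eps by simp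
          also have "\<dots> \<le> 2 * Y * (8 * r\<^sup>2)" using sigma_err[OF r] Y by (intro mult_left_mono) auto
          also have "\<dots> = 4 * Y * bx\<^sup>2 * t\<^sup>2" by (simp add: r_def t_def power2_eq_square field_simps)
          also have "\<dots> \<le> 4 * Y * Bm\<^sup>2 * t\<^sup>2" using bx Y by (intro mult_right_mono mult_left_mono power_mono) auto
          finally show ?thesis by (simp add: algebra_simps)
        qed
        have t2: "eps * sigma r * (2 * (2 * Y / eps ^ 3) * h\<^sup>2) \<le> 4 * Y * t\<^sup>2"
        proof -
          have "eps * sigma r * (2 * (2 * Y / eps ^ 3) * h\<^sup>2) = sigma r * (4 * Y * t\<^sup>2)"
            using eps by (simp add: t_def field_simps power2_eq_square power3_eq_cube)
          also have "\<dots> \<le> 1 * (4 * Y * t\<^sup>2)" using sg Y by (intro mult_right_mono) auto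
          finally show ?thesis by simp
        qed
        have t3: "bx * ((2 * Y / eps\<^sup>2) * h\<^sup>2) \<le> 2 * Bm * Y * t\<^sup>2"
        proof -
          have "bx * ((2 * Y / eps\<^sup>2) * h\<^sup>2) = bx * (2 * Y * t\<^sup>2)"
            using eps by (simp add: t_def field_simps power2_eq_square)
          also have "\<dots> \<le> Bm * (2 * Y * t\<^sup>2)" using bx Y by (intro mult_right_mono) auto
          finally show ?thesis by (simp add: algebra_simps)
        qed
        have tt: "t\<^sup>2 = (a / (beta * Q))\<^sup>2 * ((ln eps)\<^sup>2 * real N powr (-2))"
        proof -
          have "t = a / (beta * Q) * L / real N" unfolding t_def h_def xi_eq JQ L_def
            using eps Q beta Npos by (simp add: field_simps)
          moreover have "L\<^sup>2 = (ln eps)\<^sup>2" using eps by (simp add: L_def ln_div)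
          moreover have "real N powr (-2) = 1 / (real N)\<^sup>2" using Npos by (simp add: powr_minus powr_realpow divide_inverse)
          ultimately show ?thesis by (simp add: power2_eq_square field_simps)
        qed
        have "\<bar>tau eps b X y y1 y2 i\<bar> \<le> (4 * Bm\<^sup>2 + 4 + 2 * Bm) * Y * t\<^sup>2"
          using B t1 t2 t3 by (simp add: algebra_simps)
        also have "\<dots> = Cf * ((ln eps)\<^sup>2 * real N powr (-2))" unfolding tt Cf_def by (simp add: algebra_simps)
        also have "\<dots> \<le> (Cf + CJ + Cc) * ((ln eps)\<^sup>2 * real N powr (-2))"
          using CJ Cc by (intro mult_right_mono) auto
        finally have "\<bar>tau eps b X y y1 y2 i\<bar> \<le> (Cf + CJ + Cc) * ((ln eps)\<^sup>2 * real N powr (-2))" .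
      }
      thus "\<And>i. 1 \<le> i \<and> i \<le> J - 1 \<Longrightarrow> \<bar>tau eps b X y y1 y2 i\<bar> \<le> (Cf + CJ + Cc) * ((ln eps)\<^sup>2 * real N powr (-2))"
        by blast
      show "\<bar>tau eps b X y y1 y2 J\<bar> \<le> (Cf + CJ + Cc) * (min eps (1 / real N) / real N + eps\<^sup>2 / real N)"
      proof -
        have Xp: "X (J + 1) = X J + HH" using Xhi[of "J + 1"] XJ by simp
        have Xm: "X (J - 1) = X J - h"
        proof -
          have "X (J - 1) = real (J - 1) * h" using Xlo[of "J - 1"] by simp
          also have "\<dots> = real J * h - h" using J1 by (simp add: of_nat_diff algebra_simps)
          also have "real J * h = xi" using Jpos by (simp add: h_def)
          finally show ?thesis using XJ by simp
        qed
        have lo: "0 \<le> xi - h" using hxi by simp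
        have hi: "xi + HH \<le> 1"
        proof -
          have "HH \<le> 1 - xi" using xi NJ1 by (simp add: HH_def divide_le_eq)
          thus ?thesis by simp
        qed
        have xiI: "xi \<in> {0..1}" using xi by auto
        define bx where "bx = b xi"
        have bx: "0 < bx" "bx \<le> Bm" using bX[OF xiI] by (auto simp: bx_def)
        have b3: "\<forall>t. xi - h \<le> t \<and> t \<le> xi + HH \<longrightarrow> \<bar>y3 t\<bar> \<le> 2 * Y * eps"
          using locb hi by auto
        have b2: "\<bar>y2 xi\<bar> \<le> 2 * Y * eps" using locb[of xi] xi hxi h by auto
        define r where "r = bx * HH / (2 * eps)"
        have r: "r > 0" using bx HH eps by (simp add: r_def)
        have sg: "0 < sigma r" "sigma r \<le> 1" using sigma_bounds[OF r] by auto
        have tau_eq: "tau eps b X y y1 y2 J = - eps * sigma (bx * HH / (2 * eps)) *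
           (((y (xi + HH) - y xi) / HH - (y xi - y (xi - h)) / h) / ((h + HH) / 2))
           - bx * ((y (xi + HH) - y xi) / HH) + eps * y2 xi + bx * y1 xi"
          unfolding bx_def using tau_at[OF J1 Xp Xm] XJ by simp
        have B: "\<bar>tau eps b X y y1 y2 J\<bar> \<le> eps * \<bar>1 - sigma r - r\<bar> * (2 * Y * eps)
            + eps * sigma r * (2 * (2 * Y * eps) * (HH + h)) + bx * ((2 * Y * eps) * HH\<^sup>2)"
          unfolding tau_eq r_def by (rule tau_nonunif[OF d(1-3) lo hi h(1) HH(1) eps(1) bx(1) b2 b3])
        have t1: "eps * \<bar>1 - sigma r - r\<bar> * (2 * Y * eps) \<le> 2 * Y * K1 * (HH * mu)"
        proof -
          have "eps * \<bar>1 - sigma r - r\<bar> * (2 * Y * eps) = 2 * Y * (eps\<^sup>2 * \<bar>1 - sigma r - r\<bar>)"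
            by (simp add: power2_eq_square algebra_simps)
          also have "\<dots> \<le> 2 * Y * (K1 * HH * mu)" unfolding r_def mu_def K1_def
            using eps2_sig[OF eps bx HH(1,2)] Y by (intro mult_left_mono) auto
          finally show ?thesis by (simp add: algebra_simps)
        qed
        have t2: "eps * sigma r * (2 * (2 * Y * eps) * (HH + h)) \<le> 8 * Y * (eps\<^sup>2 * HH)"
        proof -
          have "eps * sigma r * (2 * (2 * Y * eps) * (HH + h)) = sigma r * (4 * Y * eps\<^sup>2 * (HH + h))"
            by (simp add: power2_eq_square algebra_simps)
          also have "\<dots> \<le> 1 * (4 * Y * eps\<^sup>2 * (HH + h))" using sg Y HH h by (intro mult_right_mono) auto
          also have "\<dots> = 4 * Y * eps\<^sup>2 * (HH + h)" by simp
          also have "\<dots> \<le> 4 * Y * eps\<^sup>2 * (2 * HH)"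
            by (rule mult_left_mono) (use hH Y in auto)
          finally show ?thesis by (simp add: algebra_simps)
        qed
        have t3: "bx * ((2 * Y * eps) * HH\<^sup>2) \<le> 2 * Y * Bm * (HH * mu)"
        proof -
          have "bx * ((2 * Y * eps) * HH\<^sup>2) = 2 * Y * bx * (eps * HH\<^sup>2)" by (simp add: algebra_simps)
          also have "\<dots> \<le> 2 * Y * Bm * (HH * mu)" unfolding mu_def
            by (rule mult_mono[OF _ epsH2[OF eps HH(1,2)]]) (use bx Y eps HH in auto)
          finally show ?thesis .
        qed
        have e2: "eps\<^sup>2 * HH \<le> (eps\<^sup>2 / real N) / (1 - Q)"
        proof -
          have "eps\<^sup>2 * HH \<le> eps\<^sup>2 * (1 / real N / (1 - Q))" using HHN by (intro mult_left_mono) auto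
          thus ?thesis by (simp add: field_simps)
        qed
        have "\<bar>tau eps b X y y1 y2 J\<bar> \<le> Y * (2 * K1 + 2 * Bm) * (HH * mu) + 8 * Y * (eps\<^sup>2 * HH)"
          using B t1 t2 t3 by (simp add: algebra_simps)
        also have "\<dots> \<le> Y * (2 * K1 + 2 * Bm) * (m / real N / (1 - Q)\<^sup>2) + 8 * Y * ((eps\<^sup>2 / real N) / (1 - Q))"
          using HHmu e2 Y K1 Bm by (intro add_mono mult_left_mono) (auto simp: m_def)
        also have "\<dots> = (Y * (2 * K1 + 2 * Bm) / (1 - Q)\<^sup>2) * (m / real N) + (8 * Y / (1 - Q)) * (eps\<^sup>2 / real N)"
          by (simp add: field_simps)
        also have "\<dots> \<le> CJ * (m / real N + eps\<^sup>2 / real N)"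
        proof -
          define A where "A = Y * (2 * K1 + 2 * Bm) / (1 - Q)\<^sup>2"
          define B8 where "B8 = 8 * Y / (1 - Q)"
          define u where "u = m / real N"
          define v where "v = eps\<^sup>2 / real N"
          have nn: "0 \<le> A" "0 \<le> B8" "0 \<le> u" "0 \<le> v"
            using Y K1 Bm q1 m Npos by (auto simp: A_def B8_def u_def v_def)
          have "CJ = A + B8" by (simp add: CJ_def A_def B8_def)
          hence "CJ * (u + v) = A * u + B8 * v + (A * v + B8 * u)" by (simp add: algebra_simps)
          moreover have "0 \<le> A * v" "0 \<le> B8 * u" using nn by simp_all
          ultimately have "A * u + B8 * v \<le> CJ * (u + v)" by linarith
          thus ?thesis unfolding A_def B8_def u_def v_def .
        qed
        also have "\<dots> \<le> (Cf + CJ + Cc) * (m / real N + eps\<^sup>2 / real N)"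
          using Cf Cc m Npos by (intro mult_right_mono) auto
        finally show ?thesis unfolding m_def .
      qed
      show "\<And>i. J + 1 \<le> i \<and> i \<le> N - 1 \<Longrightarrow> \<bar>tau eps b X y y1 y2 i\<bar> \<le> (Cf + CJ + Cc) * (min eps (1 / real N) / real N)"
      proof -
        fix i assume i: "J + 1 \<le> i \<and> i \<le> N - 1"
        hence i1: "1 \<le> i" "J \<le> i - 1" "i + 1 \<le> N" by auto
        have Xi: "X i = xi + real (i - J) * HH" using Xhi i1 by auto
        have Ji: "J \<le> i + 1" "J \<le> i" using i1 by auto
        have Xp: "X (i + 1) = X i + HH"
        proof -
          have "X (i + 1) = xi + real (i + 1 - J) * HH" using Xhi[OF Ji(1)] .
          moreover have "real (i + 1 - J) = real (i - J) + 1" using Ji by (simp add: of_nat_diff)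
          ultimately show ?thesis using Xi by (simp add: algebra_simps)
        qed
        have Xm: "X (i - 1) = X i - HH"
        proof -
          have "X (i - 1) = xi + real (i - 1 - J) * HH" using Xhi[OF i1(2)] .
          moreover have "real (i - 1 - J) = real (i - J) - 1" using i1 by (simp add: of_nat_diff)
          ultimately show ?thesis using Xi by (simp add: algebra_simps)
        qed
        have lo: "xi \<le> X i - HH" using Xm Xhi[of "i - 1"] i1 HH by simp
        have "X i + HH = xi + real (i + 1 - J) * HH" using Xp Xhi[of "i + 1"] i1 by simp
        also have "\<dots> \<le> xi + real (N - J) * HH" using i1 HH by (intro add_left_mono mult_right_mono) auto
        also have "\<dots> = 1" using NJ1 by (simp add: HH_def)
        finally have hi: "X i + HH \<le> 1" .
        have lo0: "0 \<le> X i - HH" using lo xi by simp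
        have XiI: "X i \<in> {0..1}" using lo0 hi HH by auto
        define bx where "bx = b (X i)"
        have bx: "0 < bx" "bx \<le> Bm" using bX[OF XiI] by (auto simp: bx_def)
        have b34: "\<forall>t. X i - HH \<le> t \<and> t \<le> X i + HH \<longrightarrow> \<bar>y3 t\<bar> \<le> 2 * Y * eps \<and> \<bar>y4 t\<bar> \<le> 2 * Y"
        proof (intro allI impI)
          fix t assume t: "X i - HH \<le> t \<and> t \<le> X i + HH"
          hence "xi - h \<le> t" "t \<le> 1" using lo hi h by auto
          thus "\<bar>y3 t\<bar> \<le> 2 * Y * eps \<and> \<bar>y4 t\<bar> \<le> 2 * Y" using locb by auto
        qed
        have b2: "\<bar>y2 (X i)\<bar> \<le> 2 * Y * eps" using locb[of "X i"] lo hi h HH by auto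
        define r where "r = bx * HH / (2 * eps)"
        have r: "r > 0" using bx HH eps by (simp add: r_def)
        have sg: "0 < sigma r" "sigma r \<le> 1" using sigma_bounds[OF r] by auto
        have tau_eq: "tau eps b X y y1 y2 i = - eps * sigma (bx * HH / (2 * eps)) *
           (((y (X i + HH) - y (X i)) / HH - (y (X i) - y (X i - HH)) / HH) / ((HH + HH) / 2))
           - bx * ((y (X i + HH) - y (X i)) / HH) + eps * y2 (X i) + bx * y1 (X i)"
          unfolding bx_def by (rule tau_at[OF i1(1) Xp Xm])
        have B: "\<bar>tau eps b X y y1 y2 i\<bar> \<le> eps * \<bar>1 - sigma r - r\<bar> * (2 * Y * eps)
            + eps * sigma r * (2 * (2 * Y) * HH\<^sup>2) + bx * ((2 * Y * eps) * HH\<^sup>2)"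
          unfolding tau_eq r_def by (rule tau_unif[OF d lo0 hi HH(1) eps(1) bx(1) b2 b34])
        have t1: "eps * \<bar>1 - sigma r - r\<bar> * (2 * Y * eps) \<le> 2 * Y * K1 * (HH * mu)"
        proof -
          have "eps * \<bar>1 - sigma r - r\<bar> * (2 * Y * eps) = 2 * Y * (eps\<^sup>2 * \<bar>1 - sigma r - r\<bar>)"
            by (simp add: power2_eq_square algebra_simps)
          also have "\<dots> \<le> 2 * Y * (K1 * HH * mu)" unfolding r_def mu_def K1_def
            using eps2_sig[OF eps bx HH(1,2)] Y by (intro mult_left_mono) auto
          finally show ?thesis by (simp add: algebra_simps)
        qed
        have t2: "eps * sigma r * (2 * (2 * Y) * HH\<^sup>2) \<le> 4 * Y * (HH * mu)"
        proof -
          have "eps * sigma r * (2 * (2 * Y) * HH\<^sup>2) = sigma r * (4 * Y * (eps * HH\<^sup>2))"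
            by (simp add: algebra_simps)
          also have "\<dots> \<le> 1 * (4 * Y * (eps * HH\<^sup>2))" using sg Y eps by (intro mult_right_mono) auto
          also have "\<dots> \<le> 4 * Y * (HH * mu)" unfolding mu_def using epsH2[OF eps HH(1,2)] Y by simp
          finally show ?thesis .
        qed
        have t3: "bx * ((2 * Y * eps) * HH\<^sup>2) \<le> 2 * Y * Bm * (HH * mu)"
        proof -
          have "bx * ((2 * Y * eps) * HH\<^sup>2) = 2 * Y * bx * (eps * HH\<^sup>2)" by (simp add: algebra_simps)
          also have "\<dots> \<le> 2 * Y * Bm * (HH * mu)" unfolding mu_def
            by (rule mult_mono[OF _ epsH2[OF eps HH(1,2)]]) (use bx Y eps HH in auto)
          finally show ?thesis .
        qed
        have "\<bar>tau eps b X y y1 y2 i\<bar> \<le> Y * (2 * K1 + 4 + 2 * Bm) * (HH * mu)"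
          using B t1 t2 t3 by (simp add: algebra_simps)
        also have "\<dots> \<le> Y * (2 * K1 + 4 + 2 * Bm) * (m / real N / (1 - Q)\<^sup>2)"
          using HHmu Y K1 Bm by (intro mult_left_mono) auto
        also have "\<dots> = Cc * (m / real N)" unfolding Cc_def by (simp add: field_simps)
        also have "\<dots> \<le> (Cf + CJ + Cc) * (m / real N)"
          using Cf CJ m Npos by (intro mult_right_mono) auto
        finally show "\<bar>tau eps b X y y1 y2 i\<bar> \<le> (Cf + CJ + Cc) * (min eps (1 / real N) / real N)" unfolding m_def .
      qed
    qed
  qed
qed

lemma d01_unique:
  assumes "d01 f g1" "d01 f g2"
  shows "\<forall>x\<in>{0..1}. g1 x = g2 x"
proof
  fix x :: real assume x: "x \<in> {0..1}"
  have "(f has_vector_derivative g1 x) (at x within cbox 0 1)" "(f has_vector_derivative g2 x) (at x within cbox 0 1)"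
    using assms x unfolding d01_def cbox_interval by (auto simp: has_real_derivative_iff_has_vector_derivative)
  thus "g1 x = g2 x" using vector_derivative_unique_within_closed_interval[of 0 1 x f "g1 x" "g2 x"] x
    by (auto simp: cbox_interval)
qed

theorem lemma4:
  fixes b c f :: "real \<Rightarrow> real" and beta a Q :: real
  assumes b_C4: "Ck_on 4 {0..1} b" and c_C4: "Ck_on 4 {0..1} c" and f_C4: "Ck_on 4 {0..1} f"
    and beta_pos: "beta > 0" and b_gt: "\<forall>x\<in>{0..1}. b x > beta"
    and c_nonneg: "\<forall>x\<in>{0..1}. c x \<ge> 0"
    and Q_rat: "Q \<in> \<rat>" and Q_pos: "0 < Q" and Q_lt1: "Q < 1"
    and a_gt: "a > 3"
  shows "\<exists>N0 :: nat. \<exists>C :: real. \<forall>eps u du ddu u0 du0 ddu0 N J.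
    0 < eps \<and> eps < 1 \<and>
    (\<comment> \<open>u in C^2[0,1] solves the two-point BVP\<close>
     \<forall>x\<in>{0..1}. (u has_real_derivative du x) (at x within {0..1}) \<and>
                 (du has_real_derivative ddu x) (at x within {0..1})) \<and>
    continuous_on {0..1} ddu \<and>
    (\<forall>x\<in>{0<..<1}. - eps * ddu x - b x * du x + c x * u x = f x) \<and>
    u 0 = 0 \<and> u 1 = 0 \<and>
    (\<comment> \<open>u0 solves the reduced problem (it is automatically C^2 on [0,1])\<close>
     \<forall>x\<in>{0..1}. (u0 has_real_derivative du0 x) (at x within {0..1}) \<and>
                 (du0 has_real_derivative ddu0 x) (at x within {0..1})) \<and>
    (\<forall>x\<in>{0<..<1}. - b x * du0 x + c x * u0 x = f x) \<and>
    u0 1 = 0 \<and>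
    N \<ge> N0 \<and> real J = Q * real N \<and>
    mesh_xi a eps beta (1 / eps) \<le> Q
    \<longrightarrow>
    (let K = - eps * du 0 / b 0;
         y   = (\<lambda>x. u x - u0 x - K * exp (- b 0 * x / eps));
         y1  = (\<lambda>x. du x - du0 x + K * (b 0 / eps) * exp (- b 0 * x / eps));
         y2  = (\<lambda>x. ddu x - ddu0 x - K * (b 0 / eps)\<^sup>2 * exp (- b 0 * x / eps));
         x   = mesh_pt a eps beta (1 / eps) N J
     in (\<forall>i. 1 \<le> i \<and> i \<le> J - 1 \<longrightarrow>
              \<bar>tau eps b x y y1 y2 i\<bar> \<le> C * ((ln eps)\<^sup>2 * real N powr (-2))) \<and>
        \<bar>tau eps b x y y1 y2 J\<bar> \<le> C * (min eps (1 / real N) / real N + eps\<^sup>2 / real N) \<and>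
        (\<forall>i. J + 1 \<le> i \<and> i \<le> N - 1 \<longrightarrow>
              \<bar>tau eps b x y y1 y2 i\<bar> \<le> C * (min eps (1 / real N) / real N)))"
proof -
  have Crb: "Cr 4 b" "Cr 4 c" "Cr 4 f" using Ck_Cr b_C4 c_C4 f_C4 by auto
  obtain Db where Db: "Db 0 = b" "\<forall>j<4. d01 (Db j) (Db (Suc j))" "\<forall>j\<le>4. continuous_on {0..1} (Db j)"
    using Cr_family[OF Crb(1)] by blast
  obtain Dc where Dc: "Dc 0 = c" "\<forall>j<4. d01 (Dc j) (Dc (Suc j))" "\<forall>j\<le>4. continuous_on {0..1} (Dc j)"
    using Cr_family[OF Crb(2)] by blast
  have db: "d01 b (Db 1)" "d01 (Db 1) (Db 2)" using Db by (auto simp: numeral_2_eq_2)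
  have dc: "d01 c (Dc 1)" "d01 (Dc 1) (Dc 2)" using Dc by (auto simp: numeral_2_eq_2)
  have cf: "continuous_on {0..1} f" using Cr_cont[OF Crb(3)] .
  have cb0: "continuous_on {0..1} b" using Cr_cont[OF Crb(1)] .
  obtain mb where mb: "mb \<in> {0..1}" "\<forall>y\<in>{0..1}. b mb \<le> b y"
    using continuous_attains_inf[OF _ _ cb0] by auto
  define beta1 where "beta1 = b mb"
  have beta1: "beta1 > beta" "\<forall>x\<in>{0..1}. b x \<ge> beta1" using mb b_gt by (auto simp: beta1_def)
  obtain B0 where B0: "B0 > 0" "\<forall>x\<in>{0..1}. \<bar>b x\<bar> \<le> B0" using bounded01[OF cb0] by auto
  obtain B1 where B1: "B1 > 0" "\<forall>x\<in>{0..1}. \<bar>Db 1 x\<bar> \<le> B1" using bounded01[of "Db 1"] Db(3) by auto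
  obtain B2 where B2: "B2 > 0" "\<forall>x\<in>{0..1}. \<bar>Db 2 x\<bar> \<le> B2" using bounded01[of "Db 2"] Db(3) by auto
  define Bm where "Bm = B0 + B1 + B2"
  have bb: "\<forall>x\<in>{0..1}. \<bar>b x\<bar> \<le> Bm \<and> \<bar>Db 1 x\<bar> \<le> Bm \<and> \<bar>Db 2 x\<bar> \<le> Bm"
    using B0 B1 B2 by (fastforce simp: Bm_def)
  have Bm: "Bm > 0" using B0 B1 B2 by (simp add: Bm_def)
  obtain C0 where C0: "C0 > 0" "\<forall>x\<in>{0..1}. \<bar>c x\<bar> \<le> C0" using bounded01[OF Cr_cont[OF Crb(2)]] by auto
  obtain C1 where C1: "C1 > 0" "\<forall>x\<in>{0..1}. \<bar>Dc 1 x\<bar> \<le> C1" using bounded01[of "Dc 1"] Dc(3) by auto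
  obtain C2 where C2: "C2 > 0" "\<forall>x\<in>{0..1}. \<bar>Dc 2 x\<bar> \<le> C2" using bounded01[of "Dc 2"] Dc(3) by auto
  define Cm where "Cm = C0 + C1 + C2"
  have cb: "\<forall>x\<in>{0..1}. \<bar>c x\<bar> \<le> Cm \<and> \<bar>Dc 1 x\<bar> \<le> Cm \<and> \<bar>Dc 2 x\<bar> \<le> Cm"
    using C0 C1 C2 by (fastforce simp: Cm_def)
  obtain Fm where Fm: "Fm > 0" "\<forall>x\<in>{0..1}. \<bar>f x\<bar> \<le> Fm" using bounded01[OF cf] by auto
  have bpos: "\<forall>x\<in>{0..1}. b x > 0" using b_gt beta_pos by force
  define P0 where "P0 = (\<lambda>u0 du0 ddu0. (\<forall>x\<in>{0..1}. (u0 has_real_derivative du0 x) (at x within {0..1}) \<and>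
                 (du0 has_real_derivative ddu0 x) (at x within {0..1})) \<and>
    (\<forall>x\<in>{0<..<1}. - b x * du0 x + c x * u0 x = f x) \<and> u0 1 = (0::real))"
  show ?thesis
  proof (cases "\<exists>u0 du0 ddu0. P0 u0 du0 ddu0")
    case False
    show ?thesis
    proof (rule exI[of _ 0], rule exI[of _ 0], intro allI impI)
      fix eps u du ddu u0 du0 ddu0 and N J :: nat
      assume H: "0 < eps \<and> eps < 1 \<and>
        (\<forall>x\<in>{0..1}. (u has_real_derivative du x) (at x within {0..1}) \<and>
                 (du has_real_derivative ddu x) (at x within {0..1})) \<and>
        continuous_on {0..1} ddu \<and>
        (\<forall>x\<in>{0<..<1}. - eps * ddu x - b x * du x + c x * u x = f x) \<and>
        u 0 = 0 \<and> u 1 = 0 \<and>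
        (\<forall>x\<in>{0..1}. (u0 has_real_derivative du0 x) (at x within {0..1}) \<and>
                 (du0 has_real_derivative ddu0 x) (at x within {0..1})) \<and>
        (\<forall>x\<in>{0<..<1}. - b x * du0 x + c x * u0 x = f x) \<and>
        u0 1 = 0 \<and> N \<ge> 0 \<and> real J = Q * real N \<and> mesh_xi a eps beta (1 / eps) \<le> Q"
      hence "P0 u0 du0 ddu0" unfolding P0_def by auto
      with False show "let K = - eps * du 0 / b 0;
         y   = (\<lambda>x. u x - u0 x - K * exp (- b 0 * x / eps));
         y1  = (\<lambda>x. du x - du0 x + K * (b 0 / eps) * exp (- b 0 * x / eps));
         y2  = (\<lambda>x. ddu x - ddu0 x - K * (b 0 / eps)\<^sup>2 * exp (- b 0 * x / eps));
         x   = mesh_pt a eps beta (1 / eps) N J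
     in (\<forall>i. 1 \<le> i \<and> i \<le> J - 1 \<longrightarrow>
              \<bar>tau eps b x y y1 y2 i\<bar> \<le> 0 * ((ln eps)\<^sup>2 * real N powr (-2))) \<and>
        \<bar>tau eps b x y y1 y2 J\<bar> \<le> 0 * (min eps (1 / real N) / real N + eps\<^sup>2 / real N) \<and>
        (\<forall>i. J + 1 \<le> i \<and> i \<le> N - 1 \<longrightarrow>
              \<bar>tau eps b x y y1 y2 i\<bar> \<le> 0 * (min eps (1 / real N) / real N))" by blast
    qed
  next
    case True
    then obtain W0 dW0 ddW0 where W: "P0 W0 dW0 ddW0" by blast
    have dW: "d01 W0 dW0" "d01 dW0 ddW0" using W unfolding P0_def d01_def by auto
    have Wode: "\<forall>x\<in>{0<..<1}. - b x * dW0 x + c x * W0 x = f x" "W0 1 = 0" using W unfolding P0_def by auto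
    have "Cr 5 W0" by (rule u0_reg[OF Crb bpos dW Wode(1)])
    then obtain Ud where Ud: "Ud 0 = W0" "\<forall>j<5. d01 (Ud j) (Ud (Suc j))" "\<forall>j\<le>5. continuous_on {0..1} (Ud j)"
      using Cr_family by blast
    have dU: "d01 (Ud 0) (Ud 1)" "d01 (Ud 1) (Ud 2)" "d01 (Ud 2) (Ud 3)" "d01 (Ud 3) (Ud 4)"
      using Ud(2) by (auto simp: eval_nat_numeral)
    have Ubds: "\<exists>M>0. \<forall>x\<in>{0..1}. \<bar>Ud j x\<bar> \<le> M" if "j \<le> 5" for j using bounded01 Ud(3) that by blast
    obtain M0 where M0: "M0 > 0" "\<forall>x\<in>{0..1}. \<bar>Ud 0 x\<bar> \<le> M0" using Ubds[of 0] by auto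
    obtain M1 where M1: "M1 > 0" "\<forall>x\<in>{0..1}. \<bar>Ud 1 x\<bar> \<le> M1" using Ubds[of 1] by auto
    obtain M2 where M2: "M2 > 0" "\<forall>x\<in>{0..1}. \<bar>Ud 2 x\<bar> \<le> M2" using Ubds[of 2] by auto
    obtain M3 where M3: "M3 > 0" "\<forall>x\<in>{0..1}. \<bar>Ud 3 x\<bar> \<le> M3" using Ubds[of 3] by auto
    obtain M4 where M4: "M4 > 0" "\<forall>x\<in>{0..1}. \<bar>Ud 4 x\<bar> \<le> M4" using Ubds[of 4] by auto
    define Um where "Um = M0 + M1 + M2 + M3 + M4"
    have Ub: "\<forall>x\<in>{0..1}. \<bar>Ud 0 x\<bar> \<le> Um \<and> \<bar>Ud 1 x\<bar> \<le> Um \<and> \<bar>Ud 2 x\<bar> \<le> Um \<and> \<bar>Ud 3 x\<bar> \<le> Um \<and> \<bar>Ud 4 x\<bar> \<le> Um"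
      using M0 M1 M2 M3 M4 by (fastforce simp: Um_def)
    have U1eq: "\<forall>x\<in>{0..1}. Ud 1 x = dW0 x" using d01_unique[of W0 "Ud 1" dW0] dU(1) dW(1) Ud(1) by simp
    have U0ode: "\<forall>x\<in>{0..1}. - b x * Ud 1 x + c x * Ud 0 x = f x"
    proof
      fix x :: real assume x: "x \<in> {0..1}"
      have "dW0 x = (c x * W0 x - f x) / b x"
        using u0_formula[OF cb0 Cr_cont[OF Crb(2)] cf bpos dW Wode(1)] x by auto
      moreover have bx: "b x > 0" using bpos x by auto
      ultimately have "b x * dW0 x = c x * W0 x - f x" by (simp add: field_simps)
      moreover have "Ud 1 x = dW0 x" using U1eq x by auto
      ultimately show "- b x * Ud 1 x + c x * Ud 0 x = f x" using Ud(1) by simp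
    qed
    have U01: "Ud 0 1 = 0" using Ud(1) Wode(2) by simp
    obtain Y where Y: "Y > 0" and Ycore: "\<forall>eps u du ddu K y y1 y2. 0 < eps \<and> eps < 1 \<and> d01 u du \<and> d01 du ddu \<and>
     continuous_on {0..1} ddu \<and> (\<forall>x\<in>{0<..<1}. - eps * ddu x - b x * du x + c x * u x = f x) \<and>
     u 0 = 0 \<and> u 1 = 0 \<and> K = - eps * du 0 / b 0 \<and>
     y = (\<lambda>x. u x - Ud 0 x - K * exp (- b 0 * x / eps)) \<and>
     y1 = (\<lambda>x. du x - Ud 1 x + K * (b 0 / eps) * exp (- b 0 * x / eps)) \<and>
     y2 = (\<lambda>x. ddu x - Ud 2 x - K * (b 0 / eps)\<^sup>2 * exp (- b 0 * x / eps))
     \<longrightarrow> (\<exists>y3 y4. d01 y y1 \<and> d01 y1 y2 \<and> d01 y2 y3 \<and> d01 y3 y4 \<and>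
          (\<forall>x\<in>{0..1}. \<bar>y1 x\<bar> \<le> Y \<and> \<bar>y2 x\<bar> \<le> Y * (eps + exp (- beta * x / eps) / eps) \<and>
             \<bar>y3 x\<bar> \<le> Y * (eps + exp (- beta * x / eps) / eps\<^sup>2) \<and>
             \<bar>y4 x\<bar> \<le> Y * (1 + exp (- beta * x / eps) / eps ^ 3)))"
      using y_core[OF beta_pos beta1 c_nonneg db dc cf bb cb Fm(2) dU Ub U0ode U01] by blast
    obtain N0 C where NC: "\<forall>eps N J b' y y1 y2 y3 y4. 0 < eps \<and> eps < 1 \<and> N \<ge> N0 \<and>
      real J = Q * real N \<and> mesh_xi a eps beta (1 / eps) \<le> Q \<and> (\<forall>x\<in>{0..1}. 0 < b' x \<and> b' x \<le> Bm) \<and>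
      d01 y y1 \<and> d01 y1 y2 \<and> d01 y2 y3 \<and> d01 y3 y4 \<and>
      (\<forall>x\<in>{0..1}. \<bar>y2 x\<bar> \<le> Y * (eps + exp (- beta * x / eps) / eps) \<and>
             \<bar>y3 x\<bar> \<le> Y * (eps + exp (- beta * x / eps) / eps\<^sup>2) \<and>
             \<bar>y4 x\<bar> \<le> Y * (1 + exp (- beta * x / eps) / eps ^ 3))
      \<longrightarrow> (\<forall>i. 1 \<le> i \<and> i \<le> J - 1 \<longrightarrow>
              \<bar>tau eps b' (mesh_pt a eps beta (1 / eps) N J) y y1 y2 i\<bar> \<le> C * ((ln eps)\<^sup>2 * real N powr (-2))) \<and>
        \<bar>tau eps b' (mesh_pt a eps beta (1 / eps) N J) y y1 y2 J\<bar> \<le> C * (min eps (1 / real N) / real N + eps\<^sup>2 / real N) \<and>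
        (\<forall>i. J + 1 \<le> i \<and> i \<le> N - 1 \<longrightarrow>
              \<bar>tau eps b' (mesh_pt a eps beta (1 / eps) N J) y y1 y2 i\<bar> \<le> C * (min eps (1 / real N) / real N))"
      using tau_final[OF beta_pos a_gt Q_pos Q_lt1 Bm Y] by blast
    show ?thesis
    proof (rule exI[of _ N0], rule exI[of _ C], intro allI impI)
      fix eps u du ddu u0 du0 ddu0 and N J :: nat
      assume H: "0 < eps \<and> eps < 1 \<and>
        (\<forall>x\<in>{0..1}. (u has_real_derivative du x) (at x within {0..1}) \<and>
                 (du has_real_derivative ddu x) (at x within {0..1})) \<and>
        continuous_on {0..1} ddu \<and>
        (\<forall>x\<in>{0<..<1}. - eps * ddu x - b x * du x + c x * u x = f x) \<and>
        u 0 = 0 \<and> u 1 = 0 \<and>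
        (\<forall>x\<in>{0..1}. (u0 has_real_derivative du0 x) (at x within {0..1}) \<and>
                 (du0 has_real_derivative ddu0 x) (at x within {0..1})) \<and>
        (\<forall>x\<in>{0<..<1}. - b x * du0 x + c x * u0 x = f x) \<and>
        u0 1 = 0 \<and> N \<ge> N0 \<and> real J = Q * real N \<and> mesh_xi a eps beta (1 / eps) \<le> Q"
      hence eps: "0 < eps" "eps < 1" and du: "d01 u du" "d01 du ddu" and cddu: "continuous_on {0..1} ddu"
        and ode: "\<forall>x\<in>{0<..<1}. - eps * ddu x - b x * du x + c x * u x = f x" and bc: "u 0 = 0" "u 1 = 0"
        and du0: "d01 u0 du0" "d01 du0 ddu0" and ode0: "\<forall>x\<in>{0<..<1}. - b x * du0 x + c x * u0 x = f x"
        and u01: "u0 1 = 0" and NN: "N \<ge> N0" "real J = Q * real N" "mesh_xi a eps beta (1 / eps) \<le> Q"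
        unfolding d01_def by auto
      have e0: "\<forall>x\<in>{0..1}. u0 x = Ud 0 x"
        using u0_unique[OF cb0 Cr_cont[OF Crb(2)] cf bpos c_nonneg du0 ode0 u01 dW Wode] Ud(1) by simp
      have d0': "d01 u0 (Ud 1)" using d01_cong[OF dU(1), of u0 "Ud 1"] e0 by auto
      have e1: "\<forall>x\<in>{0..1}. du0 x = Ud 1 x" using d01_unique[OF du0(1) d0'] .
      have d1': "d01 du0 (Ud 2)" using d01_cong[OF dU(2), of du0 "Ud 2"] e1 by auto
      have e2: "\<forall>x\<in>{0..1}. ddu0 x = Ud 2 x" using d01_unique[OF du0(2) d1'] .
      define K where "K = - eps * du 0 / b 0"
      define yU where "yU = (\<lambda>x. u x - Ud 0 x - K * exp (- b 0 * x / eps))"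
      define y1U where "y1U = (\<lambda>x. du x - Ud 1 x + K * (b 0 / eps) * exp (- b 0 * x / eps))"
      define y2U where "y2U = (\<lambda>x. ddu x - Ud 2 x - K * (b 0 / eps)\<^sup>2 * exp (- b 0 * x / eps))"
      define y where "y = (\<lambda>x. u x - u0 x - K * exp (- b 0 * x / eps))"
      define y1 where "y1 = (\<lambda>x. du x - du0 x + K * (b 0 / eps) * exp (- b 0 * x / eps))"
      define y2 where "y2 = (\<lambda>x. ddu x - ddu0 x - K * (b 0 / eps)\<^sup>2 * exp (- b 0 * x / eps))"
      obtain y3 y4 where Y3: "d01 yU y1U" "d01 y1U y2U" "d01 y2U y3" "d01 y3 y4"
        "\<forall>x\<in>{0..1}. \<bar>y1U x\<bar> \<le> Y \<and> \<bar>y2U x\<bar> \<le> Y * (eps + exp (- beta * x / eps) / eps) \<and>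
             \<bar>y3 x\<bar> \<le> Y * (eps + exp (- beta * x / eps) / eps\<^sup>2) \<and>
             \<bar>y4 x\<bar> \<le> Y * (1 + exp (- beta * x / eps) / eps ^ 3)"
        using Ycore[rule_format, of eps u du ddu K yU y1U y2U] eps du cddu ode bc
        unfolding K_def yU_def y1U_def y2U_def by blast
      have ey: "\<forall>x\<in>{0..1}. yU x = y x" "\<forall>x\<in>{0..1}. y1U x = y1 x" "\<forall>x\<in>{0..1}. y2U x = y2 x"
        using e0 e1 e2 by (auto simp: yU_def y_def y1U_def y1_def y2U_def y2_def)
      have dy: "d01 y y1" "d01 y1 y2" "d01 y2 y3"
        using d01_cong[OF Y3(1) ey(1) ey(2)] d01_cong[OF Y3(2) ey(2) ey(3)] d01_cong[OF Y3(3) ey(3)] by auto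
      have yb: "\<forall>x\<in>{0..1}. \<bar>y2 x\<bar> \<le> Y * (eps + exp (- beta * x / eps) / eps) \<and>
             \<bar>y3 x\<bar> \<le> Y * (eps + exp (- beta * x / eps) / eps\<^sup>2) \<and>
             \<bar>y4 x\<bar> \<le> Y * (1 + exp (- beta * x / eps) / eps ^ 3)"
        using Y3(5) ey(3) by auto
      have bB: "\<forall>x\<in>{0..1}. 0 < b x \<and> b x \<le> Bm" using bpos bb by fastforce
      have R: "(\<forall>i. 1 \<le> i \<and> i \<le> J - 1 \<longrightarrow>
              \<bar>tau eps b (mesh_pt a eps beta (1 / eps) N J) y y1 y2 i\<bar> \<le> C * ((ln eps)\<^sup>2 * real N powr (-2))) \<and>
        \<bar>tau eps b (mesh_pt a eps beta (1 / eps) N J) y y1 y2 J\<bar> \<le> C * (min eps (1 / real N) / real N + eps\<^sup>2 / real N) \<and>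
        (\<forall>i. J + 1 \<le> i \<and> i \<le> N - 1 \<longrightarrow>
              \<bar>tau eps b (mesh_pt a eps beta (1 / eps) N J) y y1 y2 i\<bar> \<le> C * (min eps (1 / real N) / real N))"
        using NC[rule_format, of eps N J b y y1 y2 y3 y4] eps NN bB dy Y3(4) yb by blast
      show "let K = - eps * du 0 / b 0;
         y   = (\<lambda>x. u x - u0 x - K * exp (- b 0 * x / eps));
         y1  = (\<lambda>x. du x - du0 x + K * (b 0 / eps) * exp (- b 0 * x / eps));
         y2  = (\<lambda>x. ddu x - ddu0 x - K * (b 0 / eps)\<^sup>2 * exp (- b 0 * x / eps));
         x   = mesh_pt a eps beta (1 / eps) N J
     in (\<forall>i. 1 \<le> i \<and> i \<le> J - 1 \<longrightarrow>
              \<bar>tau eps b x y y1 y2 i\<bar> \<le> C * ((ln eps)\<^sup>2 * real N powr (-2))) \<and>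
        \<bar>tau eps b x y y1 y2 J\<bar> \<le> C * (min eps (1 / real N) / real N + eps\<^sup>2 / real N) \<and>
        (\<forall>i. J + 1 \<le> i \<and> i \<le> N - 1 \<longrightarrow>
              \<bar>tau eps b x y y1 y2 i\<bar> \<le> C * (min eps (1 / real N) / real N))"
        using R unfolding Let_def K_def[symmetric] y_def[symmetric] y1_def[symmetric] y2_def[symmetric] .
    qed
  qed
qed


end
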